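(* Let $G$ be a finite group and $T\neq 0$ a $G$-Tambara functor. The nilradical $\mathfrak N(T)=\sqrt 0$ is a prime Tambara ideal if and only if $\operatorname{Spec}_{\mathbf{Nak}}(T)$ is irreducible.
   Context: All rings are commutative with unit. A $G$-Tambara functor $T$ consists of commutative rings $T(G/H)$ for subgroups $H\le G$ with restriction ring maps, additive transfer maps, multiplicative norm maps and conjugation isomorphisms satisfying the standard Tambara axioms (Hill–Mazur). A Tambara ideal is a family of ring ideals $I(G/H)\subseteq T(G/H)$ closed under restriction, transfer, norm and conjugation; proper if $1\notin I(G/G)$. $\langle x\rangle$ is the Tambara ideal generated by $x$; the product $IJ$ is the Tambara ideal generated by levelwise products. The radical $\sqrt I$ has $\sqrt I(G/H)=\{x\mid\langle x\rangle^n\subseteq I\text{ for some }n\ge1\}$; the nilradical is $\mathfrak N(T)=\sqrt{0}$ for the zero ideal $0$. A proper Tambara ideal $P$ is prime if for all Tambara ideals $I,J$, $IJ\subseteq P$ implies $I\subseteq P$ or $J\subseteq P$. $\operatorname{Spec}_{\mathbf{Nak}}(T)$ is the set of primes, topologized with subbasic closed sets $V_H(x)=\{P\mid x\in P(G/H)\}$ for $H\le G$, $x\in T(G/H)$. A space is irreducible if any two nonempty open subsets intersect (as used here: $U\cap V=\varnothing$ implies $U=\varnothing$ or $V=\varnothing$). *)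

theory Defs
  imports "HOL-Algebra.Algebra" "HOL-Analysis.Abstract_Topology"
begin

text \<open>A G-Tambara functor assigns to every subgroup H of G a commutative ring
  t_lev T H (the value at G/H), with restrictions t_res T K H : T(G/K) -> T(G/H),
  transfers t_tr T K H : T(G/H) -> T(G/K), norms t_nm T K H : T(G/H) -> T(G/K)
  (for H a subgroup of K) and conjugations t_cj T g H : T(G/H) -> T(G/gHg^-1).\<close>

record ('g, 'r) tambara =
  t_lev :: "'g set \<Rightarrow> 'r ring"
  t_res :: "'g set \<Rightarrow> 'g set \<Rightarrow> 'r \<Rightarrow> 'r"
  t_tr  :: "'g set \<Rightarrow> 'g set \<Rightarrow> 'r \<Rightarrow> 'r"
  t_nm  :: "'g set \<Rightarrow> 'g set \<Rightarrow> 'r \<Rightarrow> 'r"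
  t_cj  :: "'g \<Rightarrow> 'g set \<Rightarrow> 'r \<Rightarrow> 'r"

definition conjsub :: "('g, 'b) monoid_scheme \<Rightarrow> 'g \<Rightarrow> 'g set \<Rightarrow> 'g set" where
  "conjsub G g H = (\<lambda>h. g \<otimes>\<^bsub>G\<^esub> h \<otimes>\<^bsub>G\<^esub> inv\<^bsub>G\<^esub> g) ` H"

definition dcos :: "('g, 'b) monoid_scheme \<Rightarrow> 'g set \<Rightarrow> 'g \<Rightarrow> 'g set \<Rightarrow> 'g set" where
  "dcos G J r H = {j \<otimes>\<^bsub>G\<^esub> r \<otimes>\<^bsub>G\<^esub> h | j h. j \<in> J \<and> h \<in> H}"

definition dreps :: "('g, 'b) monoid_scheme \<Rightarrow> 'g set \<Rightarrow> 'g set \<Rightarrow> 'g set \<Rightarrow> 'g set \<Rightarrow> bool" where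
  "dreps G K J H Q \<longleftrightarrow> Q \<subseteq> K \<and> (\<forall>k\<in>K. \<exists>!q. q \<in> Q \<and> k \<in> dcos G J q H)"

definition lco :: "('g, 'b) monoid_scheme \<Rightarrow> 'g \<Rightarrow> 'g set \<Rightarrow> 'g set" where
  "lco G k C = (\<lambda>c. k \<otimes>\<^bsub>G\<^esub> c) ` C"

definition lcosetsK :: "('g, 'b) monoid_scheme \<Rightarrow> 'g set \<Rightarrow> 'g set \<Rightarrow> 'g set set" where
  "lcosetsK G K H = {lco G k H | k. k \<in> K}"

definition subact :: "('g, 'b) monoid_scheme \<Rightarrow> 'g \<Rightarrow> 'g set set \<Rightarrow> 'g set set" where
  "subact G k S = (\<lambda>C. lco G k C) ` S"

definition subreps :: "('g, 'b) monoid_scheme \<Rightarrow> 'g set \<Rightarrow> 'g set \<Rightarrow> 'g set set set \<Rightarrow> bool" where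
  "subreps G K H \<SS> \<longleftrightarrow> \<SS> \<subseteq> Pow (lcosetsK G K H) \<and>
     (\<forall>S'\<in>Pow (lcosetsK G K H). \<exists>!S. S \<in> \<SS> \<and> (\<exists>k\<in>K. subact G k S = S'))"

definition substab :: "('g, 'b) monoid_scheme \<Rightarrow> 'g set \<Rightarrow> 'g set set \<Rightarrow> 'g set" where
  "substab G K S = {k \<in> K. subact G k S = S}"

definition sections :: "('g, 'b) monoid_scheme \<Rightarrow> 'g set \<Rightarrow> 'g set \<Rightarrow> 'g set \<Rightarrow> ('g set \<Rightarrow> 'g set) set" where
  "sections G J K H = {s \<in> lcosetsK G J K \<rightarrow>\<^sub>E lcosetsK G J H. \<forall>C \<in> lcosetsK G J K. s C \<subseteq> C}"

definition secact :: "('g, 'b) monoid_scheme \<Rightarrow> 'g set \<Rightarrow> 'g set \<Rightarrow> 'g \<Rightarrow> ('g set \<Rightarrow> 'g set) \<Rightarrow> ('g set \<Rightarrow> 'g set)" where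
  "secact G J K j s = restrict (\<lambda>C. lco G j (s (lco G (inv\<^bsub>G\<^esub> j) C))) (lcosetsK G J K)"

definition secreps :: "('g, 'b) monoid_scheme \<Rightarrow> 'g set \<Rightarrow> 'g set \<Rightarrow> 'g set \<Rightarrow> ('g set \<Rightarrow> 'g set) set \<Rightarrow> bool" where
  "secreps G J K H \<SS> \<longleftrightarrow> \<SS> \<subseteq> sections G J K H \<and>
     (\<forall>s'\<in>sections G J K H. \<exists>!s. s \<in> \<SS> \<and> (\<exists>j\<in>J. secact G J K j s = s'))"

definition secstab :: "('g, 'b) monoid_scheme \<Rightarrow> 'g set \<Rightarrow> 'g set \<Rightarrow> ('g set \<Rightarrow> 'g set) \<Rightarrow> 'g set" where
  "secstab G J K s = {j \<in> J. secact G J K j s = s}"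

definition subgrp_le :: "('g, 'b) monoid_scheme \<Rightarrow> 'g set \<Rightarrow> 'g set \<Rightarrow> bool" where
  "subgrp_le G H K \<longleftrightarrow> subgroup H G \<and> subgroup K G \<and> H \<subseteq> K"

definition is_tambara :: "('g, 'b) monoid_scheme \<Rightarrow> ('g, 'r) tambara \<Rightarrow> bool" where
  "is_tambara G T \<longleftrightarrow>
   \<comment> \<open>levels are commutative rings\<close>
   (\<forall>H. subgroup H G \<longrightarrow> cring (t_lev T H)) \<and>
   \<comment> \<open>restrictions: functorial ring maps\<close>
   (\<forall>H K. subgrp_le G H K \<longrightarrow> t_res T K H \<in> ring_hom (t_lev T K) (t_lev T H)) \<and>
   (\<forall>H. subgroup H G \<longrightarrow> (\<forall>x\<in>carrier (t_lev T H). t_res T H H x = x)) \<and>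
   (\<forall>H K L. subgrp_le G H K \<and> subgrp_le G K L \<longrightarrow>
      (\<forall>x\<in>carrier (t_lev T L). t_res T K H (t_res T L K x) = t_res T L H x)) \<and>
   \<comment> \<open>transfers: functorial additive maps\<close>
   (\<forall>H K. subgrp_le G H K \<longrightarrow> (\<forall>a\<in>carrier (t_lev T H). t_tr T K H a \<in> carrier (t_lev T K)) \<and>
      (\<forall>a\<in>carrier (t_lev T H). \<forall>b\<in>carrier (t_lev T H).
         t_tr T K H (a \<oplus>\<^bsub>t_lev T H\<^esub> b) = t_tr T K H a \<oplus>\<^bsub>t_lev T K\<^esub> t_tr T K H b)) \<and>
   (\<forall>H. subgroup H G \<longrightarrow> (\<forall>x\<in>carrier (t_lev T H). t_tr T H H x = x)) \<and>
   (\<forall>H K L. subgrp_le G H K \<and> subgrp_le G K L \<longrightarrow>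
      (\<forall>x\<in>carrier (t_lev T H). t_tr T L K (t_tr T K H x) = t_tr T L H x)) \<and>
   \<comment> \<open>norms: functorial multiplicative maps preserving 1 and 0\<close>
   (\<forall>H K. subgrp_le G H K \<longrightarrow> (\<forall>a\<in>carrier (t_lev T H). t_nm T K H a \<in> carrier (t_lev T K)) \<and>
      (\<forall>a\<in>carrier (t_lev T H). \<forall>b\<in>carrier (t_lev T H).
         t_nm T K H (a \<otimes>\<^bsub>t_lev T H\<^esub> b) = t_nm T K H a \<otimes>\<^bsub>t_lev T K\<^esub> t_nm T K H b) \<and>
      t_nm T K H \<one>\<^bsub>t_lev T H\<^esub> = \<one>\<^bsub>t_lev T K\<^esub> \<and>
      t_nm T K H \<zero>\<^bsub>t_lev T H\<^esub> = \<zero>\<^bsub>t_lev T K\<^esub>) \<and>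
   (\<forall>H. subgroup H G \<longrightarrow> (\<forall>x\<in>carrier (t_lev T H). t_nm T H H x = x)) \<and>
   (\<forall>H K L. subgrp_le G H K \<and> subgrp_le G K L \<longrightarrow>
      (\<forall>x\<in>carrier (t_lev T H). t_nm T L K (t_nm T K H x) = t_nm T L H x)) \<and>
   \<comment> \<open>conjugations: ring isomorphisms, functorial, trivial for elements of H\<close>
   (\<forall>g\<in>carrier G. \<forall>H. subgroup H G \<longrightarrow>
      t_cj T g H \<in> ring_hom (t_lev T H) (t_lev T (conjsub G g H))) \<and>
   (\<forall>g\<in>carrier G. \<forall>g'\<in>carrier G. \<forall>H. subgroup H G \<longrightarrow>
      (\<forall>x\<in>carrier (t_lev T H). t_cj T g' (conjsub G g H) (t_cj T g H x) = t_cj T (g' \<otimes>\<^bsub>G\<^esub> g) H x)) \<and>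
   (\<forall>H. subgroup H G \<longrightarrow> (\<forall>h\<in>H. \<forall>x\<in>carrier (t_lev T H). t_cj T h H x = x)) \<and>
   \<comment> \<open>conjugations commute with restrictions, transfers, norms\<close>
   (\<forall>g\<in>carrier G. \<forall>H K. subgrp_le G H K \<longrightarrow>
      (\<forall>x\<in>carrier (t_lev T K). t_cj T g H (t_res T K H x) = t_res T (conjsub G g K) (conjsub G g H) (t_cj T g K x)) \<and>
      (\<forall>a\<in>carrier (t_lev T H). t_cj T g K (t_tr T K H a) = t_tr T (conjsub G g K) (conjsub G g H) (t_cj T g H a)) \<and>
      (\<forall>a\<in>carrier (t_lev T H). t_cj T g K (t_nm T K H a) = t_nm T (conjsub G g K) (conjsub G g H) (t_cj T g H a))) \<and>
   \<comment> \<open>Frobenius reciprocity\<close>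
   (\<forall>H K. subgrp_le G H K \<longrightarrow> (\<forall>a\<in>carrier (t_lev T H). \<forall>b\<in>carrier (t_lev T K).
      t_tr T K H (a \<otimes>\<^bsub>t_lev T H\<^esub> t_res T K H b) = t_tr T K H a \<otimes>\<^bsub>t_lev T K\<^esub> b)) \<and>
   \<comment> \<open>double coset formulas for restriction of transfers and of norms\<close>
   (\<forall>H J K Q. subgrp_le G H K \<and> subgrp_le G J K \<and> dreps G K J H Q \<longrightarrow>
      (\<forall>a\<in>carrier (t_lev T H).
        t_res T K J (t_tr T K H a) =
          (\<Oplus>\<^bsub>t_lev T J\<^esub> q\<in>Q. t_tr T J (J \<inter> conjsub G q H)
               (t_res T (conjsub G q H) (J \<inter> conjsub G q H) (t_cj T q H a))) \<and>
        t_res T K J (t_nm T K H a) =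
          (\<Otimes>\<^bsub>t_lev T J\<^esub> q\<in>Q. t_nm T J (J \<inter> conjsub G q H)
               (t_res T (conjsub G q H) (J \<inter> conjsub G q H) (t_cj T q H a))))) \<and>
   \<comment> \<open>Tambara reciprocity for norms of sums\<close>
   (\<forall>H K \<SS> Qf. subgrp_le G H K \<and> subreps G K H \<SS> \<and>
        (\<forall>S\<in>\<SS>. dreps G K (substab G K S) H (Qf S)) \<longrightarrow>
      (\<forall>a\<in>carrier (t_lev T H). \<forall>b\<in>carrier (t_lev T H).
        t_nm T K H (a \<oplus>\<^bsub>t_lev T H\<^esub> b) =
          (\<Oplus>\<^bsub>t_lev T K\<^esub> S\<in>\<SS>. t_tr T K (substab G K S)
             (\<Otimes>\<^bsub>t_lev T (substab G K S)\<^esub> q\<in>Qf S.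
                t_nm T (substab G K S) (substab G K S \<inter> conjsub G q H)
                  (t_res T (conjsub G q H) (substab G K S \<inter> conjsub G q H)
                     (t_cj T q H (if lco G q H \<in> S then a else b))))))) \<and>
   \<comment> \<open>Tambara reciprocity for norms of transfers\<close>
   (\<forall>H K J \<SS> Qf xf. subgrp_le G H K \<and> subgrp_le G K J \<and> secreps G J K H \<SS> \<and>
        (\<forall>s\<in>\<SS>. dreps G J (secstab G J K s) K (Qf s) \<and>
                 (\<forall>q\<in>Qf s. xf s q \<in> s (lco G q K))) \<longrightarrow>
      (\<forall>a\<in>carrier (t_lev T H).
        t_nm T J K (t_tr T K H a) =
          (\<Oplus>\<^bsub>t_lev T J\<^esub> s\<in>\<SS>. t_tr T J (secstab G J K s)
             (\<Otimes>\<^bsub>t_lev T (secstab G J K s)\<^esub> q\<in>Qf s.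
                t_nm T (secstab G J K s) (secstab G J K s \<inter> conjsub G q K)
                  (t_res T (conjsub G (xf s q) H) (secstab G J K s \<inter> conjsub G q K)
                     (t_cj T (xf s q) H a))))))"

definition tideal :: "('g, 'b) monoid_scheme \<Rightarrow> ('g, 'r) tambara \<Rightarrow> ('g set \<Rightarrow> 'r set) \<Rightarrow> bool" where
  "tideal G T I \<longleftrightarrow>
     (\<forall>H. subgroup H G \<longrightarrow> ideal (I H) (t_lev T H)) \<and>
     (\<forall>H. \<not> subgroup H G \<longrightarrow> I H = {}) \<and>
     (\<forall>H K. subgrp_le G H K \<longrightarrow>
        t_res T K H ` I K \<subseteq> I H \<and> t_tr T K H ` I H \<subseteq> I K \<and> t_nm T K H ` I H \<subseteq> I K) \<and>
     (\<forall>g\<in>carrier G. \<forall>H. subgroup H G \<longrightarrow> t_cj T g H ` I H \<subseteq> I (conjsub G g H))"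

definition tgen :: "('g, 'b) monoid_scheme \<Rightarrow> ('g, 'r) tambara \<Rightarrow> ('g set \<Rightarrow> 'r set) \<Rightarrow> ('g set \<Rightarrow> 'r set)" where
  "tgen G T A = (\<lambda>K. \<Inter>{I K | I. tideal G T I \<and> A \<le> I})"

definition tprinc :: "('g, 'b) monoid_scheme \<Rightarrow> ('g, 'r) tambara \<Rightarrow> 'g set \<Rightarrow> 'r \<Rightarrow> ('g set \<Rightarrow> 'r set)" where
  "tprinc G T H x = tgen G T (\<lambda>K. if K = H then {x} else {})"

definition tprod :: "('g, 'b) monoid_scheme \<Rightarrow> ('g, 'r) tambara \<Rightarrow> ('g set \<Rightarrow> 'r set) \<Rightarrow> ('g set \<Rightarrow> 'r set) \<Rightarrow> ('g set \<Rightarrow> 'r set)" where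
  "tprod G T I J = tgen G T (\<lambda>H. {a \<otimes>\<^bsub>t_lev T H\<^esub> b | a b. a \<in> I H \<and> b \<in> J H})"

text \<open>tpow G T I n is the (n+1)-st power of I\<close>
primrec tpow :: "('g, 'b) monoid_scheme \<Rightarrow> ('g, 'r) tambara \<Rightarrow> ('g set \<Rightarrow> 'r set) \<Rightarrow> nat \<Rightarrow> ('g set \<Rightarrow> 'r set)" where
  "tpow G T I 0 = I"
| "tpow G T I (Suc n) = tprod G T (tpow G T I n) I"

definition trad :: "('g, 'b) monoid_scheme \<Rightarrow> ('g, 'r) tambara \<Rightarrow> ('g set \<Rightarrow> 'r set) \<Rightarrow> ('g set \<Rightarrow> 'r set)" where
  "trad G T I = (\<lambda>H. if subgroup H G
      then {x \<in> carrier (t_lev T H). \<exists>n. tpow G T (tprinc G T H x) n \<le> I} else {})"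

definition tzero :: "('g, 'b) monoid_scheme \<Rightarrow> ('g, 'r) tambara \<Rightarrow> ('g set \<Rightarrow> 'r set)" where
  "tzero G T = (\<lambda>H. if subgroup H G then {\<zero>\<^bsub>t_lev T H\<^esub>} else {})"

definition nilradical :: "('g, 'b) monoid_scheme \<Rightarrow> ('g, 'r) tambara \<Rightarrow> ('g set \<Rightarrow> 'r set)" where
  "nilradical G T = trad G T (tzero G T)"

definition tprime :: "('g, 'b) monoid_scheme \<Rightarrow> ('g, 'r) tambara \<Rightarrow> ('g set \<Rightarrow> 'r set) \<Rightarrow> bool" where
  "tprime G T P \<longleftrightarrow> tideal G T P \<and> \<one>\<^bsub>t_lev T (carrier G)\<^esub> \<notin> P (carrier G) \<and>
     (\<forall>I J. tideal G T I \<longrightarrow> tideal G T J \<longrightarrow> tprod G T I J \<le> P \<longrightarrow> I \<le> P \<or> J \<le> P)"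

definition tspec :: "('g, 'b) monoid_scheme \<Rightarrow> ('g, 'r) tambara \<Rightarrow> ('g set \<Rightarrow> 'r set) set" where
  "tspec G T = {P. tprime G T P}"

definition Vset :: "('g, 'b) monoid_scheme \<Rightarrow> ('g, 'r) tambara \<Rightarrow> 'g set \<Rightarrow> 'r \<Rightarrow> ('g set \<Rightarrow> 'r set) set" where
  "Vset G T H x = {P \<in> tspec G T. x \<in> P H}"

definition spec_top :: "('g, 'b) monoid_scheme \<Rightarrow> ('g, 'r) tambara \<Rightarrow> ('g set \<Rightarrow> 'r set) topology" where
  "spec_top G T = topology_generated_by
     (insert (tspec G T) {tspec G T - Vset G T H x | H x. subgroup H G \<and> x \<in> carrier (t_lev T H)})"

definition irreducible_space :: "'a topology \<Rightarrow> bool" where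
  "irreducible_space Top \<longleftrightarrow>
     (\<forall>U V. openin Top U \<longrightarrow> openin Top V \<longrightarrow> U \<inter> V = {} \<longrightarrow> U = {} \<or> V = {})"

end

theory Submission
  imports Defs
begin

locale tamb = G: group G for G :: "('g,'b) monoid_scheme" and T :: "('g,'r) tambara" +
  assumes finG: "finite (carrier G)" and tam: "is_tambara G T"
begin

abbreviation "L \<equiv> t_lev T"
abbreviation "res \<equiv> t_res T"
abbreviation "tr \<equiv> t_tr T"
abbreviation "nm \<equiv> t_nm T"
abbreviation "cj \<equiv> t_cj T"
lemmas tam_all = tam[unfolded is_tambara_def]

abbreviation "sg H \<equiv> subgroup H G"

lemma cring_L: "sg H \<Longrightarrow> cring (L H)"
  using tam_all[THEN conjunct1] by blast

lemma res_hom: "subgrp_le G H K \<Longrightarrow> res K H \<in> ring_hom (L K) (L H)"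
  using tam_all[THEN conjunct2, THEN conjunct1] by blast

lemma res_id: "sg H \<Longrightarrow> x \<in> carrier (L H) \<Longrightarrow> res H H x = x"
  using tam_all[THEN conjunct2, THEN conjunct2, THEN conjunct1] by blast

lemma res_trans: "subgrp_le G H K \<Longrightarrow> subgrp_le G K M \<Longrightarrow> x \<in> carrier (L M) \<Longrightarrow> res K H (res M K x) = res M H x"
  using tam_all[THEN conjunct2, THEN conjunct2, THEN conjunct2, THEN conjunct1] by blast

lemma tr_carrier: "subgrp_le G H K \<Longrightarrow> a \<in> carrier (L H) \<Longrightarrow> tr K H a \<in> carrier (L K)"
  using tam_all[THEN conjunct2, THEN conjunct2, THEN conjunct2, THEN conjunct2, THEN conjunct1] by blast

lemma tr_add: "subgrp_le G H K \<Longrightarrow> a \<in> carrier (L H) \<Longrightarrow> b \<in> carrier (L H) \<Longrightarrow> tr K H (a \<oplus>\<^bsub>L H\<^esub> b) = tr K H a \<oplus>\<^bsub>L K\<^esub> tr K H b"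
  using tam_all[THEN conjunct2, THEN conjunct2, THEN conjunct2, THEN conjunct2, THEN conjunct1] by blast

lemma tr_id: "sg H \<Longrightarrow> x \<in> carrier (L H) \<Longrightarrow> tr H H x = x"
  using tam_all[THEN conjunct2, THEN conjunct2, THEN conjunct2, THEN conjunct2, THEN conjunct2, THEN conjunct1] by blast

lemma tr_trans: "subgrp_le G H K \<Longrightarrow> subgrp_le G K M \<Longrightarrow> x \<in> carrier (L H) \<Longrightarrow> tr M K (tr K H x) = tr M H x"
  using tam_all[THEN conjunct2, THEN conjunct2, THEN conjunct2, THEN conjunct2, THEN conjunct2, THEN conjunct2, THEN conjunct1] by blast

lemma nm_carrier: "subgrp_le G H K \<Longrightarrow> a \<in> carrier (L H) \<Longrightarrow> nm K H a \<in> carrier (L K)"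
  using tam_all[THEN conjunct2, THEN conjunct2, THEN conjunct2, THEN conjunct2, THEN conjunct2, THEN conjunct2, THEN conjunct2, THEN conjunct1] by blast

lemma nm_mult: "subgrp_le G H K \<Longrightarrow> a \<in> carrier (L H) \<Longrightarrow> b \<in> carrier (L H) \<Longrightarrow> nm K H (a \<otimes>\<^bsub>L H\<^esub> b) = nm K H a \<otimes>\<^bsub>L K\<^esub> nm K H b"
  using tam_all[THEN conjunct2, THEN conjunct2, THEN conjunct2, THEN conjunct2, THEN conjunct2, THEN conjunct2, THEN conjunct2, THEN conjunct1] by blast

lemma nm_one: "subgrp_le G H K \<Longrightarrow> nm K H \<one>\<^bsub>L H\<^esub> = \<one>\<^bsub>L K\<^esub>"
  using tam_all[THEN conjunct2, THEN conjunct2, THEN conjunct2, THEN conjunct2, THEN conjunct2, THEN conjunct2, THEN conjunct2, THEN conjunct1] by blast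

lemma nm_zero: "subgrp_le G H K \<Longrightarrow> nm K H \<zero>\<^bsub>L H\<^esub> = \<zero>\<^bsub>L K\<^esub>"
  using tam_all[THEN conjunct2, THEN conjunct2, THEN conjunct2, THEN conjunct2, THEN conjunct2, THEN conjunct2, THEN conjunct2, THEN conjunct1] by blast

lemma nm_id: "sg H \<Longrightarrow> x \<in> carrier (L H) \<Longrightarrow> nm H H x = x"
  using tam_all[THEN conjunct2, THEN conjunct2, THEN conjunct2, THEN conjunct2, THEN conjunct2, THEN conjunct2, THEN conjunct2, THEN conjunct2, THEN conjunct1] by blast

lemma nm_trans: "subgrp_le G H K \<Longrightarrow> subgrp_le G K M \<Longrightarrow> x \<in> carrier (L H) \<Longrightarrow> nm M K (nm K H x) = nm M H x"
  using tam_all[THEN conjunct2, THEN conjunct2, THEN conjunct2, THEN conjunct2, THEN conjunct2, THEN conjunct2, THEN conjunct2, THEN conjunct2, THEN conjunct2, THEN conjunct1] by blast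

lemma cj_hom: "g \<in> carrier G \<Longrightarrow> sg H \<Longrightarrow> cj g H \<in> ring_hom (L H) (L (conjsub G g H))"
  using tam_all[THEN conjunct2, THEN conjunct2, THEN conjunct2, THEN conjunct2, THEN conjunct2, THEN conjunct2, THEN conjunct2, THEN conjunct2, THEN conjunct2, THEN conjunct2, THEN conjunct1] by blast

lemma cj_comp: "g \<in> carrier G \<Longrightarrow> g' \<in> carrier G \<Longrightarrow> sg H \<Longrightarrow> x \<in> carrier (L H) \<Longrightarrow>
   cj g' (conjsub G g H) (cj g H x) = cj (g' \<otimes>\<^bsub>G\<^esub> g) H x"
  using tam_all[THEN conjunct2, THEN conjunct2, THEN conjunct2, THEN conjunct2, THEN conjunct2, THEN conjunct2, THEN conjunct2, THEN conjunct2, THEN conjunct2, THEN conjunct2, THEN conjunct2, THEN conjunct1] by blast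

lemma cj_triv: "sg H \<Longrightarrow> h \<in> H \<Longrightarrow> x \<in> carrier (L H) \<Longrightarrow> cj h H x = x"
  using tam_all[THEN conjunct2, THEN conjunct2, THEN conjunct2, THEN conjunct2, THEN conjunct2, THEN conjunct2, THEN conjunct2, THEN conjunct2, THEN conjunct2, THEN conjunct2, THEN conjunct2, THEN conjunct2, THEN conjunct1] by blast

lemma cj_res: "g \<in> carrier G \<Longrightarrow> subgrp_le G H K \<Longrightarrow> x \<in> carrier (L K) \<Longrightarrow>
   cj g H (res K H x) = res (conjsub G g K) (conjsub G g H) (cj g K x)"
  using tam_all[THEN conjunct2, THEN conjunct2, THEN conjunct2, THEN conjunct2, THEN conjunct2, THEN conjunct2, THEN conjunct2, THEN conjunct2, THEN conjunct2, THEN conjunct2, THEN conjunct2, THEN conjunct2, THEN conjunct2, THEN conjunct1] by blast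

lemma cj_tr: "g \<in> carrier G \<Longrightarrow> subgrp_le G H K \<Longrightarrow> a \<in> carrier (L H) \<Longrightarrow>
   cj g K (tr K H a) = tr (conjsub G g K) (conjsub G g H) (cj g H a)"
  using tam_all[THEN conjunct2, THEN conjunct2, THEN conjunct2, THEN conjunct2, THEN conjunct2, THEN conjunct2, THEN conjunct2, THEN conjunct2, THEN conjunct2, THEN conjunct2, THEN conjunct2, THEN conjunct2, THEN conjunct2, THEN conjunct1] by blast

lemma cj_nm: "g \<in> carrier G \<Longrightarrow> subgrp_le G H K \<Longrightarrow> a \<in> carrier (L H) \<Longrightarrow>
   cj g K (nm K H a) = nm (conjsub G g K) (conjsub G g H) (cj g H a)"
  using tam_all[THEN conjunct2, THEN conjunct2, THEN conjunct2, THEN conjunct2, THEN conjunct2, THEN conjunct2, THEN conjunct2, THEN conjunct2, THEN conjunct2, THEN conjunct2, THEN conjunct2, THEN conjunct2, THEN conjunct2, THEN conjunct1] by blast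

lemma frob: "subgrp_le G H K \<Longrightarrow> a \<in> carrier (L H) \<Longrightarrow> b \<in> carrier (L K) \<Longrightarrow>
   tr K H (a \<otimes>\<^bsub>L H\<^esub> res K H b) = tr K H a \<otimes>\<^bsub>L K\<^esub> b"
  using tam_all[THEN conjunct2, THEN conjunct2, THEN conjunct2, THEN conjunct2, THEN conjunct2, THEN conjunct2, THEN conjunct2, THEN conjunct2, THEN conjunct2, THEN conjunct2, THEN conjunct2, THEN conjunct2, THEN conjunct2, THEN conjunct2, THEN conjunct1] by blast

lemma dc_tr: "subgrp_le G H K \<Longrightarrow> subgrp_le G J K \<Longrightarrow> dreps G K J H Q \<Longrightarrow> a \<in> carrier (L H) \<Longrightarrow>
        res K J (tr K H a) =
          (\<Oplus>\<^bsub>L J\<^esub> q\<in>Q. tr J (J \<inter> conjsub G q H)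
               (res (conjsub G q H) (J \<inter> conjsub G q H) (cj q H a)))"
  using tam_all[THEN conjunct2, THEN conjunct2, THEN conjunct2, THEN conjunct2, THEN conjunct2, THEN conjunct2, THEN conjunct2, THEN conjunct2, THEN conjunct2, THEN conjunct2, THEN conjunct2, THEN conjunct2, THEN conjunct2, THEN conjunct2, THEN conjunct2, THEN conjunct1] by blast

lemma dc_nm: "subgrp_le G H K \<Longrightarrow> subgrp_le G J K \<Longrightarrow> dreps G K J H Q \<Longrightarrow> a \<in> carrier (L H) \<Longrightarrow>
        res K J (nm K H a) =
          (\<Otimes>\<^bsub>L J\<^esub> q\<in>Q. nm J (J \<inter> conjsub G q H)
               (res (conjsub G q H) (J \<inter> conjsub G q H) (cj q H a)))"
  using tam_all[THEN conjunct2, THEN conjunct2, THEN conjunct2, THEN conjunct2, THEN conjunct2, THEN conjunct2, THEN conjunct2, THEN conjunct2, THEN conjunct2, THEN conjunct2, THEN conjunct2, THEN conjunct2, THEN conjunct2, THEN conjunct2, THEN conjunct2, THEN conjunct1] by blast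

lemma rec_sum: "subgrp_le G H K \<Longrightarrow> subreps G K H \<SS> \<Longrightarrow>
        (\<forall>S\<in>\<SS>. dreps G K (substab G K S) H (Qf S)) \<Longrightarrow>
      a\<in>carrier (L H) \<Longrightarrow> b\<in>carrier (L H) \<Longrightarrow>
        nm K H (a \<oplus>\<^bsub>L H\<^esub> b) =
          (\<Oplus>\<^bsub>L K\<^esub> S\<in>\<SS>. tr K (substab G K S)
             (\<Otimes>\<^bsub>L (substab G K S)\<^esub> q\<in>Qf S.
                nm (substab G K S) (substab G K S \<inter> conjsub G q H)
                  (res (conjsub G q H) (substab G K S \<inter> conjsub G q H)
                     (cj q H (if lco G q H \<in> S then a else b)))))"
  using tam_all[THEN conjunct2, THEN conjunct2, THEN conjunct2, THEN conjunct2, THEN conjunct2, THEN conjunct2, THEN conjunct2, THEN conjunct2, THEN conjunct2, THEN conjunct2, THEN conjunct2, THEN conjunct2, THEN conjunct2, THEN conjunct2, THEN conjunct2, THEN conjunct2, THEN conjunct1] by blast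

lemma rec_tr: "subgrp_le G H K \<Longrightarrow> subgrp_le G K J \<Longrightarrow> secreps G J K H \<SS> \<Longrightarrow>
        (\<forall>s\<in>\<SS>. dreps G J (secstab G J K s) K (Qf s) \<and>
                 (\<forall>q\<in>Qf s. xf s q \<in> s (lco G q K))) \<Longrightarrow>
      a\<in>carrier (L H) \<Longrightarrow>
        nm J K (tr K H a) =
          (\<Oplus>\<^bsub>L J\<^esub> s\<in>\<SS>. tr J (secstab G J K s)
             (\<Otimes>\<^bsub>L (secstab G J K s)\<^esub> q\<in>Qf s.
                nm (secstab G J K s) (secstab G J K s \<inter> conjsub G q K)
                  (res (conjsub G (xf s q) H) (secstab G J K s \<inter> conjsub G q K)
                     (cj (xf s q) H a))))"
  using tam_all[THEN conjunct2, THEN conjunct2, THEN conjunct2, THEN conjunct2, THEN conjunct2, THEN conjunct2, THEN conjunct2, THEN conjunct2, THEN conjunct2, THEN conjunct2, THEN conjunct2, THEN conjunct2, THEN conjunct2, THEN conjunct2, THEN conjunct2, THEN conjunct2, THEN conjunct2] by blast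

end


context tamb
begin

lemma conjsub_carrier: "H \<subseteq> carrier G \<Longrightarrow> g \<in> carrier G \<Longrightarrow> conjsub G g H \<subseteq> carrier G"
  unfolding conjsub_def by auto

lemma conjsub_comp: "H \<subseteq> carrier G \<Longrightarrow> g \<in> carrier G \<Longrightarrow> g' \<in> carrier G \<Longrightarrow>
   conjsub G g' (conjsub G g H) = conjsub G (g' \<otimes>\<^bsub>G\<^esub> g) H"
  unfolding conjsub_def image_image
  by (intro image_cong refl) (auto simp: G.inv_mult_group G.m_assoc subsetD)

lemma conjsub_one: "H \<subseteq> carrier G \<Longrightarrow> conjsub G \<one>\<^bsub>G\<^esub> H = H"
  unfolding conjsub_def by (auto simp: subsetD image_iff)

lemma mem_conjsub: "H \<subseteq> carrier G \<Longrightarrow> g \<in> carrier G \<Longrightarrow>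
   y \<in> conjsub G g H \<longleftrightarrow> y \<in> carrier G \<and> inv\<^bsub>G\<^esub> g \<otimes>\<^bsub>G\<^esub> y \<otimes>\<^bsub>G\<^esub> g \<in> H"
proof
  assume "H \<subseteq> carrier G" "g \<in> carrier G" "y \<in> conjsub G g H"
  then obtain h where h: "h \<in> H" "y = g \<otimes>\<^bsub>G\<^esub> h \<otimes>\<^bsub>G\<^esub> inv\<^bsub>G\<^esub> g" unfolding conjsub_def by auto
  with \<open>H \<subseteq> carrier G\<close> \<open>g \<in> carrier G\<close> have hc: "h \<in> carrier G" by auto
  have "inv\<^bsub>G\<^esub> g \<otimes>\<^bsub>G\<^esub> y \<otimes>\<^bsub>G\<^esub> g = h"
    using h(2) hc \<open>g \<in> carrier G\<close> by (simp add: G.m_assoc G.inv_closed del: )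
      (metis G.inv_closed G.l_inv G.m_assoc G.m_closed G.r_inv G.r_one G.l_one)
  then show "y \<in> carrier G \<and> inv\<^bsub>G\<^esub> g \<otimes>\<^bsub>G\<^esub> y \<otimes>\<^bsub>G\<^esub> g \<in> H"
    using h hc \<open>g \<in> carrier G\<close> by auto
next
  assume a: "H \<subseteq> carrier G" "g \<in> carrier G" "y \<in> carrier G \<and> inv\<^bsub>G\<^esub> g \<otimes>\<^bsub>G\<^esub> y \<otimes>\<^bsub>G\<^esub> g \<in> H"
  have "y = g \<otimes>\<^bsub>G\<^esub> (inv\<^bsub>G\<^esub> g \<otimes>\<^bsub>G\<^esub> y \<otimes>\<^bsub>G\<^esub> g) \<otimes>\<^bsub>G\<^esub> inv\<^bsub>G\<^esub> g"
    using a by (metis G.inv_closed G.l_inv G.m_assoc G.m_closed G.r_inv G.r_one G.l_one)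
  then show "y \<in> conjsub G g H" unfolding conjsub_def using a by blast
qed

lemma conjsub_subgroup: "sg H \<Longrightarrow> g \<in> carrier G \<Longrightarrow> sg (conjsub G g H)"
proof -
  assume H: "sg H" and g: "g \<in> carrier G"
  have Hc: "H \<subseteq> carrier G" using H subgroup.subset by blast
  show ?thesis
  proof (rule G.subgroupI)
    show "conjsub G g H \<subseteq> carrier G" using conjsub_carrier[OF Hc g] .
    show "conjsub G g H \<noteq> {}" unfolding conjsub_def using subgroup.one_closed[OF H] by blast
  next
    fix a assume "a \<in> conjsub G g H"
    then have a: "a \<in> carrier G" "inv\<^bsub>G\<^esub> g \<otimes>\<^bsub>G\<^esub> a \<otimes>\<^bsub>G\<^esub> g \<in> H" using mem_conjsub[OF Hc g] by auto
    have "inv\<^bsub>G\<^esub> g \<otimes>\<^bsub>G\<^esub> inv\<^bsub>G\<^esub> a \<otimes>\<^bsub>G\<^esub> g = inv\<^bsub>G\<^esub> (inv\<^bsub>G\<^esub> g \<otimes>\<^bsub>G\<^esub> a \<otimes>\<^bsub>G\<^esub> g)"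
      using a g by (simp add: G.inv_mult_group G.m_assoc)
    then show "inv\<^bsub>G\<^esub> a \<in> conjsub G g H"
      using mem_conjsub[OF Hc g] a g subgroup.m_inv_closed[OF H] by auto
  next
    fix a b assume "a \<in> conjsub G g H" "b \<in> conjsub G g H"
    then have a: "a \<in> carrier G" "inv\<^bsub>G\<^esub> g \<otimes>\<^bsub>G\<^esub> a \<otimes>\<^bsub>G\<^esub> g \<in> H"
      and b: "b \<in> carrier G" "inv\<^bsub>G\<^esub> g \<otimes>\<^bsub>G\<^esub> b \<otimes>\<^bsub>G\<^esub> g \<in> H" using mem_conjsub[OF Hc g] by auto
    have "inv\<^bsub>G\<^esub> g \<otimes>\<^bsub>G\<^esub> (a \<otimes>\<^bsub>G\<^esub> b) \<otimes>\<^bsub>G\<^esub> g =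
          (inv\<^bsub>G\<^esub> g \<otimes>\<^bsub>G\<^esub> a \<otimes>\<^bsub>G\<^esub> g) \<otimes>\<^bsub>G\<^esub> (inv\<^bsub>G\<^esub> g \<otimes>\<^bsub>G\<^esub> b \<otimes>\<^bsub>G\<^esub> g)"
      using a b g by (simp add: G.m_assoc) (metis G.inv_closed G.m_assoc G.m_closed G.r_inv G.l_one)
    then show "a \<otimes>\<^bsub>G\<^esub> b \<in> conjsub G g H"
      using mem_conjsub[OF Hc g] a b g subgroup.m_closed[OF H] by auto
  qed
qed

lemma conjsub_mono: "A \<subseteq> B \<Longrightarrow> conjsub G g A \<subseteq> conjsub G g B"
  unfolding conjsub_def by auto

lemma conjsub_Int: "A \<subseteq> carrier G \<Longrightarrow> B \<subseteq> carrier G \<Longrightarrow> g \<in> carrier G \<Longrightarrow>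
    conjsub G g (A \<inter> B) = conjsub G g A \<inter> conjsub G g B"
  using mem_conjsub[of A g] mem_conjsub[of B g] mem_conjsub[of "A \<inter> B" g] by blast

lemma conjsub_self: "sg H \<Longrightarrow> h \<in> H \<Longrightarrow> conjsub G h H = H"
proof -
  assume H: "sg H" and h: "h \<in> H"
  have Hc: "H \<subseteq> carrier G" using H subgroup.subset by blast
  have hc: "h \<in> carrier G" using h Hc by auto
  have "inv\<^bsub>G\<^esub> h \<in> H" using subgroup.m_inv_closed[OF H h] .
  have "y \<in> conjsub G h H \<longleftrightarrow> y \<in> H" for y
  proof (cases "y \<in> carrier G")
    case True
    have "inv\<^bsub>G\<^esub> h \<otimes>\<^bsub>G\<^esub> y \<otimes>\<^bsub>G\<^esub> h \<in> H \<longleftrightarrow> y \<in> H"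
    proof
      assume "inv\<^bsub>G\<^esub> h \<otimes>\<^bsub>G\<^esub> y \<otimes>\<^bsub>G\<^esub> h \<in> H"
      then have "h \<otimes>\<^bsub>G\<^esub> (inv\<^bsub>G\<^esub> h \<otimes>\<^bsub>G\<^esub> y \<otimes>\<^bsub>G\<^esub> h) \<otimes>\<^bsub>G\<^esub> inv\<^bsub>G\<^esub> h \<in> H"
        using h \<open>inv\<^bsub>G\<^esub> h \<in> H\<close> subgroup.m_closed[OF H] by blast
      moreover have "h \<otimes>\<^bsub>G\<^esub> (inv\<^bsub>G\<^esub> h \<otimes>\<^bsub>G\<^esub> y \<otimes>\<^bsub>G\<^esub> h) \<otimes>\<^bsub>G\<^esub> inv\<^bsub>G\<^esub> h = y"
        using True hc by (metis G.inv_closed G.l_inv G.m_assoc G.m_closed G.r_inv G.r_one G.l_one)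
      ultimately show "y \<in> H" by simp
    next
      assume "y \<in> H" then show "inv\<^bsub>G\<^esub> h \<otimes>\<^bsub>G\<^esub> y \<otimes>\<^bsub>G\<^esub> h \<in> H"
        using h \<open>inv\<^bsub>G\<^esub> h \<in> H\<close> subgroup.m_closed[OF H] by blast
    qed
    then show ?thesis using mem_conjsub[OF Hc hc] True by blast
  next
    case False then show ?thesis using mem_conjsub[OF Hc hc] Hc by blast
  qed
  then show ?thesis by blast
qed

lemma sg_Int: "sg A \<Longrightarrow> sg B \<Longrightarrow> sg (A \<inter> B)"
  by (rule G.subgroups_Inter_pair)

lemma sg_carrier: "sg H \<Longrightarrow> H \<subseteq> carrier G"
  using subgroup.subset by blast

lemma sgle_refl: "sg H \<Longrightarrow> subgrp_le G H H" unfolding subgrp_le_def by auto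

lemma sgle_trans: "subgrp_le G H K \<Longrightarrow> subgrp_le G K M \<Longrightarrow> subgrp_le G H M" unfolding subgrp_le_def by auto

lemma sgle_I: "sg H \<Longrightarrow> sg K \<Longrightarrow> H \<subseteq> K \<Longrightarrow> subgrp_le G H K" unfolding subgrp_le_def by auto

lemma sgle_D: "subgrp_le G H K \<Longrightarrow> sg H \<and> sg K \<and> H \<subseteq> K" unfolding subgrp_le_def by auto

lemma sg_G: "sg (carrier G)" by (rule G.subgroup_self)

lemma conjsub_G: "g \<in> carrier G \<Longrightarrow> conjsub G g (carrier G) = carrier G"
  using conjsub_self[OF sg_G] by blast

lemma conjsub_le: "subgrp_le G H K \<Longrightarrow> g \<in> carrier G \<Longrightarrow> subgrp_le G (conjsub G g H) (conjsub G g K)"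
  unfolding subgrp_le_def using conjsub_subgroup conjsub_mono by blast

end


lemma cring_idealI:
  assumes "cring R" "Y \<subseteq> carrier R" "\<zero>\<^bsub>R\<^esub> \<in> Y"
    "\<And>a b. a \<in> Y \<Longrightarrow> b \<in> Y \<Longrightarrow> a \<oplus>\<^bsub>R\<^esub> b \<in> Y"
    "\<And>a r. a \<in> Y \<Longrightarrow> r \<in> carrier R \<Longrightarrow> r \<otimes>\<^bsub>R\<^esub> a \<in> Y"
  shows "ideal Y R"
proof -
  interpret R: cring R by fact
  show ?thesis
  proof (rule idealI)
    show "ring R" by (rule R.ring_axioms)
    show "subgroup Y (add_monoid R)"
    proof (rule subgroup.intro)
      show "Y \<subseteq> carrier (add_monoid R)" using assms(2) by simp
      show "\<And>x y. x \<in> Y \<Longrightarrow> y \<in> Y \<Longrightarrow> x \<otimes>\<^bsub>add_monoid R\<^esub> y \<in> Y" using assms(4) by simp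
      show "\<one>\<^bsub>add_monoid R\<^esub> \<in> Y" using assms(3) by simp
      fix x assume x: "x \<in> Y"
      then have xc: "x \<in> carrier R" using assms(2) by auto
      have "inv\<^bsub>add_monoid R\<^esub> x = \<ominus>\<^bsub>R\<^esub> x" by (simp add: a_inv_def)
      also have "\<dots> = (\<ominus>\<^bsub>R\<^esub> \<one>\<^bsub>R\<^esub>) \<otimes>\<^bsub>R\<^esub> x" using xc by (simp add: R.l_minus)
      also have "\<dots> \<in> Y" using assms(5)[OF x] by simp
      finally show "inv\<^bsub>add_monoid R\<^esub> x \<in> Y" .
    qed
    show "\<And>a x. a \<in> Y \<Longrightarrow> x \<in> carrier R \<Longrightarrow> x \<otimes>\<^bsub>R\<^esub> a \<in> Y" using assms(5) by blast
    fix a x assume "a \<in> Y" "x \<in> carrier R"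
    then show "a \<otimes>\<^bsub>R\<^esub> x \<in> Y" using assms(5) assms(2) R.m_comm by (metis subsetD)
  qed
qed

lemma ideal_finsum:
  assumes "ideal I R" "\<And>i. i \<in> A \<Longrightarrow> f i \<in> I"
  shows "finsum R f A \<in> I"
proof -
  interpret ideal I R by fact
  show ?thesis
  proof (cases "finite A")
    case True
    from True assms(2) show ?thesis
    proof (induction A rule: finite_induct)
      case empty then show ?case by (simp add: finsum_empty)
    next
      case (insert x F)
      have fc: "f \<in> F \<rightarrow> carrier R" using insert.prems a_subset by blast
      have "finsum R f (insert x F) = f x \<oplus>\<^bsub>R\<^esub> finsum R f F"
        by (rule finsum_insert) (use insert fc a_subset in auto)
      then show ?case using insert a_closed by auto
    qed
  next
    case False
    then show ?thesis unfolding finsum_def finprod_def by simp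
  qed
qed

lemma ideal_finprod:
  assumes "cring R" "ideal I R" "finite A" "q \<in> A" "f q \<in> I" "f \<in> A \<rightarrow> carrier R"
  shows "finprod R f A \<in> I"
proof -
  interpret cring R by fact
  interpret I: ideal I R by fact
  have fq: "f q \<in> carrier R" using assms(4,6) by auto
  have f': "f \<in> (A - {q}) \<rightarrow> carrier R" using assms(6) by auto
  have "finprod R f (insert q (A - {q})) = f q \<otimes>\<^bsub>R\<^esub> finprod R f (A - {q})"
    by (rule finprod_insert) (use assms(3) fq f' in auto)
  moreover have "insert q (A - {q}) = A" using assms(4) by auto
  ultimately have eq: "finprod R f A = f q \<otimes>\<^bsub>R\<^esub> finprod R f (A - {q})" by simp
  have "finprod R f (A - {q}) \<in> carrier R" by (rule finprod_closed[OF f'])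
  then show ?thesis unfolding eq using I.I_r_closed assms(5) by blast
qed

lemma exists_reps:
  assumes refl: "\<And>x. x \<in> Y \<Longrightarrow> E x x"
    and sym: "\<And>x y. x \<in> Y \<Longrightarrow> y \<in> Y \<Longrightarrow> E x y \<Longrightarrow> E y x"
    and trans: "\<And>x y z. x \<in> Y \<Longrightarrow> y \<in> Y \<Longrightarrow> z \<in> Y \<Longrightarrow> E x y \<Longrightarrow> E y z \<Longrightarrow> E x z"
  shows "\<exists>R. R \<subseteq> Y \<and> (\<forall>x\<in>Y. \<exists>!r. r \<in> R \<and> E r x)"
proof -
  define cl where "cl x = {y \<in> Y. E y x}" for x
  define c where "c x = (SOME r. r \<in> cl x)" for x
  have c: "c x \<in> Y \<and> E (c x) x" if "x \<in> Y" for x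
  proof -
    have "x \<in> cl x" using that refl unfolding cl_def by auto
    then have "c x \<in> cl x" unfolding c_def by (rule someI)
    then show ?thesis unfolding cl_def by auto
  qed
  have cleq: "cl x = cl y" if xy: "x \<in> Y" "y \<in> Y" "E x y" for x y
  proof -
    have yx: "E y x" using sym[OF xy] .
    have "E z x \<longleftrightarrow> E z y" if "z \<in> Y" for z
      using trans[OF that xy(1) xy(2) _ xy(3)] trans[OF that xy(2) xy(1) _ yx] by blast
    then show ?thesis unfolding cl_def by blast
  qed
  show ?thesis
  proof (intro exI conjI ballI)
    show "c ` Y \<subseteq> Y" using c by auto
    fix x assume x: "x \<in> Y"
    show "\<exists>!r. r \<in> c ` Y \<and> E r x"
    proof (rule ex1I)
      show "c x \<in> c ` Y \<and> E (c x) x" using c x by auto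
      fix r assume r: "r \<in> c ` Y \<and> E r x"
      then obtain x' where x': "x' \<in> Y" "r = c x'" by auto
      have cx: "c x' \<in> Y" "E (c x') x'" using c[OF x'(1)] by auto
      have "E (c x') x" using r x' by simp
      then have "E x' x" using trans[OF x'(1) cx(1) x sym[OF cx(1) x'(1) cx(2)]] by simp
      then have "cl x' = cl x" using cleq x x' by blast
      then show "r = c x" using x' unfolding c_def by simp
    qed
  qed
qed

context tamb
begin

lemma lco_mult: "A \<subseteq> carrier G \<Longrightarrow> a \<in> carrier G \<Longrightarrow> b \<in> carrier G \<Longrightarrow>
   lco G a (lco G b A) = lco G (a \<otimes>\<^bsub>G\<^esub> b) A"
proof -
  assume A: "A \<subseteq> carrier G" and a: "a \<in> carrier G" and b: "b \<in> carrier G"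
  have "a \<otimes>\<^bsub>G\<^esub> (b \<otimes>\<^bsub>G\<^esub> c) = (a \<otimes>\<^bsub>G\<^esub> b) \<otimes>\<^bsub>G\<^esub> c" if "c \<in> A" for c
  proof -
    have "c \<in> carrier G" using A that by auto
    then show ?thesis using a b by (simp add: G.m_assoc)
  qed
  then show ?thesis unfolding lco_def image_image by (intro image_cong refl) simp
qed

lemma lco_one: "A \<subseteq> carrier G \<Longrightarrow> lco G \<one>\<^bsub>G\<^esub> A = A"
proof -
  assume A: "A \<subseteq> carrier G"
  have "\<one>\<^bsub>G\<^esub> \<otimes>\<^bsub>G\<^esub> c = c" if "c \<in> A" for c
    using A that by auto
  then show ?thesis unfolding lco_def by simp
qed

lemma lco_carrier: "A \<subseteq> carrier G \<Longrightarrow> a \<in> carrier G \<Longrightarrow> lco G a A \<subseteq> carrier G"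
  unfolding lco_def by auto

lemma lcosetsK_carrier: "K \<subseteq> carrier G \<Longrightarrow> H \<subseteq> carrier G \<Longrightarrow> C \<in> lcosetsK G K H \<Longrightarrow> C \<subseteq> carrier G"
  unfolding lcosetsK_def using lco_carrier[of H] by auto

lemma lco_lcosetsK: "sg K \<Longrightarrow> H \<subseteq> carrier G \<Longrightarrow> k \<in> K \<Longrightarrow> C \<in> lcosetsK G K H \<Longrightarrow> lco G k C \<in> lcosetsK G K H"
proof -
  assume K: "sg K" and H: "H \<subseteq> carrier G" and k: "k \<in> K" and C: "C \<in> lcosetsK G K H"
  then obtain k0 where k0: "k0 \<in> K" "C = lco G k0 H" unfolding lcosetsK_def by auto
  have Kc: "K \<subseteq> carrier G" using K by (rule sg_carrier)
  have "lco G k C = lco G (k \<otimes>\<^bsub>G\<^esub> k0) H" unfolding k0(2)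
    by (rule lco_mult[OF H]) (use k k0 Kc in auto)
  moreover have "k \<otimes>\<^bsub>G\<^esub> k0 \<in> K" using subgroup.m_closed[OF K k k0(1)] .
  ultimately show ?thesis unfolding lcosetsK_def by blast
qed

lemma dreps_exist:
  assumes "subgrp_le G J K" "subgrp_le G H K"
  shows "\<exists>Q. dreps G K J H Q"
proof -
  have J: "sg J" and K: "sg K" and H: "sg H" and JK: "J \<subseteq> K" and HK: "H \<subseteq> K"
    using assms unfolding subgrp_le_def by auto
  have Kc: "K \<subseteq> carrier G" using K sg_carrier by blast
  have Jc: "J \<subseteq> carrier G" and Hc: "H \<subseteq> carrier G" using J H sg_carrier by auto
  define E where "E q k = (k \<in> dcos G J q H)" for q k
  have "\<exists>R. R \<subseteq> K \<and> (\<forall>x\<in>K. \<exists>!r. r \<in> R \<and> E r x)"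
  proof (rule exists_reps)
    fix x assume x: "x \<in> K"
    have "x = \<one>\<^bsub>G\<^esub> \<otimes>\<^bsub>G\<^esub> x \<otimes>\<^bsub>G\<^esub> \<one>\<^bsub>G\<^esub>" using x Kc by auto
    then show "E x x" unfolding E_def dcos_def using subgroup.one_closed[OF J] subgroup.one_closed[OF H] by blast
  next
    fix x y assume x: "x \<in> K" and y: "y \<in> K" and "E x y"
    then obtain j h where jh: "j \<in> J" "h \<in> H" "y = j \<otimes>\<^bsub>G\<^esub> x \<otimes>\<^bsub>G\<^esub> h" unfolding E_def dcos_def by auto
    have c: "j \<in> carrier G" "h \<in> carrier G" "x \<in> carrier G" using jh x Jc Hc Kc by auto
    have "x = inv\<^bsub>G\<^esub> j \<otimes>\<^bsub>G\<^esub> y \<otimes>\<^bsub>G\<^esub> inv\<^bsub>G\<^esub> h"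
      using c jh(3) by (metis G.inv_closed G.l_inv G.m_assoc G.m_closed G.r_inv G.r_one G.l_one)
    then show "E y x" unfolding E_def dcos_def
      using subgroup.m_inv_closed[OF J jh(1)] subgroup.m_inv_closed[OF H jh(2)] by blast
  next
    fix x y z assume x: "x \<in> K" and y: "y \<in> K" and z: "z \<in> K" and "E x y" "E y z"
    then obtain j h j' h' where jh: "j \<in> J" "h \<in> H" "y = j \<otimes>\<^bsub>G\<^esub> x \<otimes>\<^bsub>G\<^esub> h"
      and jh': "j' \<in> J" "h' \<in> H" "z = j' \<otimes>\<^bsub>G\<^esub> y \<otimes>\<^bsub>G\<^esub> h'" unfolding E_def dcos_def by auto
    have c: "j \<in> carrier G" "h \<in> carrier G" "x \<in> carrier G" "j' \<in> carrier G" "h' \<in> carrier G"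
      using jh jh' x Jc Hc Kc by auto
    have "z = (j' \<otimes>\<^bsub>G\<^esub> j) \<otimes>\<^bsub>G\<^esub> x \<otimes>\<^bsub>G\<^esub> (h \<otimes>\<^bsub>G\<^esub> h')"
      using c jh(3) jh'(3) by (simp add: G.m_assoc)
    then show "E x z" unfolding E_def dcos_def
      using subgroup.m_closed[OF J jh'(1) jh(1)] subgroup.m_closed[OF H jh(2) jh'(2)] by blast
  qed
  then show ?thesis unfolding dreps_def E_def by blast
qed

lemma dreps_finite: "dreps G K J H Q \<Longrightarrow> sg K \<Longrightarrow> finite Q"
proof -
  assume "dreps G K J H Q" "sg K"
  then have "Q \<subseteq> carrier G" unfolding dreps_def using sg_carrier by auto
  then show ?thesis using finG by (rule finite_subset)
qed

lemma dreps_nonempty: "dreps G K J H Q \<Longrightarrow> sg K \<Longrightarrow> Q \<noteq> {}"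
proof -
  assume d: "dreps G K J H Q" and K: "sg K"
  have "\<one>\<^bsub>G\<^esub> \<in> K" using subgroup.one_closed[OF K] .
  with d obtain q where "q \<in> Q" unfolding dreps_def by blast
  then show ?thesis by auto
qed

lemma dreps_sub: "dreps G K J H Q \<Longrightarrow> Q \<subseteq> K"
  unfolding dreps_def by (elim conjE)

end


context tamb
begin

lemma subact_mult: "(\<And>C. C \<in> S \<Longrightarrow> C \<subseteq> carrier G) \<Longrightarrow> a \<in> carrier G \<Longrightarrow> b \<in> carrier G \<Longrightarrow>
   subact G a (subact G b S) = subact G (a \<otimes>\<^bsub>G\<^esub> b) S"
proof -
  assume S: "\<And>C. C \<in> S \<Longrightarrow> C \<subseteq> carrier G" and a: "a \<in> carrier G" and b: "b \<in> carrier G"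
  have "lco G a (lco G b C) = lco G (a \<otimes>\<^bsub>G\<^esub> b) C" if "C \<in> S" for C
    using lco_mult[OF S[OF that] a b] .
  then show ?thesis unfolding subact_def image_image by (intro image_cong refl) simp
qed

lemma subact_one: "(\<And>C. C \<in> S \<Longrightarrow> C \<subseteq> carrier G) \<Longrightarrow> subact G \<one>\<^bsub>G\<^esub> S = S"
proof -
  assume S: "\<And>C. C \<in> S \<Longrightarrow> C \<subseteq> carrier G"
  have "lco G \<one>\<^bsub>G\<^esub> C = C" if "C \<in> S" for C using lco_one[OF S[OF that]] .
  then show ?thesis unfolding subact_def by simp
qed

lemma subact_Pow: "sg K \<Longrightarrow> H \<subseteq> carrier G \<Longrightarrow> k \<in> K \<Longrightarrow> S \<subseteq> lcosetsK G K H \<Longrightarrow>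
   subact G k S \<subseteq> lcosetsK G K H"
proof -
  assume "sg K" "H \<subseteq> carrier G" "k \<in> K" "S \<subseteq> lcosetsK G K H"
  then have "lco G k C \<in> lcosetsK G K H" if "C \<in> S" for C using lco_lcosetsK that by auto
  then show ?thesis unfolding subact_def by auto
qed

lemma substab_sg:
  assumes K: "sg K" and H: "H \<subseteq> carrier G" and S: "S \<subseteq> lcosetsK G K H"
  shows "sg (substab G K S)" "substab G K S \<subseteq> K"
proof -
  have Kc: "K \<subseteq> carrier G" using K by (rule sg_carrier)
  have Sc: "\<And>C. C \<in> S \<Longrightarrow> C \<subseteq> carrier G" using S lcosetsK_carrier[OF Kc H] by blast
  show "substab G K S \<subseteq> K" unfolding substab_def by auto
  show "sg (substab G K S)"
  proof (rule G.subgroupI)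
    show "substab G K S \<subseteq> carrier G" unfolding substab_def using Kc by auto
    have "\<one>\<^bsub>G\<^esub> \<in> substab G K S" unfolding substab_def
      using subgroup.one_closed[OF K] subact_one[OF Sc] by auto
    then show "substab G K S \<noteq> {}" by auto
  next
    fix a assume a: "a \<in> substab G K S"
    then have aK: "a \<in> K" and aS: "subact G a S = S" unfolding substab_def by auto
    have ac: "a \<in> carrier G" using aK Kc by auto
    have "subact G (inv\<^bsub>G\<^esub> a) S = subact G (inv\<^bsub>G\<^esub> a) (subact G a S)" using aS by simp
    also have "\<dots> = subact G (inv\<^bsub>G\<^esub> a \<otimes>\<^bsub>G\<^esub> a) S" using subact_mult[OF Sc] ac by simp
    also have "\<dots> = S" using subact_one[OF Sc] ac by simp
    finally show "inv\<^bsub>G\<^esub> a \<in> substab G K S" unfolding substab_def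
      using subgroup.m_inv_closed[OF K aK] by auto
  next
    fix a b assume a: "a \<in> substab G K S" and b: "b \<in> substab G K S"
    then have aK: "a \<in> K" and aS: "subact G a S = S" and bK: "b \<in> K" and bS: "subact G b S = S"
      unfolding substab_def by auto
    have "subact G (a \<otimes>\<^bsub>G\<^esub> b) S = subact G a (subact G b S)" using subact_mult[OF Sc] aK bK Kc by auto
    also have "\<dots> = S" using aS bS by simp
    finally show "a \<otimes>\<^bsub>G\<^esub> b \<in> substab G K S" unfolding substab_def
      using subgroup.m_closed[OF K aK bK] by auto
  qed
qed

lemma subreps_exist:
  assumes K: "sg K" and H: "H \<subseteq> carrier G"
  shows "\<exists>\<SS>. subreps G K H \<SS>"
proof -
  have Kc: "K \<subseteq> carrier G" using K by (rule sg_carrier)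
  define E where "E S S' = (\<exists>k\<in>K. subact G k S = S')" for S S'
  have Sc: "C \<subseteq> carrier G" if "S \<in> Pow (lcosetsK G K H)" "C \<in> S" for S C
    using that lcosetsK_carrier[OF Kc H] by blast
  have one: "subact G \<one>\<^bsub>G\<^esub> S = S" if "S \<in> Pow (lcosetsK G K H)" for S
    by (rule subact_one) (rule Sc[OF that])
  have mult: "subact G a (subact G b S) = subact G (a \<otimes>\<^bsub>G\<^esub> b) S"
    if "S \<in> Pow (lcosetsK G K H)" "a \<in> carrier G" "b \<in> carrier G" for S a b
    by (rule subact_mult) (rule Sc[OF that(1)], assumption, rule that(2), rule that(3))
  have ex: "\<exists>R. R \<subseteq> Pow (lcosetsK G K H) \<and> (\<forall>x\<in>Pow (lcosetsK G K H). \<exists>!r. r \<in> R \<and> E r x)"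
  proof (rule exists_reps)
    fix x assume x: "x \<in> Pow (lcosetsK G K H)"
    show "E x x" unfolding E_def using one[OF x] subgroup.one_closed[OF K] by auto
  next
    fix x y assume x: "x \<in> Pow (lcosetsK G K H)" and y: "y \<in> Pow (lcosetsK G K H)" and "E x y"
    then obtain k where k: "k \<in> K" "subact G k x = y" unfolding E_def by auto
    have kc: "k \<in> carrier G" using k Kc by auto
    have ikc: "inv\<^bsub>G\<^esub> k \<in> carrier G" using kc by simp
    have "subact G (inv\<^bsub>G\<^esub> k) y = subact G (inv\<^bsub>G\<^esub> k \<otimes>\<^bsub>G\<^esub> k) x"
      unfolding k(2)[symmetric] by (rule mult[OF x ikc kc])
    also have "\<dots> = x" using one[OF x] kc by simp
    finally show "E y x" unfolding E_def using subgroup.m_inv_closed[OF K k(1)] by auto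
  next
    fix x y z assume x: "x \<in> Pow (lcosetsK G K H)" and y: "y \<in> Pow (lcosetsK G K H)"
      and z: "z \<in> Pow (lcosetsK G K H)" and "E x y" "E y z"
    then obtain k k' where k: "k \<in> K" "subact G k x = y" and k': "k' \<in> K" "subact G k' y = z"
      unfolding E_def by auto
    have kc: "k \<in> carrier G" "k' \<in> carrier G" using k k' Kc by auto
    have "subact G (k' \<otimes>\<^bsub>G\<^esub> k) x = z" using mult[OF x kc(2) kc(1)] k(2) k'(2) by simp
    then show "E x z" unfolding E_def using subgroup.m_closed[OF K k'(1) k(1)] by auto
  qed
  then obtain R where R: "R \<subseteq> Pow (lcosetsK G K H)" "\<forall>x\<in>Pow (lcosetsK G K H). \<exists>!r. r \<in> R \<and> E r x"
    by (elim exE conjE)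
  have "subreps G K H R" unfolding subreps_def
    using R unfolding E_def by (intro conjI)
  then show ?thesis by (rule exI)
qed

lemma subreps_sub: "subreps G K H \<SS> \<Longrightarrow> S \<in> \<SS> \<Longrightarrow> S \<subseteq> lcosetsK G K H"
proof -
  assume a: "subreps G K H \<SS>" "S \<in> \<SS>"
  have "\<SS> \<subseteq> Pow (lcosetsK G K H)" using a(1) unfolding subreps_def by (rule conjunct1)
  then show ?thesis using a(2) by blast
qed

lemma sections_D: "s \<in> sections G J K H \<Longrightarrow> C \<in> lcosetsK G J K \<Longrightarrow> s C \<in> lcosetsK G J H \<and> s C \<subseteq> C"
  unfolding sections_def by auto

lemma sections_ext: "s \<in> sections G J K H \<Longrightarrow> C \<notin> lcosetsK G J K \<Longrightarrow> s C = undefined"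
  unfolding sections_def PiE_def extensional_def by auto

lemma secact_app: "C \<in> lcosetsK G J K \<Longrightarrow> secact G J K j s C = lco G j (s (lco G (inv\<^bsub>G\<^esub> j) C))"
  unfolding secact_def by simp

lemma secact_app_out: "C \<notin> lcosetsK G J K \<Longrightarrow> secact G J K j s C = undefined"
  unfolding secact_def by simp

lemma lco_mono: "A \<subseteq> B \<Longrightarrow> lco G a A \<subseteq> lco G a B"
  unfolding lco_def by auto

context
  fixes J K H
  assumes J: "sg J" and KJ: "K \<subseteq> J" and Hc: "H \<subseteq> carrier G"
begin

lemma Jc: "J \<subseteq> carrier G" using J by (rule sg_carrier)
lemma Kc: "K \<subseteq> carrier G" using KJ Jc by auto

lemma DK_carrier: "C \<in> lcosetsK G J K \<Longrightarrow> C \<subseteq> carrier G"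
  using lcosetsK_carrier[OF Jc Kc] .

lemma DH_carrier: "C \<in> lcosetsK G J H \<Longrightarrow> C \<subseteq> carrier G"
  using lcosetsK_carrier[OF Jc Hc] .

lemma secact_sections:
  assumes j: "j \<in> J" and s: "s \<in> sections G J K H"
  shows "secact G J K j s \<in> sections G J K H"
proof -
  have jc: "j \<in> carrier G" using j Jc by auto
  have ij: "inv\<^bsub>G\<^esub> j \<in> J" using subgroup.m_inv_closed[OF J j] .
  have "secact G J K j s C \<in> lcosetsK G J H \<and> secact G J K j s C \<subseteq> C" if C: "C \<in> lcosetsK G J K" for C
  proof -
    have C': "lco G (inv\<^bsub>G\<^esub> j) C \<in> lcosetsK G J K" using lco_lcosetsK[OF J Kc ij C] .
    have sC: "s (lco G (inv\<^bsub>G\<^esub> j) C) \<in> lcosetsK G J H" "s (lco G (inv\<^bsub>G\<^esub> j) C) \<subseteq> lco G (inv\<^bsub>G\<^esub> j) C"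
      using sections_D[OF s C'] by auto
    have "lco G j (s (lco G (inv\<^bsub>G\<^esub> j) C)) \<in> lcosetsK G J H" using lco_lcosetsK[OF J Hc j sC(1)] .
    moreover have "lco G j (s (lco G (inv\<^bsub>G\<^esub> j) C)) \<subseteq> lco G j (lco G (inv\<^bsub>G\<^esub> j) C)"
      using lco_mono[OF sC(2)] .
    moreover have "lco G j (lco G (inv\<^bsub>G\<^esub> j) C) = C"
      using lco_mult[OF DK_carrier[OF C] jc] jc lco_one[OF DK_carrier[OF C]] by simp
    ultimately show ?thesis using secact_app[OF C] by simp
  qed
  moreover have "secact G J K j s \<in> extensional (lcosetsK G J K)" unfolding secact_def by simp
  ultimately show ?thesis unfolding sections_def PiE_def Pi_def by auto
qed

lemma secact_one:
  assumes s: "s \<in> sections G J K H"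
  shows "secact G J K \<one>\<^bsub>G\<^esub> s = s"
proof
  fix C show "secact G J K \<one>\<^bsub>G\<^esub> s C = s C"
  proof (cases "C \<in> lcosetsK G J K")
    case True
    have "s C \<in> lcosetsK G J H" using sections_D[OF s True] by auto
    then show ?thesis using secact_app[OF True] lco_one[OF DK_carrier[OF True]] lco_one[OF DH_carrier] by simp
  next
    case False
    then show ?thesis using secact_app_out[OF False] sections_ext[OF s False] by simp
  qed
qed

lemma secact_mult:
  assumes s: "s \<in> sections G J K H" and a: "a \<in> J" and b: "b \<in> J"
  shows "secact G J K a (secact G J K b s) = secact G J K (a \<otimes>\<^bsub>G\<^esub> b) s"
proof
  fix C show "secact G J K a (secact G J K b s) C = secact G J K (a \<otimes>\<^bsub>G\<^esub> b) s C"
  proof (cases "C \<in> lcosetsK G J K")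
    case True
    have ac: "a \<in> carrier G" and bc: "b \<in> carrier G" using a b Jc by auto
    have ia: "inv\<^bsub>G\<^esub> a \<in> J" using subgroup.m_inv_closed[OF J a] .
    have ib: "inv\<^bsub>G\<^esub> b \<in> J" using subgroup.m_inv_closed[OF J b] .
    have C': "lco G (inv\<^bsub>G\<^esub> a) C \<in> lcosetsK G J K" using lco_lcosetsK[OF J Kc ia True] .
    have e1: "secact G J K a (secact G J K b s) C = lco G a (lco G b (s (lco G (inv\<^bsub>G\<^esub> b) (lco G (inv\<^bsub>G\<^esub> a) C))))"
      using secact_app[OF True] secact_app[OF C'] by simp
    have C'': "lco G (inv\<^bsub>G\<^esub> b) (lco G (inv\<^bsub>G\<^esub> a) C) \<in> lcosetsK G J K"
      using lco_lcosetsK[OF J Kc ib C'] .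
    have e2: "lco G (inv\<^bsub>G\<^esub> b) (lco G (inv\<^bsub>G\<^esub> a) C) = lco G (inv\<^bsub>G\<^esub> (a \<otimes>\<^bsub>G\<^esub> b)) C"
      using lco_mult[OF DK_carrier[OF True]] ac bc by (simp add: G.inv_mult_group)
    have e3: "lco G a (lco G b Z) = lco G (a \<otimes>\<^bsub>G\<^esub> b) Z" if "Z \<in> lcosetsK G J H" for Z
      using lco_mult[OF DH_carrier[OF that] ac bc] .
    have "s (lco G (inv\<^bsub>G\<^esub> b) (lco G (inv\<^bsub>G\<^esub> a) C)) \<in> lcosetsK G J H" using sections_D[OF s C''] by auto
    then show ?thesis using e1 e2 e3 secact_app[OF True] by simp
  next
    case False
    then show ?thesis using secact_app_out[OF False] by simp
  qed
qed

lemma secstab_sg: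
  assumes s: "s \<in> sections G J K H"
  shows "sg (secstab G J K s)" "secstab G J K s \<subseteq> J"
proof -
  show "secstab G J K s \<subseteq> J" unfolding secstab_def by auto
  show "sg (secstab G J K s)"
  proof (rule G.subgroupI)
    show "secstab G J K s \<subseteq> carrier G" unfolding secstab_def using Jc by auto
    have "\<one>\<^bsub>G\<^esub> \<in> secstab G J K s" unfolding secstab_def
      using subgroup.one_closed[OF J] secact_one[OF s] by auto
    then show "secstab G J K s \<noteq> {}" by auto
  next
    fix a assume a: "a \<in> secstab G J K s"
    then have aJ: "a \<in> J" and aS: "secact G J K a s = s" unfolding secstab_def by auto
    have ac: "a \<in> carrier G" using aJ Jc by auto
    have ia: "inv\<^bsub>G\<^esub> a \<in> J" using subgroup.m_inv_closed[OF J aJ] .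
    have "secact G J K (inv\<^bsub>G\<^esub> a) s = secact G J K (inv\<^bsub>G\<^esub> a) (secact G J K a s)" using aS by simp
    also have "\<dots> = secact G J K (inv\<^bsub>G\<^esub> a \<otimes>\<^bsub>G\<^esub> a) s" by (rule secact_mult[OF s ia aJ])
    also have "\<dots> = s" using secact_one[OF s] ac by simp
    finally show "inv\<^bsub>G\<^esub> a \<in> secstab G J K s" unfolding secstab_def using ia by auto
  next
    fix a b assume a: "a \<in> secstab G J K s" and b: "b \<in> secstab G J K s"
    then have aJ: "a \<in> J" and aS: "secact G J K a s = s" and bJ: "b \<in> J" and bS: "secact G J K b s = s"
      unfolding secstab_def by auto
    have "secact G J K (a \<otimes>\<^bsub>G\<^esub> b) s = secact G J K a (secact G J K b s)" using secact_mult[OF s aJ bJ] by simp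
    also have "\<dots> = s" using aS bS by simp
    finally show "a \<otimes>\<^bsub>G\<^esub> b \<in> secstab G J K s" unfolding secstab_def
      using subgroup.m_closed[OF J aJ bJ] by auto
  qed
qed

lemma secreps_exist: "\<exists>\<SS>. secreps G J K H \<SS>"
proof -
  define E where "E s s' = (\<exists>j\<in>J. secact G J K j s = s')" for s s'
  have ex: "\<exists>R. R \<subseteq> sections G J K H \<and> (\<forall>x\<in>sections G J K H. \<exists>!r. r \<in> R \<and> E r x)"
  proof (rule exists_reps)
    fix x assume x: "x \<in> sections G J K H"
    show "E x x" unfolding E_def using secact_one[OF x] subgroup.one_closed[OF J] by auto
  next
    fix x y assume x: "x \<in> sections G J K H" and y: "y \<in> sections G J K H" and "E x y"
    then obtain k where k: "k \<in> J" "secact G J K k x = y" unfolding E_def by auto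
    have kc: "k \<in> carrier G" using k Jc by auto
    have ik: "inv\<^bsub>G\<^esub> k \<in> J" using subgroup.m_inv_closed[OF J k(1)] .
    have "secact G J K (inv\<^bsub>G\<^esub> k) y = secact G J K (inv\<^bsub>G\<^esub> k \<otimes>\<^bsub>G\<^esub> k) x"
      unfolding k(2)[symmetric] by (rule secact_mult[OF x ik k(1)])
    also have "\<dots> = x" using secact_one[OF x] kc by simp
    finally show "E y x" unfolding E_def using ik by auto
  next
    fix x y z assume x: "x \<in> sections G J K H" and y: "y \<in> sections G J K H"
      and z: "z \<in> sections G J K H" and "E x y" "E y z"
    then obtain k k' where k: "k \<in> J" "secact G J K k x = y" and k': "k' \<in> J" "secact G J K k' y = z"
      unfolding E_def by auto
    have "secact G J K (k' \<otimes>\<^bsub>G\<^esub> k) x = z" using secact_mult[OF x k'(1) k(1)] k(2) k'(2) by simp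
    then show "E x z" unfolding E_def using subgroup.m_closed[OF J k'(1) k(1)] by auto
  qed
  then obtain R where R: "R \<subseteq> sections G J K H" "\<forall>x\<in>sections G J K H. \<exists>!r. r \<in> R \<and> E r x"
    by (elim exE conjE)
  have "secreps G J K H R" unfolding secreps_def
    using R unfolding E_def by (intro conjI)
  then show ?thesis by (rule exI)
qed

end

lemma secreps_sub: "secreps G J K H \<SS> \<Longrightarrow> s \<in> \<SS> \<Longrightarrow> s \<in> sections G J K H"
proof -
  assume a: "secreps G J K H \<SS>" "s \<in> \<SS>"
  have "\<SS> \<subseteq> sections G J K H" using a(1) unfolding secreps_def by (rule conjunct1)
  then show ?thesis using a(2) by blast
qed

end


context tamb
begin

lemma res_carrier: "subgrp_le G H K \<Longrightarrow> x \<in> carrier (L K) \<Longrightarrow> res K H x \<in> carrier (L H)"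
  using ring_hom_closed[OF res_hom] .

lemma res_add: "subgrp_le G H K \<Longrightarrow> x \<in> carrier (L K) \<Longrightarrow> y \<in> carrier (L K) \<Longrightarrow>
   res K H (x \<oplus>\<^bsub>L K\<^esub> y) = res K H x \<oplus>\<^bsub>L H\<^esub> res K H y"
  using ring_hom_add[OF res_hom] .

lemma res_mult: "subgrp_le G H K \<Longrightarrow> x \<in> carrier (L K) \<Longrightarrow> y \<in> carrier (L K) \<Longrightarrow>
   res K H (x \<otimes>\<^bsub>L K\<^esub> y) = res K H x \<otimes>\<^bsub>L H\<^esub> res K H y"
  using ring_hom_mult[OF res_hom] .

lemma res_one: "subgrp_le G H K \<Longrightarrow> res K H \<one>\<^bsub>L K\<^esub> = \<one>\<^bsub>L H\<^esub>"
  using ring_hom_one[OF res_hom] .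

lemma res_zero: "subgrp_le G H K \<Longrightarrow> res K H \<zero>\<^bsub>L K\<^esub> = \<zero>\<^bsub>L H\<^esub>"
  using ring_hom_zero[OF res_hom] cring_L sgle_D cring.axioms(1) by metis

lemma cj_carrier: "g \<in> carrier G \<Longrightarrow> sg H \<Longrightarrow> x \<in> carrier (L H) \<Longrightarrow> cj g H x \<in> carrier (L (conjsub G g H))"
  using ring_hom_closed[OF cj_hom] .

lemma cj_add: "g \<in> carrier G \<Longrightarrow> sg H \<Longrightarrow> x \<in> carrier (L H) \<Longrightarrow> y \<in> carrier (L H) \<Longrightarrow>
   cj g H (x \<oplus>\<^bsub>L H\<^esub> y) = cj g H x \<oplus>\<^bsub>L (conjsub G g H)\<^esub> cj g H y"
  using ring_hom_add[OF cj_hom] .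

lemma cj_mult: "g \<in> carrier G \<Longrightarrow> sg H \<Longrightarrow> x \<in> carrier (L H) \<Longrightarrow> y \<in> carrier (L H) \<Longrightarrow>
   cj g H (x \<otimes>\<^bsub>L H\<^esub> y) = cj g H x \<otimes>\<^bsub>L (conjsub G g H)\<^esub> cj g H y"
  using ring_hom_mult[OF cj_hom] .

lemma cj_one: "g \<in> carrier G \<Longrightarrow> sg H \<Longrightarrow> cj g H \<one>\<^bsub>L H\<^esub> = \<one>\<^bsub>L (conjsub G g H)\<^esub>"
  using ring_hom_one[OF cj_hom] .

lemma cj_zero: "g \<in> carrier G \<Longrightarrow> sg H \<Longrightarrow> cj g H \<zero>\<^bsub>L H\<^esub> = \<zero>\<^bsub>L (conjsub G g H)\<^esub>"
  using ring_hom_zero[OF cj_hom] cring_L conjsub_subgroup cring.axioms(1) by metis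

lemma tr_zero: "subgrp_le G H K \<Longrightarrow> tr K H \<zero>\<^bsub>L H\<^esub> = \<zero>\<^bsub>L K\<^esub>"
proof -
  assume hk: "subgrp_le G H K"
  interpret H: cring "L H" using cring_L sgle_D[OF hk] by blast
  interpret K: cring "L K" using cring_L sgle_D[OF hk] by blast
  have z: "tr K H \<zero>\<^bsub>L H\<^esub> \<in> carrier (L K)" using tr_carrier[OF hk] by simp
  have "tr K H \<zero>\<^bsub>L H\<^esub> = tr K H (\<zero>\<^bsub>L H\<^esub> \<oplus>\<^bsub>L H\<^esub> \<zero>\<^bsub>L H\<^esub>)" by simp
  also have "\<dots> = tr K H \<zero>\<^bsub>L H\<^esub> \<oplus>\<^bsub>L K\<^esub> tr K H \<zero>\<^bsub>L H\<^esub>" using tr_add[OF hk H.zero_closed H.zero_closed] .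
  finally have eq: "tr K H \<zero>\<^bsub>L H\<^esub> = tr K H \<zero>\<^bsub>L H\<^esub> \<oplus>\<^bsub>L K\<^esub> tr K H \<zero>\<^bsub>L H\<^esub>" .
  define t where "t = tr K H \<zero>\<^bsub>L H\<^esub>"
  have tc: "t \<in> carrier (L K)" using z unfolding t_def .
  have eq': "t = t \<oplus>\<^bsub>L K\<^esub> t" using eq unfolding t_def .
  have "\<zero>\<^bsub>L K\<^esub> = t \<oplus>\<^bsub>L K\<^esub> \<ominus>\<^bsub>L K\<^esub> t" using K.r_neg[OF tc] by simp
  also have "\<dots> = (t \<oplus>\<^bsub>L K\<^esub> t) \<oplus>\<^bsub>L K\<^esub> \<ominus>\<^bsub>L K\<^esub> t" using eq' by simp
  also have "\<dots> = t \<oplus>\<^bsub>L K\<^esub> (t \<oplus>\<^bsub>L K\<^esub> \<ominus>\<^bsub>L K\<^esub> t)" using K.a_assoc tc by simp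
  also have "\<dots> = t" using K.r_neg[OF tc] tc by simp
  finally show ?thesis unfolding t_def by simp
qed

section \<open>Tambara ideals\<close>

definition full :: "'g set \<Rightarrow> 'r set" where
  "full H = (if sg H then carrier (L H) else {})"

lemma tidealI:
  assumes a1: "\<And>H. sg H \<Longrightarrow> ideal (I H) (L H)"
    and a2: "\<And>H. \<not> sg H \<Longrightarrow> I H = {}"
    and a3: "\<And>H K x. subgrp_le G H K \<Longrightarrow> x \<in> I K \<Longrightarrow> res K H x \<in> I H"
    and a4: "\<And>H K x. subgrp_le G H K \<Longrightarrow> x \<in> I H \<Longrightarrow> tr K H x \<in> I K"
    and a5: "\<And>H K x. subgrp_le G H K \<Longrightarrow> x \<in> I H \<Longrightarrow> nm K H x \<in> I K"
    and a6: "\<And>g H x. g \<in> carrier G \<Longrightarrow> sg H \<Longrightarrow> x \<in> I H \<Longrightarrow> cj g H x \<in> I (conjsub G g H)"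
  shows "tideal G T I"
  unfolding tideal_def
proof (intro conjI allI impI ballI)
  show "\<And>H. sg H \<Longrightarrow> ideal (I H) (L H)" by (rule a1)
  show "\<And>H. \<not> sg H \<Longrightarrow> I H = {}" by (rule a2)
  show "res K H ` I K \<subseteq> I H" if "subgrp_le G H K" for H K using a3[OF that] by blast
  show "tr K H ` I H \<subseteq> I K" if "subgrp_le G H K" for H K using a4[OF that] by blast
  show "nm K H ` I H \<subseteq> I K" if "subgrp_le G H K" for H K using a5[OF that] by blast
  show "cj g H ` I H \<subseteq> I (conjsub G g H)" if "g \<in> carrier G" "sg H" for g H using a6[OF that] by blast
qed

lemma tideal_D: "tideal G T I \<Longrightarrow> (\<forall>H. sg H \<longrightarrow> ideal (I H) (L H)) \<and>
     (\<forall>H. \<not> sg H \<longrightarrow> I H = {}) \<and>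
     (\<forall>H K. subgrp_le G H K \<longrightarrow>
        res K H ` I K \<subseteq> I H \<and> tr K H ` I H \<subseteq> I K \<and> nm K H ` I H \<subseteq> I K) \<and>
     (\<forall>g\<in>carrier G. \<forall>H. sg H \<longrightarrow> cj g H ` I H \<subseteq> I (conjsub G g H))"
  unfolding tideal_def by assumption

lemma tideal_ideal: "tideal G T I \<Longrightarrow> sg H \<Longrightarrow> ideal (I H) (L H)"
proof -
  assume I: "tideal G T I" and H: "sg H"
  show ?thesis using tideal_D[OF I, THEN conjunct1, rule_format, OF H] .
qed

lemma tideal_empty: "tideal G T I \<Longrightarrow> \<not> sg H \<Longrightarrow> I H = {}"
proof -
  assume I: "tideal G T I" and H: "\<not> sg H"
  show ?thesis using tideal_D[OF I, THEN conjunct2, THEN conjunct1, rule_format, OF H] .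
qed

lemma tideal_rtn: "tideal G T I \<Longrightarrow> subgrp_le G H K \<Longrightarrow>
   res K H ` I K \<subseteq> I H \<and> tr K H ` I H \<subseteq> I K \<and> nm K H ` I H \<subseteq> I K"
proof -
  assume I: "tideal G T I" and hk: "subgrp_le G H K"
  show ?thesis using tideal_D[OF I, THEN conjunct2, THEN conjunct2, THEN conjunct1, rule_format, OF hk] .
qed

lemma tideal_res: "tideal G T I \<Longrightarrow> subgrp_le G H K \<Longrightarrow> x \<in> I K \<Longrightarrow> res K H x \<in> I H"
proof -
  assume I: "tideal G T I" and hk: "subgrp_le G H K" and x: "x \<in> I K"
  have "res K H ` I K \<subseteq> I H" using tideal_rtn[OF I hk] by (rule conjunct1)
  then show ?thesis using x by blast
qed

lemma tideal_tr: "tideal G T I \<Longrightarrow> subgrp_le G H K \<Longrightarrow> x \<in> I H \<Longrightarrow> tr K H x \<in> I K"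
proof -
  assume I: "tideal G T I" and hk: "subgrp_le G H K" and x: "x \<in> I H"
  have "tr K H ` I H \<subseteq> I K" using tideal_rtn[OF I hk] by (elim conjE)
  then show ?thesis using x by blast
qed

lemma tideal_nm: "tideal G T I \<Longrightarrow> subgrp_le G H K \<Longrightarrow> x \<in> I H \<Longrightarrow> nm K H x \<in> I K"
proof -
  assume I: "tideal G T I" and hk: "subgrp_le G H K" and x: "x \<in> I H"
  have "nm K H ` I H \<subseteq> I K" using tideal_rtn[OF I hk] by (elim conjE)
  then show ?thesis using x by blast
qed

lemma tideal_cj: "tideal G T I \<Longrightarrow> g \<in> carrier G \<Longrightarrow> sg H \<Longrightarrow> x \<in> I H \<Longrightarrow> cj g H x \<in> I (conjsub G g H)"
proof -
  assume I: "tideal G T I" and g: "g \<in> carrier G" and H: "sg H" and x: "x \<in> I H"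
  have "cj g H ` I H \<subseteq> I (conjsub G g H)"
    using tideal_D[OF I, THEN conjunct2, THEN conjunct2, THEN conjunct2, rule_format, OF g H] .
  then show ?thesis using x by blast
qed

lemma tideal_carrier: "tideal G T I \<Longrightarrow> x \<in> I H \<Longrightarrow> sg H \<and> x \<in> carrier (L H)"
proof -
  assume I: "tideal G T I" and x: "x \<in> I H"
  have "sg H" using tideal_empty[OF I] x by blast
  moreover have "x \<in> carrier (L H)" using additive_subgroup.a_subset[OF ideal.axioms(1)[OF tideal_ideal[OF I \<open>sg H\<close>]]] x by blast
  ultimately show ?thesis by blast
qed

lemma tideal_zero: "tideal G T I \<Longrightarrow> sg H \<Longrightarrow> \<zero>\<^bsub>L H\<^esub> \<in> I H"
  using additive_subgroup.zero_closed[OF ideal.axioms(1)[OF tideal_ideal]] by blast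

lemma tI_add: "tideal G T I \<Longrightarrow> a \<in> I H \<Longrightarrow> b \<in> I H \<Longrightarrow> a \<oplus>\<^bsub>L H\<^esub> b \<in> I H"
proof -
  assume I: "tideal G T I" and a: "a \<in> I H" and b: "b \<in> I H"
  have H: "sg H" using tideal_carrier[OF I a] by blast
  show ?thesis using additive_subgroup.a_closed[OF ideal.axioms(1)[OF tideal_ideal[OF I H]] a b] .
qed

lemma tI_lmult: "tideal G T I \<Longrightarrow> a \<in> I H \<Longrightarrow> r \<in> carrier (L H) \<Longrightarrow> r \<otimes>\<^bsub>L H\<^esub> a \<in> I H"
proof -
  assume I: "tideal G T I" and a: "a \<in> I H" and r: "r \<in> carrier (L H)"
  have H: "sg H" using tideal_carrier[OF I a] by blast
  show ?thesis using ideal.I_l_closed[OF tideal_ideal[OF I H] a r] .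
qed

lemma tI_rmult: "tideal G T I \<Longrightarrow> a \<in> I H \<Longrightarrow> r \<in> carrier (L H) \<Longrightarrow> a \<otimes>\<^bsub>L H\<^esub> r \<in> I H"
proof -
  assume I: "tideal G T I" and a: "a \<in> I H" and r: "r \<in> carrier (L H)"
  have H: "sg H" using tideal_carrier[OF I a] by blast
  show ?thesis using ideal.I_r_closed[OF tideal_ideal[OF I H] a r] .
qed

lemma tideal_full: "tideal G T I \<Longrightarrow> I \<le> full"
  unfolding le_fun_def full_def using tideal_carrier by auto

lemma full_tideal: "tideal G T full"
proof (rule tidealI)
  fix H assume "sg H"
  then show "ideal (full H) (L H)" unfolding full_def
    using cring_L cring.axioms(1) ring.oneideal by auto
next
  fix H assume "\<not> sg H" then show "full H = {}" unfolding full_def by simp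
next
  fix H K x assume "subgrp_le G H K" "x \<in> full K" then show "res K H x \<in> full H"
    unfolding full_def using res_carrier sgle_D by auto
next
  fix H K x assume "subgrp_le G H K" "x \<in> full H" then show "tr K H x \<in> full K"
    unfolding full_def using tr_carrier sgle_D by auto
next
  fix H K x assume "subgrp_le G H K" "x \<in> full H" then show "nm K H x \<in> full K"
    unfolding full_def using nm_carrier sgle_D by auto
next
  fix g H x assume "g \<in> carrier G" "sg H" "x \<in> full H" then show "cj g H x \<in> full (conjsub G g H)"
    unfolding full_def using cj_carrier conjsub_subgroup by auto
qed

lemma tideal_Inter:
  assumes ne: "\<II> \<noteq> {}" and all: "\<And>I. I \<in> \<II> \<Longrightarrow> tideal G T I"
  shows "tideal G T (\<lambda>H. \<Inter>I\<in>\<II>. I H)"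
proof (rule tidealI)
  fix H assume H: "sg H"
  show "ideal (\<Inter>I\<in>\<II>. I H) (L H)"
  proof (rule cring_idealI)
    show "cring (L H)" by (rule cring_L[OF H])
    obtain I0 where I0: "I0 \<in> \<II>" using ne by blast
    have "I0 H \<subseteq> carrier (L H)" using tideal_carrier[OF all[OF I0]] by blast
    then show "(\<Inter>I\<in>\<II>. I H) \<subseteq> carrier (L H)" using I0 by blast
    show "\<zero>\<^bsub>L H\<^esub> \<in> (\<Inter>I\<in>\<II>. I H)"
    proof (rule INT_I)
      fix I assume "I \<in> \<II>" then show "\<zero>\<^bsub>L H\<^esub> \<in> I H" using tideal_zero[OF all H] by simp
    qed
    show "a \<oplus>\<^bsub>L H\<^esub> b \<in> (\<Inter>I\<in>\<II>. I H)" if ab: "a \<in> (\<Inter>I\<in>\<II>. I H)" "b \<in> (\<Inter>I\<in>\<II>. I H)" for a b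
    proof (rule INT_I)
      fix I assume I: "I \<in> \<II>" then show "a \<oplus>\<^bsub>L H\<^esub> b \<in> I H" using tI_add[OF all[OF I]] ab I by simp
    qed
    show "r \<otimes>\<^bsub>L H\<^esub> a \<in> (\<Inter>I\<in>\<II>. I H)" if ab: "a \<in> (\<Inter>I\<in>\<II>. I H)" "r \<in> carrier (L H)" for a r
    proof (rule INT_I)
      fix I assume I: "I \<in> \<II>" then show "r \<otimes>\<^bsub>L H\<^esub> a \<in> I H" using tI_lmult[OF all[OF I]] ab I by simp
    qed
  qed
next
  fix H assume H: "\<not> sg H"
  obtain I0 where I0: "I0 \<in> \<II>" using ne by blast
  have "I0 H = {}" using tideal_empty[OF all[OF I0] H] .
  then show "(\<Inter>I\<in>\<II>. I H) = {}" using I0 by blast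
next
  fix H K x assume hk: "subgrp_le G H K" and x: "x \<in> (\<Inter>I\<in>\<II>. I K)"
  show "res K H x \<in> (\<Inter>I\<in>\<II>. I H)"
  proof (rule INT_I)
    fix I assume I: "I \<in> \<II>" then show "res K H x \<in> I H" using tideal_res[OF all[OF I] hk] x by simp
  qed
next
  fix H K x assume hk: "subgrp_le G H K" and x: "x \<in> (\<Inter>I\<in>\<II>. I H)"
  show "tr K H x \<in> (\<Inter>I\<in>\<II>. I K)"
  proof (rule INT_I)
    fix I assume I: "I \<in> \<II>" then show "tr K H x \<in> I K" using tideal_tr[OF all[OF I] hk] x by simp
  qed
next
  fix H K x assume hk: "subgrp_le G H K" and x: "x \<in> (\<Inter>I\<in>\<II>. I H)"
  show "nm K H x \<in> (\<Inter>I\<in>\<II>. I K)"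
  proof (rule INT_I)
    fix I assume I: "I \<in> \<II>" then show "nm K H x \<in> I K" using tideal_nm[OF all[OF I] hk] x by simp
  qed
next
  fix g H x assume g: "g \<in> carrier G" and H: "sg H" and x: "x \<in> (\<Inter>I\<in>\<II>. I H)"
  show "cj g H x \<in> (\<Inter>I\<in>\<II>. I (conjsub G g H))"
  proof (rule INT_I)
    fix I assume I: "I \<in> \<II>" then show "cj g H x \<in> I (conjsub G g H)" using tideal_cj[OF all[OF I] g H] x by simp
  qed
qed

lemma tgen_eq: "tgen G T A = (\<lambda>K. \<Inter>I\<in>{I. tideal G T I \<and> A \<le> I}. I K)"
  unfolding tgen_def by (rule ext) blast

lemma tgen_tideal: "A \<le> full \<Longrightarrow> tideal G T (tgen G T A)"
  unfolding tgen_eq by (rule tideal_Inter) (use full_tideal in auto)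

lemma tgen_ge: "A \<le> tgen G T A"
  unfolding tgen_def le_fun_def by blast

lemma tgen_least: "tideal G T I \<Longrightarrow> A \<le> I \<Longrightarrow> tgen G T A \<le> I"
  unfolding tgen_def le_fun_def by blast

lemma tgen_mono: "A \<le> B \<Longrightarrow> tgen G T A \<le> tgen G T B"
  unfolding tgen_def le_fun_def by blast

lemma tideal_chain_Union:
  assumes ne: "\<C> \<noteq> {}" and all: "\<And>I. I \<in> \<C> \<Longrightarrow> tideal G T I"
    and ch: "\<And>I J. I \<in> \<C> \<Longrightarrow> J \<in> \<C> \<Longrightarrow> I \<le> J \<or> J \<le> I"
  shows "tideal G T (\<lambda>H. \<Union>I\<in>\<C>. I H)"
proof (rule tidealI)
  fix H assume H: "sg H"
  show "ideal (\<Union>I\<in>\<C>. I H) (L H)"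
  proof (rule cring_idealI)
    show "cring (L H)" by (rule cring_L[OF H])
    show "(\<Union>I\<in>\<C>. I H) \<subseteq> carrier (L H)" using all tideal_carrier by blast
    show "\<zero>\<^bsub>L H\<^esub> \<in> (\<Union>I\<in>\<C>. I H)" using ne all tideal_zero H by blast
    show "a \<oplus>\<^bsub>L H\<^esub> b \<in> (\<Union>I\<in>\<C>. I H)" if ab: "a \<in> (\<Union>I\<in>\<C>. I H)" "b \<in> (\<Union>I\<in>\<C>. I H)" for a b
    proof -
      obtain I J where IJ: "I \<in> \<C>" "J \<in> \<C>" "a \<in> I H" "b \<in> J H" using ab by blast
      show ?thesis
      proof (cases "I \<le> J")
        case True
        then have "a \<in> J H" using IJ unfolding le_fun_def by blast
        then have "a \<oplus>\<^bsub>L H\<^esub> b \<in> J H"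
          using IJ all tI_add by blast
        then show ?thesis using IJ by blast
      next
        case False
        then have "J \<le> I" using ch IJ by blast
        then have "b \<in> I H" using IJ unfolding le_fun_def by blast
        then have "a \<oplus>\<^bsub>L H\<^esub> b \<in> I H"
          using IJ all tI_add by blast
        then show ?thesis using IJ by blast
      qed
    qed
    show "r \<otimes>\<^bsub>L H\<^esub> a \<in> (\<Union>I\<in>\<C>. I H)" if "a \<in> (\<Union>I\<in>\<C>. I H)" "r \<in> carrier (L H)" for a r
      using that all tI_lmult by blast
  qed
next
  fix H assume "\<not> sg H" then show "(\<Union>I\<in>\<C>. I H) = {}" using all tideal_empty by blast
next
  fix H K x assume "subgrp_le G H K" "x \<in> (\<Union>I\<in>\<C>. I K)" then show "res K H x \<in> (\<Union>I\<in>\<C>. I H)"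
    using all tideal_res by blast
next
  fix H K x assume "subgrp_le G H K" "x \<in> (\<Union>I\<in>\<C>. I H)" then show "tr K H x \<in> (\<Union>I\<in>\<C>. I K)"
    using all tideal_tr by blast
next
  fix H K x assume "subgrp_le G H K" "x \<in> (\<Union>I\<in>\<C>. I H)" then show "nm K H x \<in> (\<Union>I\<in>\<C>. I K)"
    using all tideal_nm by blast
next
  fix g H x assume "g \<in> carrier G" "sg H" "x \<in> (\<Union>I\<in>\<C>. I H)" then show "cj g H x \<in> (\<Union>I\<in>\<C>. I (conjsub G g H))"
    using all tideal_cj by blast
qed

lemma tzero_tideal: "tideal G T (tzero G T)"
proof (rule tidealI)
  fix H assume "sg H" then show "ideal (tzero G T H) (L H)" unfolding tzero_def
    using cring_L cring.axioms(1) ring.zeroideal by auto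
next
  fix H assume "\<not> sg H" then show "tzero G T H = {}" unfolding tzero_def by simp
next
  fix H K x assume "subgrp_le G H K" "x \<in> tzero G T K" then show "res K H x \<in> tzero G T H"
    unfolding tzero_def using res_zero sgle_D by auto
next
  fix H K x assume "subgrp_le G H K" "x \<in> tzero G T H" then show "tr K H x \<in> tzero G T K"
    unfolding tzero_def using tr_zero sgle_D by auto
next
  fix H K x assume "subgrp_le G H K" "x \<in> tzero G T H" then show "nm K H x \<in> tzero G T K"
    unfolding tzero_def using nm_zero sgle_D by auto
next
  fix g H x assume "g \<in> carrier G" "sg H" "x \<in> tzero G T H" then show "cj g H x \<in> tzero G T (conjsub G g H)"
    unfolding tzero_def using cj_zero conjsub_subgroup by auto
qed

end


context tamb
begin

lemma sgle_Int_left: "sg A \<Longrightarrow> sg B \<Longrightarrow> subgrp_le G (A \<inter> B) A"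
  unfolding subgrp_le_def using sg_Int by blast

lemma sgle_Int_right: "sg A \<Longrightarrow> sg B \<Longrightarrow> subgrp_le G (A \<inter> B) B"
  unfolding subgrp_le_def using sg_Int by blast

lemma nm_sum_mem:
  assumes hk: "subgrp_le G H K" and a: "a \<in> carrier (L H)" and b: "b \<in> carrier (L H)"
    and Xid: "\<And>M. subgrp_le G M K \<Longrightarrow> ideal (Z M) (L M)"
    and Xtr: "\<And>M x. subgrp_le G M K \<Longrightarrow> x \<in> Z M \<Longrightarrow> tr K M x \<in> Z K"
    and key: "\<And>S Q. S \<subseteq> lcosetsK G K H \<Longrightarrow> dreps G K (substab G K S) H Q \<Longrightarrow>
      \<exists>q\<in>Q. nm (substab G K S) (substab G K S \<inter> conjsub G q H)
                  (res (conjsub G q H) (substab G K S \<inter> conjsub G q H)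
                     (cj q H (if lco G q H \<in> S then a else b))) \<in> Z (substab G K S)"
  shows "nm K H (a \<oplus>\<^bsub>L H\<^esub> b) \<in> Z K"
proof -
  have H: "sg H" and K: "sg K" and HK: "H \<subseteq> K" using sgle_D[OF hk] by auto
  have Kc: "K \<subseteq> carrier G" and Hc: "H \<subseteq> carrier G" using K H sg_carrier by auto
  obtain SS where SS: "subreps G K H SS" using subreps_exist[OF K Hc] by blast
  define Qf where "Qf S = (SOME Q. dreps G K (substab G K S) H Q)" for S
  have stab: "sg (substab G K S) \<and> substab G K S \<subseteq> K" if "S \<in> SS" for S
    using substab_sg[OF K Hc subreps_sub[OF SS that]] by blast
  have Qf: "dreps G K (substab G K S) H (Qf S)" if "S \<in> SS" for S
  proof -
    have "\<exists>Q. dreps G K (substab G K S) H Q"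
      by (rule dreps_exist) (use stab[OF that] K hk in \<open>auto simp: subgrp_le_def\<close>)
    then show ?thesis unfolding Qf_def by (rule someI_ex)
  qed
  have eq: "nm K H (a \<oplus>\<^bsub>L H\<^esub> b) =
          (\<Oplus>\<^bsub>L K\<^esub> S\<in>SS. tr K (substab G K S)
             (\<Otimes>\<^bsub>L (substab G K S)\<^esub> q\<in>Qf S.
                nm (substab G K S) (substab G K S \<inter> conjsub G q H)
                  (res (conjsub G q H) (substab G K S \<inter> conjsub G q H)
                     (cj q H (if lco G q H \<in> S then a else b)))))"
    by (rule rec_sum[OF hk SS _ a b]) (use Qf in blast)
  show ?thesis unfolding eq
  proof (rule ideal_finsum[OF Xid[OF sgle_refl[OF K]]])
    fix S assume S: "S \<in> SS"
    define St where "St = substab G K S"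
    have St: "sg St" "St \<subseteq> K" using stab[OF S] unfolding St_def by auto
    have QS: "Qf S \<subseteq> K" using dreps_sub[OF Qf[OF S]] .
    define f where "f q = nm St (St \<inter> conjsub G q H) (res (conjsub G q H) (St \<inter> conjsub G q H)
                     (cj q H (if lco G q H \<in> S then a else b)))" for q
    have fc: "f \<in> Qf S \<rightarrow> carrier (L St)"
    proof
      fix q assume q: "q \<in> Qf S"
      have qc: "q \<in> carrier G" using q QS Kc by auto
      have cH: "sg (conjsub G q H)" using conjsub_subgroup[OF H qc] .
      have y: "(if lco G q H \<in> S then a else b) \<in> carrier (L H)" using a b by simp
      have "cj q H (if lco G q H \<in> S then a else b) \<in> carrier (L (conjsub G q H))"
        using cj_carrier[OF qc H y] .
      then have "res (conjsub G q H) (St \<inter> conjsub G q H) (cj q H (if lco G q H \<in> S then a else b)) \<in> carrier (L (St \<inter> conjsub G q H))"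
        using res_carrier[OF sgle_Int_right[OF St(1) cH]] by blast
      then show "f q \<in> carrier (L St)" unfolding f_def using nm_carrier[OF sgle_Int_left[OF St(1) cH]] by blast
    qed
    obtain q where q: "q \<in> Qf S" "f q \<in> Z St"
      using key[OF subreps_sub[OF SS S] Qf[OF S]] unfolding f_def St_def by blast
    have StK: "subgrp_le G St K" using St K unfolding subgrp_le_def by blast
    have "finprod (L St) f (Qf S) \<in> Z St"
      by (rule ideal_finprod[OF cring_L[OF St(1)] Xid[OF StK] dreps_finite[OF Qf[OF S] K] q(1) q(2) fc])
    then have "tr K St (finprod (L St) f (Qf S)) \<in> Z K"
      using Xtr St K unfolding subgrp_le_def by blast
    then show "tr K (substab G K S)
             (\<Otimes>\<^bsub>L (substab G K S)\<^esub> q\<in>Qf S.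
                nm (substab G K S) (substab G K S \<inter> conjsub G q H)
                  (res (conjsub G q H) (substab G K S \<inter> conjsub G q H)
                     (cj q H (if lco G q H \<in> S then a else b)))) \<in> Z K"
      unfolding f_def St_def .
  qed
qed

end


context tamb
begin

lemma G_cancel1: "a \<in> carrier G \<Longrightarrow> b \<in> carrier G \<Longrightarrow> inv\<^bsub>G\<^esub> a \<otimes>\<^bsub>G\<^esub> (a \<otimes>\<^bsub>G\<^esub> b) = b"
  by (simp add: G.m_assoc[symmetric])

lemma G_cancel2: "a \<in> carrier G \<Longrightarrow> b \<in> carrier G \<Longrightarrow> a \<otimes>\<^bsub>G\<^esub> (inv\<^bsub>G\<^esub> a \<otimes>\<^bsub>G\<^esub> b) = b"
  by (simp add: G.m_assoc[symmetric])

lemmas Gsimps = G.m_assoc G_cancel1 G_cancel2 G.inv_mult_group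

lemma lco_self: "sg K \<Longrightarrow> k \<in> K \<Longrightarrow> lco G k K = K"
proof -
  assume K: "sg K" and k: "k \<in> K"
  have Kc: "K \<subseteq> carrier G" using K by (rule sg_carrier)
  have kc: "k \<in> carrier G" using k Kc by auto
  show ?thesis
  proof
    show "lco G k K \<subseteq> K" unfolding lco_def using subgroup.m_closed[OF K k] by auto
    show "K \<subseteq> lco G k K"
    proof
      fix y assume y: "y \<in> K"
      have yc: "y \<in> carrier G" using y Kc by auto
      have "y = k \<otimes>\<^bsub>G\<^esub> (inv\<^bsub>G\<^esub> k \<otimes>\<^bsub>G\<^esub> y)" using kc yc by (simp add: G_cancel2)
      moreover have "inv\<^bsub>G\<^esub> k \<otimes>\<^bsub>G\<^esub> y \<in> K" using subgroup.m_closed[OF K subgroup.m_inv_closed[OF K k] y] .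
      ultimately show "y \<in> lco G k K" unfolding lco_def by blast
    qed
  qed
qed

lemma secstab_incl:
  assumes J: "sg J" and KJ: "K \<subseteq> J" and K: "sg K" and H: "sg H"
    and s: "s \<in> sections G J K H" and q: "q \<in> J" and x: "x \<in> s (lco G q K)"
    and j: "j \<in> secstab G J K s" and jq: "j \<in> conjsub G q K"
  shows "j \<in> conjsub G x H"
proof -
  have Jc: "J \<subseteq> carrier G" using J by (rule sg_carrier)
  have Kc: "K \<subseteq> carrier G" and Hc: "H \<subseteq> carrier G" using K H sg_carrier by auto
  have jJ: "j \<in> J" and js: "secact G J K j s = s" using j unfolding secstab_def by auto
  have jc: "j \<in> carrier G" and qc: "q \<in> carrier G" using jJ q Jc by auto
  define C where "C = lco G q K"
  have C: "C \<in> lcosetsK G J K" unfolding C_def lcosetsK_def using q by blast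
  define k where "k = inv\<^bsub>G\<^esub> q \<otimes>\<^bsub>G\<^esub> j \<otimes>\<^bsub>G\<^esub> q"
  have kK: "k \<in> K" using jq mem_conjsub[OF Kc qc] unfolding k_def by blast
  have kc: "k \<in> carrier G" using kK Kc by auto
  have e1: "inv\<^bsub>G\<^esub> j \<otimes>\<^bsub>G\<^esub> q = q \<otimes>\<^bsub>G\<^esub> inv\<^bsub>G\<^esub> k"
    unfolding k_def using jc qc by (simp add: Gsimps)
  have "lco G (inv\<^bsub>G\<^esub> j) C = lco G (inv\<^bsub>G\<^esub> j \<otimes>\<^bsub>G\<^esub> q) K"
    unfolding C_def using lco_mult[OF Kc] jc qc by simp
  also have "\<dots> = lco G q (lco G (inv\<^bsub>G\<^esub> k) K)" unfolding e1 using lco_mult[OF Kc] qc kc by simp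
  also have "\<dots> = C" unfolding C_def using lco_self[OF K subgroup.m_inv_closed[OF K kK]] by simp
  finally have invC: "lco G (inv\<^bsub>G\<^esub> j) C = C" .
  have "s C = secact G J K j s C" using js by simp
  also have "\<dots> = lco G j (s C)" using secact_app[OF C] invC by simp
  finally have sC: "s C = lco G j (s C)" .
  have "s C \<in> lcosetsK G J H" using sections_D[OF s C] by blast
  then obtain y where y: "y \<in> J" "s C = lco G y H" unfolding lcosetsK_def by blast
  have yc: "y \<in> carrier G" using y Jc by auto
  have xC: "x \<in> s C" using x unfolding C_def .
  then obtain h0 where h0: "h0 \<in> H" "x = y \<otimes>\<^bsub>G\<^esub> h0" using y(2) unfolding lco_def by blast
  have "j \<otimes>\<^bsub>G\<^esub> x \<in> lco G j (s C)" using xC unfolding lco_def by blast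
  then have "j \<otimes>\<^bsub>G\<^esub> x \<in> lco G y H" using sC y(2) by simp
  then obtain h1 where h1: "h1 \<in> H" "j \<otimes>\<^bsub>G\<^esub> x = y \<otimes>\<^bsub>G\<^esub> h1" unfolding lco_def by blast
  have h0c: "h0 \<in> carrier G" and h1c: "h1 \<in> carrier G" using h0 h1 Hc by auto
  have xc: "x \<in> carrier G" using h0 yc h0c by simp
  have "inv\<^bsub>G\<^esub> x \<otimes>\<^bsub>G\<^esub> j \<otimes>\<^bsub>G\<^esub> x = inv\<^bsub>G\<^esub> x \<otimes>\<^bsub>G\<^esub> (j \<otimes>\<^bsub>G\<^esub> x)"
    using xc jc by (simp add: G.m_assoc)
  also have "\<dots> = inv\<^bsub>G\<^esub> x \<otimes>\<^bsub>G\<^esub> (y \<otimes>\<^bsub>G\<^esub> h1)" using h1(2) by simp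
  also have "\<dots> = inv\<^bsub>G\<^esub> h0 \<otimes>\<^bsub>G\<^esub> h1" using h0(2) yc h0c h1c by (simp add: Gsimps)
  finally have "inv\<^bsub>G\<^esub> x \<otimes>\<^bsub>G\<^esub> j \<otimes>\<^bsub>G\<^esub> x \<in> H"
    using subgroup.m_closed[OF H subgroup.m_inv_closed[OF H h0(1)] h1(1)] by simp
  then show ?thesis using mem_conjsub[OF Hc xc] jc by blast
qed

lemma sections_xf_carrier:
  assumes J: "sg J" and KJ: "K \<subseteq> J" and K: "sg K" and H: "sg H"
    and s: "s \<in> sections G J K H" and q: "q \<in> J" and x: "x \<in> s (lco G q K)"
  shows "x \<in> carrier G"
proof -
  have Jc: "J \<subseteq> carrier G" using J by (rule sg_carrier)
  have Hc: "H \<subseteq> carrier G" using H sg_carrier by auto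
  have C: "lco G q K \<in> lcosetsK G J K" unfolding lcosetsK_def using q by blast
  have "s (lco G q K) \<in> lcosetsK G J H" using sections_D[OF s C] by blast
  then show ?thesis using x lcosetsK_carrier[OF Jc Hc] by blast
qed

lemma sections_nonempty:
  assumes J: "sg J" and KJ: "K \<subseteq> J" and K: "sg K" and H: "sg H"
    and s: "s \<in> sections G J K H" and q: "q \<in> J"
  shows "s (lco G q K) \<noteq> {}"
proof -
  have C: "lco G q K \<in> lcosetsK G J K" unfolding lcosetsK_def using q by blast
  have "s (lco G q K) \<in> lcosetsK G J H" using sections_D[OF s C] by blast
  then obtain y where "s (lco G q K) = lco G y H" unfolding lcosetsK_def by blast
  then show ?thesis unfolding lco_def using subgroup.one_closed[OF H] by blast
qed

lemma nm_tr_mem: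
  assumes hk: "subgrp_le G H K" and kj: "subgrp_le G K J" and a: "a \<in> carrier (L H)"
    and Xid: "\<And>M. subgrp_le G M J \<Longrightarrow> ideal (Z M) (L M)"
    and Xtr: "\<And>M x. subgrp_le G M J \<Longrightarrow> x \<in> Z M \<Longrightarrow> tr J M x \<in> Z J"
    and key: "\<And>s Q xf. s \<in> sections G J K H \<Longrightarrow> dreps G J (secstab G J K s) K Q \<Longrightarrow>
        (\<forall>q\<in>Q. xf q \<in> s (lco G q K)) \<Longrightarrow>
      \<exists>q\<in>Q. nm (secstab G J K s) (secstab G J K s \<inter> conjsub G q K)
                  (res (conjsub G (xf q) H) (secstab G J K s \<inter> conjsub G q K)
                     (cj (xf q) H a)) \<in> Z (secstab G J K s)"
  shows "nm J K (tr K H a) \<in> Z J"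
proof -
  have H: "sg H" and K: "sg K" and HK: "H \<subseteq> K" using sgle_D[OF hk] by auto
  have J: "sg J" and KJ: "K \<subseteq> J" using sgle_D[OF kj] by auto
  have Jc: "J \<subseteq> carrier G" and Hc: "H \<subseteq> carrier G" using J H sg_carrier by auto
  obtain SS where SS: "secreps G J K H SS" using secreps_exist[OF J KJ Hc] by blast
  define Qf where "Qf s = (SOME Q. dreps G J (secstab G J K s) K Q)" for s
  define xf where "xf s q = (SOME x. x \<in> s (lco G q K))" for s :: "'g set \<Rightarrow> 'g set" and q
  have sec: "s \<in> sections G J K H" if "s \<in> SS" for s using secreps_sub[OF SS that] .
  have stab: "sg (secstab G J K s) \<and> secstab G J K s \<subseteq> J" if "s \<in> SS" for s
    using secstab_sg[OF J KJ Hc sec[OF that]] by blast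
  have Qf: "dreps G J (secstab G J K s) K (Qf s)" if "s \<in> SS" for s
  proof -
    have "\<exists>Q. dreps G J (secstab G J K s) K Q"
      by (rule dreps_exist) (use stab[OF that] J kj in \<open>auto simp: subgrp_le_def\<close>)
    then show ?thesis unfolding Qf_def by (rule someI_ex)
  qed
  have xf: "xf s q \<in> s (lco G q K)" if "s \<in> SS" "q \<in> Qf s" for s q
  proof -
    have "q \<in> J" using dreps_sub[OF Qf[OF that(1)]] that(2) by auto
    then have "s (lco G q K) \<noteq> {}" using sections_nonempty[OF J KJ K H sec[OF that(1)]] by blast
    then show ?thesis unfolding xf_def by (simp add: some_in_eq)
  qed
  have eq: "nm J K (tr K H a) =
          (\<Oplus>\<^bsub>L J\<^esub> s\<in>SS. tr J (secstab G J K s)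
             (\<Otimes>\<^bsub>L (secstab G J K s)\<^esub> q\<in>Qf s.
                nm (secstab G J K s) (secstab G J K s \<inter> conjsub G q K)
                  (res (conjsub G (xf s q) H) (secstab G J K s \<inter> conjsub G q K)
                     (cj (xf s q) H a))))"
    by (rule rec_tr[OF hk kj SS _ a]) (use Qf xf in blast)
  show ?thesis unfolding eq
  proof (rule ideal_finsum[OF Xid[OF sgle_refl[OF J]]])
    fix s assume s: "s \<in> SS"
    define St where "St = secstab G J K s"
    have St: "sg St" "St \<subseteq> J" using stab[OF s] unfolding St_def by auto
    have StJ: "subgrp_le G St J" using St J unfolding subgrp_le_def by blast
    have QS: "Qf s \<subseteq> J" using dreps_sub[OF Qf[OF s]] .
    define f where "f q = nm St (St \<inter> conjsub G q K) (res (conjsub G (xf s q) H) (St \<inter> conjsub G q K)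
                     (cj (xf s q) H a))" for q
    have fc: "f \<in> Qf s \<rightarrow> carrier (L St)"
    proof
      fix q assume q: "q \<in> Qf s"
      have qJ: "q \<in> J" using q QS by auto
      have qc: "q \<in> carrier G" using qJ Jc by auto
      have xc: "xf s q \<in> carrier G" using sections_xf_carrier[OF J KJ K H sec[OF s] qJ xf[OF s q]] .
      have cH: "sg (conjsub G (xf s q) H)" using conjsub_subgroup[OF H xc] .
      have cK: "sg (conjsub G q K)" using conjsub_subgroup[OF K qc] .
      have incl: "St \<inter> conjsub G q K \<subseteq> conjsub G (xf s q) H"
        using secstab_incl[OF J KJ K H sec[OF s] qJ xf[OF s q]] unfolding St_def by blast
      have le: "subgrp_le G (St \<inter> conjsub G q K) (conjsub G (xf s q) H)"
        using incl sg_Int[OF St(1) cK] cH unfolding subgrp_le_def by blast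
      have "cj (xf s q) H a \<in> carrier (L (conjsub G (xf s q) H))" using cj_carrier[OF xc H a] .
      then have "res (conjsub G (xf s q) H) (St \<inter> conjsub G q K) (cj (xf s q) H a) \<in> carrier (L (St \<inter> conjsub G q K))"
        using res_carrier[OF le] by blast
      then show "f q \<in> carrier (L St)" unfolding f_def using nm_carrier[OF sgle_Int_left[OF St(1) cK]] by blast
    qed
    have xf': "\<forall>q\<in>Qf s. xf s q \<in> s (lco G q K)" using xf[OF s] by blast
    obtain q where q: "q \<in> Qf s" "f q \<in> Z St"
      using key[OF sec[OF s] Qf[OF s] xf'] unfolding f_def St_def by blast
    have "finprod (L St) f (Qf s) \<in> Z St"
      by (rule ideal_finprod[OF cring_L[OF St(1)] Xid[OF StJ] dreps_finite[OF Qf[OF s] J] q(1) q(2) fc])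
    then have "tr J St (finprod (L St) f (Qf s)) \<in> Z J"
      using Xtr[OF StJ] by blast
    then show "tr J (secstab G J K s)
             (\<Otimes>\<^bsub>L (secstab G J K s)\<^esub> q\<in>Qf s.
                nm (secstab G J K s) (secstab G J K s \<inter> conjsub G q K)
                  (res (conjsub G (xf s q) H) (secstab G J K s \<inter> conjsub G q K)
                     (cj (xf s q) H a))) \<in> Z J"
      unfolding f_def St_def .
  qed
qed

lemma res_tr_mem:
  assumes hk: "subgrp_le G H K" and jk: "subgrp_le G J K" and a: "a \<in> carrier (L H)"
    and Xid: "ideal (Z J) (L J)"
    and Xtr: "\<And>M x. subgrp_le G M J \<Longrightarrow> x \<in> Z M \<Longrightarrow> tr J M x \<in> Z J"
    and key: "\<And>q. q \<in> K \<Longrightarrow> res (conjsub G q H) (J \<inter> conjsub G q H) (cj q H a) \<in> Z (J \<inter> conjsub G q H)"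
  shows "res K J (tr K H a) \<in> Z J"
proof -
  have H: "sg H" and K: "sg K" and J: "sg J" using sgle_D[OF hk] sgle_D[OF jk] by auto
  obtain Q where Q: "dreps G K J H Q" using dreps_exist[OF jk hk] by blast
  have Kc: "K \<subseteq> carrier G" using K sg_carrier by auto
  show ?thesis unfolding dc_tr[OF hk jk Q a]
  proof (rule ideal_finsum[OF Xid])
    fix q assume q: "q \<in> Q"
    have qK: "q \<in> K" using dreps_sub[OF Q] q by auto
    have qc: "q \<in> carrier G" using qK Kc by auto
    have cH: "sg (conjsub G q H)" using conjsub_subgroup[OF H qc] .
    show "tr J (J \<inter> conjsub G q H) (res (conjsub G q H) (J \<inter> conjsub G q H) (cj q H a)) \<in> Z J"
      by (rule Xtr[OF sgle_Int_left[OF J cH] key[OF qK]])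
  qed
qed

end


context tamb
begin

definition tsum :: "('g set \<Rightarrow> 'r set) \<Rightarrow> ('g set \<Rightarrow> 'r set) \<Rightarrow> ('g set \<Rightarrow> 'r set)" where
  "tsum I J = (\<lambda>H. I H <+>\<^bsub>L H\<^esub> J H)"

lemma mem_set_add: "x \<in> A <+>\<^bsub>R\<^esub> B \<longleftrightarrow> (\<exists>a\<in>A. \<exists>b\<in>B. x = a \<oplus>\<^bsub>R\<^esub> b)"
  unfolding set_add_def' by blast

lemma tsum_left: "tideal G T J \<Longrightarrow> x \<in> I H \<Longrightarrow> sg H \<Longrightarrow> x \<in> carrier (L H) \<Longrightarrow> x \<in> tsum I J H"
proof -
  assume J: "tideal G T J" and x: "x \<in> I H" and H: "sg H" and xc: "x \<in> carrier (L H)"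
  interpret cring "L H" using cring_L[OF H] .
  have "x = x \<oplus>\<^bsub>L H\<^esub> \<zero>\<^bsub>L H\<^esub>" using xc by simp
  then show ?thesis unfolding tsum_def mem_set_add using x tideal_zero[OF J H] by blast
qed

lemma tsum_right: "tideal G T I \<Longrightarrow> x \<in> J H \<Longrightarrow> sg H \<Longrightarrow> x \<in> carrier (L H) \<Longrightarrow> x \<in> tsum I J H"
proof -
  assume I: "tideal G T I" and x: "x \<in> J H" and H: "sg H" and xc: "x \<in> carrier (L H)"
  interpret cring "L H" using cring_L[OF H] .
  have "x = \<zero>\<^bsub>L H\<^esub> \<oplus>\<^bsub>L H\<^esub> x" using xc by simp
  then show ?thesis unfolding tsum_def mem_set_add using x tideal_zero[OF I H] by blast
qed

lemma tsum_tideal: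
  assumes I: "tideal G T I" and J: "tideal G T J"
  shows "tideal G T (tsum I J)"
proof (rule tidealI)
  fix H assume H: "sg H"
  interpret cring "L H" using cring_L[OF H] .
  show "ideal (tsum I J H) (L H)" unfolding tsum_def
    by (rule add_ideals) (use tideal_ideal[OF I H] tideal_ideal[OF J H] in auto)
next
  fix H assume H: "\<not> sg H"
  show "tsum I J H = {}" unfolding tsum_def mem_set_add using tideal_empty[OF I H] by (simp add: set_add_def')
next
  fix H K x assume hk: "subgrp_le G H K" and x: "x \<in> tsum I J K"
  obtain a b where ab: "a \<in> I K" "b \<in> J K" "x = a \<oplus>\<^bsub>L K\<^esub> b" using x unfolding tsum_def mem_set_add by blast
  have ac: "a \<in> carrier (L K)" and bc: "b \<in> carrier (L K)" using tideal_carrier[OF I ab(1)] tideal_carrier[OF J ab(2)] by auto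
  have "res K H x = res K H a \<oplus>\<^bsub>L H\<^esub> res K H b" using res_add[OF hk ac bc] ab(3) by simp
  then show "res K H x \<in> tsum I J H" unfolding tsum_def mem_set_add
    using tideal_res[OF I hk ab(1)] tideal_res[OF J hk ab(2)] by blast
next
  fix H K x assume hk: "subgrp_le G H K" and x: "x \<in> tsum I J H"
  obtain a b where ab: "a \<in> I H" "b \<in> J H" "x = a \<oplus>\<^bsub>L H\<^esub> b" using x unfolding tsum_def mem_set_add by blast
  have ac: "a \<in> carrier (L H)" and bc: "b \<in> carrier (L H)" using tideal_carrier[OF I ab(1)] tideal_carrier[OF J ab(2)] by auto
  have "tr K H x = tr K H a \<oplus>\<^bsub>L K\<^esub> tr K H b" using tr_add[OF hk ac bc] ab(3) by simp
  then show "tr K H x \<in> tsum I J K" unfolding tsum_def mem_set_add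
    using tideal_tr[OF I hk ab(1)] tideal_tr[OF J hk ab(2)] by blast
next
  fix g H x assume g: "g \<in> carrier G" and H: "sg H" and x: "x \<in> tsum I J H"
  obtain a b where ab: "a \<in> I H" "b \<in> J H" "x = a \<oplus>\<^bsub>L H\<^esub> b" using x unfolding tsum_def mem_set_add by blast
  have ac: "a \<in> carrier (L H)" and bc: "b \<in> carrier (L H)" using tideal_carrier[OF I ab(1)] tideal_carrier[OF J ab(2)] by auto
  have "cj g H x = cj g H a \<oplus>\<^bsub>L (conjsub G g H)\<^esub> cj g H b" using cj_add[OF g H ac bc] ab(3) by simp
  then show "cj g H x \<in> tsum I J (conjsub G g H)" unfolding tsum_def mem_set_add
    using tideal_cj[OF I g H ab(1)] tideal_cj[OF J g H ab(2)] by blast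
next
  fix H K x assume hk: "subgrp_le G H K" and x: "x \<in> tsum I J H"
  obtain a b where ab: "a \<in> I H" "b \<in> J H" "x = a \<oplus>\<^bsub>L H\<^esub> b" using x unfolding tsum_def mem_set_add by blast
  have ac: "a \<in> carrier (L H)" and bc: "b \<in> carrier (L H)" using tideal_carrier[OF I ab(1)] tideal_carrier[OF J ab(2)] by auto
  have H: "sg H" and K: "sg K" using sgle_D[OF hk] by auto
  have Kc: "K \<subseteq> carrier G" using K sg_carrier by auto
  show "nm K H x \<in> tsum I J K" unfolding ab(3)
  proof (rule nm_sum_mem[OF hk ac bc])
    fix M assume M: "subgrp_le G M K"
    interpret cring "L M" using cring_L sgle_D[OF M] by blast
    show "ideal (tsum I J M) (L M)" unfolding tsum_def
      by (rule add_ideals) (use tideal_ideal[OF I] tideal_ideal[OF J] sgle_D[OF M] in auto)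
  next
    fix M y assume M: "subgrp_le G M K" and y: "y \<in> tsum I J M"
    obtain a b where ab: "a \<in> I M" "b \<in> J M" "y = a \<oplus>\<^bsub>L M\<^esub> b" using y unfolding tsum_def mem_set_add by blast
    have ac: "a \<in> carrier (L M)" and bc: "b \<in> carrier (L M)" using tideal_carrier[OF I ab(1)] tideal_carrier[OF J ab(2)] by auto
    have "tr K M y = tr K M a \<oplus>\<^bsub>L K\<^esub> tr K M b" using tr_add[OF M ac bc] ab(3) by simp
    then show "tr K M y \<in> tsum I J K" unfolding tsum_def mem_set_add
      using tideal_tr[OF I M ab(1)] tideal_tr[OF J M ab(2)] by blast
  next
    fix S Q assume S: "S \<subseteq> lcosetsK G K H" and Q: "dreps G K (substab G K S) H Q"
    define St where "St = substab G K S"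
    have St: "sg St" "St \<subseteq> K" using substab_sg[OF K sg_carrier[OF H] S] unfolding St_def by auto
    have fact: "nm St (St \<inter> conjsub G q H) (res (conjsub G q H) (St \<inter> conjsub G q H) (cj q H y)) \<in> Z St"
      if "q \<in> Q" "y \<in> Z H" "tideal G T Z" for q y Z
    proof -
      have qc: "q \<in> carrier G" using dreps_sub[OF Q] that(1) Kc by auto
      have cH: "sg (conjsub G q H)" using conjsub_subgroup[OF H qc] .
      have "cj q H y \<in> Z (conjsub G q H)" using tideal_cj[OF that(3) qc H that(2)] .
      then have "res (conjsub G q H) (St \<inter> conjsub G q H) (cj q H y) \<in> Z (St \<inter> conjsub G q H)"
        using tideal_res[OF that(3) sgle_Int_right[OF St(1) cH]] by blast
      then show ?thesis using tideal_nm[OF that(3) sgle_Int_left[OF St(1) cH]] by blast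
    qed
    have carr: "nm St (St \<inter> conjsub G q H) (res (conjsub G q H) (St \<inter> conjsub G q H) (cj q H y)) \<in> carrier (L St)"
      if "q \<in> Q" "y \<in> carrier (L H)" for q y
      using fact[OF that(1) _ full_tideal] that(2) H St(1) unfolding full_def by simp
    show "\<exists>q\<in>Q. nm (substab G K S) (substab G K S \<inter> conjsub G q H)
                  (res (conjsub G q H) (substab G K S \<inter> conjsub G q H)
                     (cj q H (if lco G q H \<in> S then a else b))) \<in> tsum I J (substab G K S)"
    proof (cases "\<exists>q\<in>Q. lco G q H \<in> S")
      case True
      then obtain q where q: "q \<in> Q" "lco G q H \<in> S" by blast
      have "nm St (St \<inter> conjsub G q H) (res (conjsub G q H) (St \<inter> conjsub G q H) (cj q H a)) \<in> tsum I J St"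
        by (rule tsum_left[where I=I, OF J fact[OF q(1) ab(1) I] St(1) carr[OF q(1) ac]])
      then show ?thesis using q unfolding St_def by auto
    next
      case False
      obtain q where q: "q \<in> Q" using dreps_nonempty[OF Q K] by blast
      have "nm St (St \<inter> conjsub G q H) (res (conjsub G q H) (St \<inter> conjsub G q H) (cj q H b)) \<in> tsum I J St"
        by (rule tsum_right[where J=J, OF I fact[OF q(1) ab(2) J] St(1) carr[OF q(1) bc]])
      then show ?thesis using q False unfolding St_def by auto
    qed
  qed
qed

end


context tamb
begin

definition prodgen :: "('g set \<Rightarrow> 'r set) \<Rightarrow> ('g set \<Rightarrow> 'r set) \<Rightarrow> ('g set \<Rightarrow> 'r set)" where
  "prodgen I J = (\<lambda>H. {a \<otimes>\<^bsub>L H\<^esub> b | a b. a \<in> I H \<and> b \<in> J H})"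

lemma tprod_eq: "tprod G T I J = tgen G T (prodgen I J)"
  unfolding tprod_def prodgen_def by simp

lemma prodgen_full: "tideal G T I \<Longrightarrow> tideal G T J \<Longrightarrow> prodgen I J \<le> full"
proof (unfold le_fun_def, intro allI subsetI)
  fix H z assume I: "tideal G T I" and J: "tideal G T J" and z: "z \<in> prodgen I J H"
  then obtain a b where ab: "a \<in> I H" "b \<in> J H" "z = a \<otimes>\<^bsub>L H\<^esub> b" unfolding prodgen_def by blast
  have H: "sg H" and ac: "a \<in> carrier (L H)" using tideal_carrier[OF I ab(1)] by auto
  have bc: "b \<in> carrier (L H)" using tideal_carrier[OF J ab(2)] by auto
  interpret cring "L H" using cring_L[OF H] .
  show "z \<in> full H" unfolding full_def using H ab(3) ac bc by simp
qed

lemma tprod_tideal: "tideal G T I \<Longrightarrow> tideal G T J \<Longrightarrow> tideal G T (tprod G T I J)"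
  unfolding tprod_eq by (rule tgen_tideal) (rule prodgen_full)

lemma prodgen_in_tprod: "a \<in> I H \<Longrightarrow> b \<in> J H \<Longrightarrow> a \<otimes>\<^bsub>L H\<^esub> b \<in> tprod G T I J H"
proof -
  assume "a \<in> I H" "b \<in> J H"
  then have "a \<otimes>\<^bsub>L H\<^esub> b \<in> prodgen I J H" unfolding prodgen_def by blast
  then show ?thesis unfolding tprod_eq using tgen_ge unfolding le_fun_def by blast
qed

lemma tprod_le: "tideal G T K \<Longrightarrow> (\<And>H a b. a \<in> I H \<Longrightarrow> b \<in> J H \<Longrightarrow> a \<otimes>\<^bsub>L H\<^esub> b \<in> K H) \<Longrightarrow> tprod G T I J \<le> K"
  unfolding tprod_eq by (rule tgen_least) (auto simp: le_fun_def prodgen_def)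

definition sing :: "'g set \<Rightarrow> 'r \<Rightarrow> ('g set \<Rightarrow> 'r set)" where
  "sing H x = (\<lambda>K. if K = H then {x} else {})"

lemma tprinc_eq: "tprinc G T H x = tgen G T (sing H x)"
  unfolding tprinc_def sing_def by simp

lemma tprinc_tideal: "sg H \<Longrightarrow> x \<in> carrier (L H) \<Longrightarrow> tideal G T (tprinc G T H x)"
  unfolding tprinc_eq by (rule tgen_tideal) (auto simp: le_fun_def sing_def full_def)

lemma tprinc_mem: "x \<in> tprinc G T H x H"
proof -
  have "sing H x H \<subseteq> tgen G T (sing H x) H" using tgen_ge[of "sing H x"] unfolding le_fun_def by blast
  then show ?thesis unfolding tprinc_eq sing_def by simp
qed

lemma tprinc_le: "tideal G T I \<Longrightarrow> x \<in> I H \<Longrightarrow> tprinc G T H x \<le> I"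
  unfolding tprinc_eq by (rule tgen_least) (auto simp: le_fun_def sing_def)

lemma tpow_tideal: "tideal G T I \<Longrightarrow> tideal G T (tpow G T I n)"
  by (induction n) (auto intro: tprod_tideal)

lemma pow_in_tpow: "tideal G T I \<Longrightarrow> x \<in> I H \<Longrightarrow> x [^]\<^bsub>L H\<^esub> (Suc n) \<in> tpow G T I n H"
proof (induction n)
  case 0
  have H: "sg H" and xc: "x \<in> carrier (L H)" using tideal_carrier[OF 0(1,2)] by auto
  interpret cring "L H" using cring_L[OF H] .
  show ?case using 0 xc by simp
next
  case (Suc n)
  have H: "sg H" and xc: "x \<in> carrier (L H)" using tideal_carrier[OF Suc(2,3)] by auto
  interpret cring "L H" using cring_L[OF H] .
  have "x [^]\<^bsub>L H\<^esub> (Suc (Suc n)) = x [^]\<^bsub>L H\<^esub> (Suc n) \<otimes>\<^bsub>L H\<^esub> x" by simp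
  also have "\<dots> \<in> tprod G T (tpow G T I n) I H" by (rule prodgen_in_tprod[where I="tpow G T I n" and J=I, OF Suc.IH[OF Suc(2,3)] Suc(3)])
  finally show ?case by simp
qed

lemma prime_tpow: "tprime G T P \<Longrightarrow> tideal G T I \<Longrightarrow> tpow G T I n \<le> P \<Longrightarrow> I \<le> P"
proof (induction n)
  case 0 then show ?case by simp
next
  case (Suc n)
  have "tprod G T (tpow G T I n) I \<le> P" using Suc(4) by simp
  then have "tpow G T I n \<le> P \<or> I \<le> P"
    using Suc(2) tpow_tideal[OF Suc(3)] Suc(3) unfolding tprime_def by blast
  then show ?case using Suc by blast
qed

lemma tprime_tideal: "tprime G T P \<Longrightarrow> tideal G T P"
  unfolding tprime_def by blast

lemma tzero_le: "tideal G T P \<Longrightarrow> tzero G T \<le> P"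
  unfolding le_fun_def tzero_def using tideal_zero by auto

lemma nil_le_prime: "tprime G T P \<Longrightarrow> nilradical G T \<le> P"
proof (unfold le_fun_def, intro allI subsetI)
  fix H x assume P: "tprime G T P" and x: "x \<in> nilradical G T H"
  have H: "sg H" using x unfolding nilradical_def trad_def by (auto split: if_splits)
  then obtain n where xc: "x \<in> carrier (L H)" and n: "tpow G T (tprinc G T H x) n \<le> tzero G T"
    using x unfolding nilradical_def trad_def by auto
  have "tpow G T (tprinc G T H x) n \<le> P" using n tzero_le[OF tprime_tideal[OF P]] by (rule order_trans)
  then have "tprinc G T H x \<le> P" using prime_tpow[OF P tprinc_tideal[OF H xc]] by blast
  then show "x \<in> P H" using tprinc_mem unfolding le_fun_def by blast
qed

lemma nil_mem: "sg H \<Longrightarrow> x \<in> carrier (L H) \<Longrightarrow> tpow G T (tprinc G T H x) n \<le> tzero G T \<Longrightarrow> x \<in> nilradical G T H"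
  unfolding nilradical_def trad_def by auto

lemma nil_carrier: "x \<in> nilradical G T H \<Longrightarrow> sg H \<and> x \<in> carrier (L H)"
  unfolding nilradical_def trad_def by (auto split: if_splits)

definition fam2set :: "('g set \<Rightarrow> 'r set) \<Rightarrow> ('g set \<times> 'r) set" where
  "fam2set I = {(H, a). a \<in> I H}"

definition set2fam :: "('g set \<times> 'r) set \<Rightarrow> ('g set \<Rightarrow> 'r set)" where
  "set2fam S = (\<lambda>H. {a. (H, a) \<in> S})"

lemma set2fam_fam2set[simp]: "set2fam (fam2set I) = I"
  unfolding set2fam_def fam2set_def by auto

lemma fam2set_le: "fam2set I \<subseteq> fam2set J \<longleftrightarrow> I \<le> J"
  unfolding fam2set_def le_fun_def by auto

lemma prime_avoid:
  assumes H: "sg H" and xc: "x \<in> carrier (L H)" and nn: "\<And>k::nat. x [^]\<^bsub>L H\<^esub> k \<noteq> \<zero>\<^bsub>L H\<^esub>"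
  shows "\<exists>P. tprime G T P \<and> x \<notin> P H"
proof -
  interpret R: cring "L H" using cring_L[OF H] .
  define AA where "AA = {I. tideal G T I \<and> (\<forall>k::nat. x [^]\<^bsub>L H\<^esub> k \<notin> I H)}"
  have "\<exists>M\<in>fam2set ` AA. \<forall>Y\<in>fam2set ` AA. M \<subseteq> Y \<longrightarrow> Y = M"
  proof (rule subset_Zorn_nonempty)
    have "tzero G T \<in> AA" unfolding AA_def using tzero_tideal nn H unfolding tzero_def by auto
    then show "fam2set ` AA \<noteq> {}" by blast
  next
    fix CC assume ne: "CC \<noteq> {}" and ch: "subset.chain (fam2set ` AA) CC"
    define C where "C = set2fam ` CC"
    have CA: "C \<subseteq> AA" using ch unfolding subset_chain_def C_def by auto
    have fs: "fam2set (set2fam Y) = Y" if "Y \<in> CC" for Y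
      using ch that unfolding subset_chain_def by auto
    have CC_eq: "CC = fam2set ` C" unfolding C_def image_image using fs by simp
    have Cne: "C \<noteq> {}" using ne unfolding C_def by auto
    have Cch: "I \<le> J \<or> J \<le> I" if "I \<in> C" "J \<in> C" for I J
    proof -
      have "fam2set I \<in> CC" "fam2set J \<in> CC" using that CC_eq by auto
      then have "fam2set I \<subseteq> fam2set J \<or> fam2set J \<subseteq> fam2set I" using ch unfolding subset_chain_def by blast
      then show ?thesis using fam2set_le by blast
    qed
    define U where "U = (\<lambda>K. \<Union>I\<in>C. I K)"
    have "tideal G T U" unfolding U_def
      by (rule tideal_chain_Union[OF Cne]) (use CA AA_def Cch in auto)
    moreover have "\<forall>k::nat. x [^]\<^bsub>L H\<^esub> k \<notin> U H" unfolding U_def using CA unfolding AA_def by blast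
    ultimately have "U \<in> AA" unfolding AA_def by blast
    moreover have "\<Union>CC = fam2set U" unfolding CC_eq U_def fam2set_def by auto
    ultimately show "\<Union>CC \<in> fam2set ` AA" by blast
  qed
  then obtain P where PA: "P \<in> AA" and Pmax: "\<And>I. I \<in> AA \<Longrightarrow> P \<le> I \<Longrightarrow> I = P"
    by (metis fam2set_le imageE imageI set2fam_fam2set)
  have Pt: "tideal G T P" and Px: "\<And>k::nat. x [^]\<^bsub>L H\<^esub> k \<notin> P H" using PA unfolding AA_def by auto
  have HG: "subgrp_le G H (carrier G)" using H sg_G sg_carrier unfolding subgrp_le_def by auto
  have big: "\<exists>k::nat. x [^]\<^bsub>L H\<^esub> k \<in> tsum I P H" if I: "tideal G T I" and nI: "\<not> I \<le> P" for I
  proof (rule ccontr)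
    assume "\<not> ?thesis"
    then have "tsum I P \<in> AA" unfolding AA_def using tsum_tideal[OF I Pt] by blast
    moreover have "P \<le> tsum I P" unfolding le_fun_def using tsum_right[OF I] tideal_carrier[OF Pt] by blast
    ultimately have "tsum I P = P" using Pmax by blast
    moreover have "I \<le> tsum I P" unfolding le_fun_def using tsum_left[OF Pt] tideal_carrier[OF I] by blast
    ultimately show False using nI by simp
  qed
  have "tprime G T P" unfolding tprime_def
  proof (intro conjI allI impI)
    show "tideal G T P" by (rule Pt)
    show "\<one>\<^bsub>L (carrier G)\<^esub> \<notin> P (carrier G)"
    proof
      assume "\<one>\<^bsub>L (carrier G)\<^esub> \<in> P (carrier G)"
      then have "res (carrier G) H \<one>\<^bsub>L (carrier G)\<^esub> \<in> P H" using tideal_res[OF Pt HG] by blast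
      then have "x [^]\<^bsub>L H\<^esub> (0::nat) \<in> P H" using res_one[OF HG] by simp
      then show False using Px by blast
    qed
    fix I J assume I: "tideal G T I" and J: "tideal G T J" and IJ: "tprod G T I J \<le> P"
    show "I \<le> P \<or> J \<le> P"
    proof (rule ccontr)
      assume "\<not> (I \<le> P \<or> J \<le> P)"
      then obtain k m where k: "x [^]\<^bsub>L H\<^esub> (k::nat) \<in> tsum I P H" and m: "x [^]\<^bsub>L H\<^esub> (m::nat) \<in> tsum J P H"
        using big[OF I] big[OF J] by blast
      obtain i p where ip: "i \<in> I H" "p \<in> P H" "x [^]\<^bsub>L H\<^esub> k = i \<oplus>\<^bsub>L H\<^esub> p" using k unfolding tsum_def mem_set_add by blast
      obtain j p' where jp: "j \<in> J H" "p' \<in> P H" "x [^]\<^bsub>L H\<^esub> m = j \<oplus>\<^bsub>L H\<^esub> p'" using m unfolding tsum_def mem_set_add by blast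
      have c: "i \<in> carrier (L H)" "p \<in> carrier (L H)" "j \<in> carrier (L H)" "p' \<in> carrier (L H)"
        using tideal_carrier[OF I ip(1)] tideal_carrier[OF Pt ip(2)] tideal_carrier[OF J jp(1)] tideal_carrier[OF Pt jp(2)] by auto
      have "x [^]\<^bsub>L H\<^esub> (k + m) = x [^]\<^bsub>L H\<^esub> k \<otimes>\<^bsub>L H\<^esub> x [^]\<^bsub>L H\<^esub> m" using R.nat_pow_mult[OF xc] by simp
      also have "\<dots> = (i \<otimes>\<^bsub>L H\<^esub> j) \<oplus>\<^bsub>L H\<^esub> ((i \<otimes>\<^bsub>L H\<^esub> p') \<oplus>\<^bsub>L H\<^esub> (p \<otimes>\<^bsub>L H\<^esub> (j \<oplus>\<^bsub>L H\<^esub> p')))"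
        unfolding ip(3) jp(3) using c by (simp add: R.l_distr R.r_distr R.a_assoc R.a_lcomm)
      also have "\<dots> \<in> P H"
      proof -
        have "i \<otimes>\<^bsub>L H\<^esub> j \<in> P H" using prodgen_in_tprod[where I=I and J=J, OF ip(1) jp(1)] IJ unfolding le_fun_def by blast
        moreover have "i \<otimes>\<^bsub>L H\<^esub> p' \<in> P H" using tI_lmult[OF Pt jp(2) c(1)] .
        moreover have "p \<otimes>\<^bsub>L H\<^esub> (j \<oplus>\<^bsub>L H\<^esub> p') \<in> P H" using tI_rmult[OF Pt ip(2)] c by simp
        ultimately show ?thesis using tI_add[OF Pt] by blast
      qed
      finally show False using Px by blast
    qed
  qed
  moreover have "x \<notin> P H" using Px[of 1] xc by simp
  ultimately show ?thesis by blast
qed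

end


definition mprod :: "('a, 'm) ring_scheme \<Rightarrow> 'a list \<Rightarrow> 'a" where
  "mprod R vs = foldr (\<lambda>v acc. v \<otimes>\<^bsub>R\<^esub> acc) vs \<one>\<^bsub>R\<^esub>"

lemma mprod_Nil[simp]: "mprod R [] = \<one>\<^bsub>R\<^esub>" unfolding mprod_def by simp
lemma mprod_Cons[simp]: "mprod R (v # vs) = v \<otimes>\<^bsub>R\<^esub> mprod R vs" unfolding mprod_def by simp

lemma mprod_carrier: "cring R \<Longrightarrow> set vs \<subseteq> carrier R \<Longrightarrow> mprod R vs \<in> carrier R"
proof (induction vs)
  case Nil then show ?case using cring.axioms(1) ring.ring_simprules(6) by fastforce
next
  case (Cons v vs)
  interpret cring R by fact
  show ?case using Cons by simp
qed

lemma mprod_append: "cring R \<Longrightarrow> set xs \<subseteq> carrier R \<Longrightarrow> set ys \<subseteq> carrier R \<Longrightarrow>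
   mprod R (xs @ ys) = mprod R xs \<otimes>\<^bsub>R\<^esub> mprod R ys"
proof (induction xs)
  case Nil
  interpret cring R by fact
  show ?case using mprod_carrier[OF Nil(1) Nil(3)] by simp
next
  case (Cons x xs)
  interpret cring R by fact
  have c: "x \<in> carrier R" "set xs \<subseteq> carrier R" using Cons by auto
  show ?case using Cons.IH[OF Cons(2) c(2) Cons(4)] mprod_carrier[OF Cons(2) c(2)] mprod_carrier[OF Cons(2) Cons(4)] c
    by (simp add: m_assoc)
qed

lemma mprod_hom:
  assumes "\<And>a b. a \<in> carrier R \<Longrightarrow> b \<in> carrier R \<Longrightarrow> f (a \<otimes>\<^bsub>R\<^esub> b) = f a \<otimes>\<^bsub>S\<^esub> f b"
    and "f \<one>\<^bsub>R\<^esub> = \<one>\<^bsub>S\<^esub>" and "cring R"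
  shows "set vs \<subseteq> carrier R \<Longrightarrow> f (mprod R vs) = mprod S (map f vs)"
proof (induction vs)
  case Nil then show ?case using assms(2) by simp
next
  case (Cons v vs)
  have "mprod R vs \<in> carrier R" using mprod_carrier[OF assms(3)] Cons(2) by auto
  then show ?case using Cons assms(1) by simp
qed

lemma pow_hom:
  assumes "\<And>a b. a \<in> carrier R \<Longrightarrow> b \<in> carrier R \<Longrightarrow> f (a \<otimes>\<^bsub>R\<^esub> b) = f a \<otimes>\<^bsub>S\<^esub> f b"
    and "f \<one>\<^bsub>R\<^esub> = \<one>\<^bsub>S\<^esub>" and "cring R" and "a \<in> carrier R"
  shows "f (a [^]\<^bsub>R\<^esub> (n::nat)) = f a [^]\<^bsub>S\<^esub> n"
proof (induction n)
  case 0 then show ?case using assms(2) by simp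
next
  case (Suc n)
  interpret cring R by fact
  have "a [^]\<^bsub>R\<^esub> n \<in> carrier R" using assms(4) by simp
  then show ?case using Suc assms(1,4) by simp
qed

lemma finprod_mprod:
  assumes R: "cring R" and "distinct qs" and "f \<in> set qs \<rightarrow> carrier R"
  shows "finprod R f (set qs) = mprod R (map f qs)"
  using assms(2,3)
proof (induction qs)
  case Nil
  interpret cring R by fact
  show ?case by simp
next
  case (Cons q qs)
  interpret cring R by fact
  have "finprod R f (insert q (set qs)) = f q \<otimes>\<^bsub>R\<^esub> finprod R f (set qs)"
    by (rule finprod_insert) (use Cons.prems in auto)
  then show ?case using Cons by simp
qed

lemma mprod_zero_aux:
  assumes R: "cring R" and v: "v \<in> carrier R" and vk: "v [^]\<^bsub>R\<^esub> (k::nat) = \<zero>\<^bsub>R\<^esub>"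
  shows "set vs \<subseteq> carrier R \<Longrightarrow> j + count_list vs v \<ge> k \<Longrightarrow> v [^]\<^bsub>R\<^esub> (j::nat) \<otimes>\<^bsub>R\<^esub> mprod R vs = \<zero>\<^bsub>R\<^esub>"
proof (induction vs arbitrary: j)
  case Nil
  interpret cring R by fact
  have "v [^]\<^bsub>R\<^esub> j = v [^]\<^bsub>R\<^esub> k \<otimes>\<^bsub>R\<^esub> v [^]\<^bsub>R\<^esub> (j - k)"
    using nat_pow_mult[OF v, of k "j - k"] Nil(2) by simp
  then show ?case using vk v by simp
next
  case (Cons w vs)
  interpret cring R by fact
  have w: "w \<in> carrier R" and vs: "set vs \<subseteq> carrier R" using Cons(2) by auto
  have mp: "mprod R vs \<in> carrier R" using mprod_carrier[OF R vs] .
  show ?case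
  proof (cases "w = v")
    case True
    have "v [^]\<^bsub>R\<^esub> j \<otimes>\<^bsub>R\<^esub> mprod R (w # vs) = v [^]\<^bsub>R\<^esub> (Suc j) \<otimes>\<^bsub>R\<^esub> mprod R vs"
      using True v mp by (simp add: m_assoc)
    also have "\<dots> = \<zero>\<^bsub>R\<^esub>"
    proof (rule Cons.IH[OF vs])
      show "k \<le> Suc j + count_list vs v" using Cons(3) True by simp
    qed
    finally show ?thesis .
  next
    case False
    have "v [^]\<^bsub>R\<^esub> j \<otimes>\<^bsub>R\<^esub> mprod R (w # vs) = w \<otimes>\<^bsub>R\<^esub> (v [^]\<^bsub>R\<^esub> j \<otimes>\<^bsub>R\<^esub> mprod R vs)"
      using v w mp by (simp add: m_lcomm)
    also have "\<dots> = \<zero>\<^bsub>R\<^esub>" using Cons.IH[OF vs] Cons(3) False w by simp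
    finally show ?thesis .
  qed
qed

lemma mprod_zero:
  assumes R: "cring R" and "set vs \<subseteq> carrier R" and "v \<in> carrier R" and "v [^]\<^bsub>R\<^esub> (k::nat) = \<zero>\<^bsub>R\<^esub>"
    and "count_list vs v \<ge> k"
  shows "mprod R vs = \<zero>\<^bsub>R\<^esub>"
proof -
  interpret cring R by fact
  have "v [^]\<^bsub>R\<^esub> (0::nat) \<otimes>\<^bsub>R\<^esub> mprod R vs = \<zero>\<^bsub>R\<^esub>"
    by (rule mprod_zero_aux[OF R assms(3,4) assms(2)]) (use assms(5) in simp)
  moreover have "v [^]\<^bsub>R\<^esub> (0::nat) \<otimes>\<^bsub>R\<^esub> mprod R vs = mprod R vs"
    using mprod_carrier[OF R assms(2)] by simp
  ultimately show ?thesis by simp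
qed

lemma pigeon:
  assumes "set vs \<subseteq> V" "finite V" "card V \<le> N" "length vs \<ge> N * (k - 1) + 1"
  shows "\<exists>v\<in>set vs. count_list vs v \<ge> k"
proof (rule ccontr)
  assume "\<not> ?thesis"
  then have lt: "\<And>v. v \<in> set vs \<Longrightarrow> count_list vs v \<le> k - 1" by fastforce
  have "length vs = sum (count_list vs) V" using sum_count_set[OF assms(1,2)] by simp
  also have "\<dots> \<le> sum (\<lambda>_. k - 1) V"
  proof (rule sum_mono)
    fix v assume "v \<in> V"
    show "count_list vs v \<le> k - 1"
      by (cases "v \<in> set vs") (use lt count_list_0_iff in auto)
  qed
  also have "\<dots> = card V * (k - 1)" by simp
  also have "\<dots> \<le> N * (k - 1)" using assms(3) by simp
  finally show False using assms(4) by simp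
qed



locale nilp = tamb G T for G :: "('g,'b) monoid_scheme" and T :: "('g,'r) tambara" +
  fixes H0 :: "'g set" and x0 :: 'r
  assumes H0: "subgroup H0 G" and x0: "x0 \<in> carrier (t_lev T H0)"
begin

definition vform :: "'g set \<Rightarrow> 'g \<Rightarrow> 'g set \<Rightarrow> 'r" where
  "vform B g A = nm B A (res (conjsub G g H0) A (cj g H0 x0))"

definition V :: "'g set \<Rightarrow> 'r set" where
  "V B = {vform B g A | g A. g \<in> carrier G \<and> sg A \<and> A \<subseteq> B \<and> A \<subseteq> conjsub G g H0}"

lemma vform_carrier: "sg B \<Longrightarrow> g \<in> carrier G \<Longrightarrow> sg A \<Longrightarrow> A \<subseteq> B \<Longrightarrow> A \<subseteq> conjsub G g H0 \<Longrightarrow>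
  vform B g A \<in> carrier (L B)"
proof -
  assume B: "sg B" and g: "g \<in> carrier G" and A: "sg A" and AB: "A \<subseteq> B" and AC: "A \<subseteq> conjsub G g H0"
  have C: "sg (conjsub G g H0)" using conjsub_subgroup[OF H0 g] .
  have "cj g H0 x0 \<in> carrier (L (conjsub G g H0))" using cj_carrier[OF g H0 x0] .
  then have "res (conjsub G g H0) A (cj g H0 x0) \<in> carrier (L A)" using res_carrier sgle_I[OF A C AC] by blast
  then show ?thesis unfolding vform_def using nm_carrier sgle_I[OF A B AB] by blast
qed

lemma V_carrier: "sg B \<Longrightarrow> V B \<subseteq> carrier (L B)"
  unfolding V_def using vform_carrier by blast

definition N0 :: nat where "N0 = card (carrier G \<times> Pow (carrier G))"

lemma V_finite: "finite (V B) \<and> card (V B) \<le> N0"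
proof -
  have sub: "V B \<subseteq> (\<lambda>(g, A). vform B g A) ` (carrier G \<times> Pow (carrier G))"
    unfolding V_def using sg_carrier by fastforce
  have fin: "finite (carrier G \<times> Pow (carrier G))" using finG by simp
  have "finite (V B)" using finite_subset[OF sub finite_imageI[OF fin]] .
  moreover have "card (V B) \<le> N0" unfolding N0_def
    using card_mono[OF finite_imageI[OF fin] sub] card_image_le[OF fin] by (rule order_trans)
  ultimately show ?thesis by blast
qed

lemma x0_V: "x0 \<in> V H0"
proof -
  have one: "\<one>\<^bsub>G\<^esub> \<in> carrier G" by simp
  have c1: "conjsub G \<one>\<^bsub>G\<^esub> H0 = H0" using conjsub_one sg_carrier[OF H0] by blast
  have "vform H0 \<one>\<^bsub>G\<^esub> H0 = x0" unfolding vform_def c1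
    using cj_triv[OF H0 subgroup.one_closed[OF H0] x0] res_id[OF H0 x0] nm_id[OF H0 x0] by simp
  moreover have "sg H0 \<and> H0 \<subseteq> H0 \<and> H0 \<subseteq> conjsub G \<one>\<^bsub>G\<^esub> H0" using c1 H0 by simp
  ultimately have "\<exists>g A. x0 = vform H0 g A \<and> g \<in> carrier G \<and> sg A \<and> A \<subseteq> H0 \<and> A \<subseteq> conjsub G g H0"
    using one by metis
  then show ?thesis unfolding V_def by simp
qed

end


context nilp
begin

lemma V_E: "v \<in> V B \<Longrightarrow> (\<And>g A. v = vform B g A \<Longrightarrow> g \<in> carrier G \<Longrightarrow> sg A \<Longrightarrow> A \<subseteq> B \<Longrightarrow> A \<subseteq> conjsub G g H0 \<Longrightarrow> P) \<Longrightarrow> P"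
  unfolding V_def by blast

lemma V_I: "g \<in> carrier G \<Longrightarrow> sg A \<Longrightarrow> A \<subseteq> B \<Longrightarrow> A \<subseteq> conjsub G g H0 \<Longrightarrow> vform B g A \<in> V B"
  unfolding V_def by blast

lemma vform_pow:
  assumes B: "sg B" and g: "g \<in> carrier G" and A: "sg A" and AB: "A \<subseteq> B" and AC: "A \<subseteq> conjsub G g H0"
  shows "vform B g A [^]\<^bsub>L B\<^esub> (n::nat) = nm B A (res (conjsub G g H0) A (cj g H0 (x0 [^]\<^bsub>L H0\<^esub> n)))"
proof -
  have C: "sg (conjsub G g H0)" using conjsub_subgroup[OF H0 g] .
  have le1: "subgrp_le G A (conjsub G g H0)" using sgle_I[OF A C AC] .
  have le2: "subgrp_le G A B" using sgle_I[OF A B AB] .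
  have y: "cj g H0 x0 \<in> carrier (L (conjsub G g H0))" using cj_carrier[OF g H0 x0] .
  have w: "res (conjsub G g H0) A (cj g H0 x0) \<in> carrier (L A)" using res_carrier[OF le1 y] .
  have "cj g H0 (x0 [^]\<^bsub>L H0\<^esub> n) = cj g H0 x0 [^]\<^bsub>L (conjsub G g H0)\<^esub> n"
    by (rule pow_hom[OF cj_mult[OF g H0] cj_one[OF g H0] cring_L[OF H0] x0])
  moreover have "res (conjsub G g H0) A (cj g H0 x0 [^]\<^bsub>L (conjsub G g H0)\<^esub> n) = res (conjsub G g H0) A (cj g H0 x0) [^]\<^bsub>L A\<^esub> n"
    by (rule pow_hom[OF res_mult[OF le1] res_one[OF le1] cring_L[OF C] y])
  moreover have "nm B A (res (conjsub G g H0) A (cj g H0 x0) [^]\<^bsub>L A\<^esub> n) = vform B g A [^]\<^bsub>L B\<^esub> n"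
    unfolding vform_def by (rule pow_hom[OF nm_mult[OF le2] nm_one[OF le2] cring_L[OF A] w])
  ultimately show ?thesis by simp
qed

lemma V_pow_zero:
  assumes B: "sg B" and v: "v \<in> V B" and k: "x0 [^]\<^bsub>L H0\<^esub> (k::nat) = \<zero>\<^bsub>L H0\<^esub>"
  shows "v [^]\<^bsub>L B\<^esub> k = \<zero>\<^bsub>L B\<^esub>"
  using v
proof (rule V_E)
  fix g A assume v: "v = vform B g A" and g: "g \<in> carrier G" and A: "sg A" and AB: "A \<subseteq> B" and AC: "A \<subseteq> conjsub G g H0"
  have C: "sg (conjsub G g H0)" using conjsub_subgroup[OF H0 g] .
  show ?thesis unfolding v vform_pow[OF B g A AB AC] k
    using cj_zero[OF g H0] res_zero[OF sgle_I[OF A C AC]] nm_zero[OF sgle_I[OF A B AB]] by simp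
qed

lemma V_cj:
  assumes B: "sg B" and v: "v \<in> V B" and g': "g' \<in> carrier G"
  shows "cj g' B v \<in> V (conjsub G g' B)"
  using v
proof (rule V_E)
  fix g A assume v: "v = vform B g A" and g: "g \<in> carrier G" and A: "sg A" and AB: "A \<subseteq> B" and AC: "A \<subseteq> conjsub G g H0"
  have C: "sg (conjsub G g H0)" using conjsub_subgroup[OF H0 g] .
  have le1: "subgrp_le G A (conjsub G g H0)" using sgle_I[OF A C AC] .
  have le2: "subgrp_le G A B" using sgle_I[OF A B AB] .
  have y: "cj g H0 x0 \<in> carrier (L (conjsub G g H0))" using cj_carrier[OF g H0 x0] .
  have w: "res (conjsub G g H0) A (cj g H0 x0) \<in> carrier (L A)" using res_carrier[OF le1 y] .
  have cc: "conjsub G g' (conjsub G g H0) = conjsub G (g' \<otimes>\<^bsub>G\<^esub> g) H0"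
    using conjsub_comp[OF sg_carrier[OF H0] g g'] .
  have "cj g' B v = nm (conjsub G g' B) (conjsub G g' A) (cj g' A (res (conjsub G g H0) A (cj g H0 x0)))"
    unfolding v vform_def using cj_nm[OF g' le2 w] .
  also have "cj g' A (res (conjsub G g H0) A (cj g H0 x0)) = res (conjsub G g' (conjsub G g H0)) (conjsub G g' A) (cj g' (conjsub G g H0) (cj g H0 x0))"
    using cj_res[OF g' le1 y] .
  also have "cj g' (conjsub G g H0) (cj g H0 x0) = cj (g' \<otimes>\<^bsub>G\<^esub> g) H0 x0" using cj_comp[OF g g' H0 x0] .
  finally have "cj g' B v = vform (conjsub G g' B) (g' \<otimes>\<^bsub>G\<^esub> g) (conjsub G g' A)" unfolding vform_def cc .
  moreover have "vform (conjsub G g' B) (g' \<otimes>\<^bsub>G\<^esub> g) (conjsub G g' A) \<in> V (conjsub G g' B)"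
  proof (rule V_I)
    show "g' \<otimes>\<^bsub>G\<^esub> g \<in> carrier G" using g g' by simp
    show "sg (conjsub G g' A)" using conjsub_subgroup[OF A g'] .
    show "conjsub G g' A \<subseteq> conjsub G g' B" using conjsub_mono[OF AB] .
    show "conjsub G g' A \<subseteq> conjsub G (g' \<otimes>\<^bsub>G\<^esub> g) H0" using conjsub_mono[OF AC, of g'] cc by simp
  qed
  ultimately show ?thesis by simp
qed

lemma V_nm:
  assumes BB: "subgrp_le G B B2" and v: "v \<in> V B"
  shows "nm B2 B v \<in> V B2"
  using v
proof (rule V_E)
  fix g A assume v: "v = vform B g A" and g: "g \<in> carrier G" and A: "sg A" and AB: "A \<subseteq> B" and AC: "A \<subseteq> conjsub G g H0"
  have B: "sg B" and B2: "sg B2" and BB2: "B \<subseteq> B2" using sgle_D[OF BB] by auto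
  have C: "sg (conjsub G g H0)" using conjsub_subgroup[OF H0 g] .
  have le1: "subgrp_le G A (conjsub G g H0)" using sgle_I[OF A C AC] .
  have le2: "subgrp_le G A B" using sgle_I[OF A B AB] .
  have y: "cj g H0 x0 \<in> carrier (L (conjsub G g H0))" using cj_carrier[OF g H0 x0] .
  have w: "res (conjsub G g H0) A (cj g H0 x0) \<in> carrier (L A)" using res_carrier[OF le1 y] .
  have "nm B2 B v = vform B2 g A" unfolding v vform_def using nm_trans[OF le2 BB w] .
  moreover have "vform B2 g A \<in> V B2" by (rule V_I[OF g A _ AC]) (use AB BB2 in auto)
  ultimately show ?thesis by simp
qed

lemma V_res:
  assumes BB: "subgrp_le G B' B" and v: "v \<in> V B"
  shows "\<exists>ws. set ws \<subseteq> V B' \<and> 1 \<le> length ws \<and> res B B' v = mprod (L B') ws"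
  using v
proof (rule V_E)
  fix g A assume v: "v = vform B g A" and g: "g \<in> carrier G" and A: "sg A" and AB: "A \<subseteq> B" and AC: "A \<subseteq> conjsub G g H0"
  have B: "sg B" and B': "sg B'" and BB2: "B' \<subseteq> B" using sgle_D[OF BB] by auto
  have Bc: "B \<subseteq> carrier G" using sg_carrier[OF B] .
  have C: "sg (conjsub G g H0)" using conjsub_subgroup[OF H0 g] .
  have le1: "subgrp_le G A (conjsub G g H0)" using sgle_I[OF A C AC] .
  have le2: "subgrp_le G A B" using sgle_I[OF A B AB] .
  have y: "cj g H0 x0 \<in> carrier (L (conjsub G g H0))" using cj_carrier[OF g H0 x0] .
  define w where "w = res (conjsub G g H0) A (cj g H0 x0)"
  have w: "w \<in> carrier (L A)" unfolding w_def using res_carrier[OF le1 y] .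
  obtain Q where Q: "dreps G B B' A Q" using dreps_exist[OF BB le2] by blast
  have QB: "Q \<subseteq> B" using dreps_sub[OF Q] .
  define f where "f q = nm B' (B' \<inter> conjsub G q A) (res (conjsub G q A) (B' \<inter> conjsub G q A) (cj q A w))" for q
  have eq: "res B B' v = finprod (L B') f Q" unfolding v vform_def f_def w_def[symmetric]
    using dc_nm[OF le2 BB Q w] .
  have fV: "f q \<in> V B'" if q: "q \<in> Q" for q
  proof -
    have qc: "q \<in> carrier G" using q QB Bc by auto
    have cA: "sg (conjsub G q A)" using conjsub_subgroup[OF A qc] .
    have A': "sg (B' \<inter> conjsub G q A)" using sg_Int[OF B' cA] .
    have cc: "conjsub G q (conjsub G g H0) = conjsub G (q \<otimes>\<^bsub>G\<^esub> g) H0"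
      using conjsub_comp[OF sg_carrier[OF H0] g qc] .
    have C': "sg (conjsub G (q \<otimes>\<^bsub>G\<^esub> g) H0)" using conjsub_subgroup[OF H0] qc g by simp
    have le3: "subgrp_le G (conjsub G q A) (conjsub G (q \<otimes>\<^bsub>G\<^esub> g) H0)"
      using conjsub_le[OF le1 qc] cc by simp
    have le4: "subgrp_le G (B' \<inter> conjsub G q A) (conjsub G q A)" using sgle_Int_right[OF B' cA] .
    have "cj q A w = res (conjsub G q (conjsub G g H0)) (conjsub G q A) (cj q (conjsub G g H0) (cj g H0 x0))"
      unfolding w_def using cj_res[OF qc le1 y] .
    also have "\<dots> = res (conjsub G (q \<otimes>\<^bsub>G\<^esub> g) H0) (conjsub G q A) (cj (q \<otimes>\<^bsub>G\<^esub> g) H0 x0)"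
      unfolding cc using cj_comp[OF g qc H0 x0] by simp
    finally have e: "cj q A w = res (conjsub G (q \<otimes>\<^bsub>G\<^esub> g) H0) (conjsub G q A) (cj (q \<otimes>\<^bsub>G\<^esub> g) H0 x0)" .
    have y': "cj (q \<otimes>\<^bsub>G\<^esub> g) H0 x0 \<in> carrier (L (conjsub G (q \<otimes>\<^bsub>G\<^esub> g) H0))" using cj_carrier[OF _ H0 x0] qc g by simp
    have "f q = vform B' (q \<otimes>\<^bsub>G\<^esub> g) (B' \<inter> conjsub G q A)"
      unfolding f_def vform_def e using res_trans[OF le4 le3 y'] by simp
    moreover have "vform B' (q \<otimes>\<^bsub>G\<^esub> g) (B' \<inter> conjsub G q A) \<in> V B'"
    proof (rule V_I[OF _ A'])
      show "q \<otimes>\<^bsub>G\<^esub> g \<in> carrier G" using qc g by simp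
      show "B' \<inter> conjsub G q A \<subseteq> B'" by blast
      show "B' \<inter> conjsub G q A \<subseteq> conjsub G (q \<otimes>\<^bsub>G\<^esub> g) H0" using sgle_D[OF le3] by blast
    qed
    ultimately show ?thesis by simp
  qed
  have finQ: "finite Q" using dreps_finite[OF Q B] .
  obtain qs where qs: "set qs = Q" "distinct qs" using finite_distinct_list[OF finQ] by blast
  have fc: "f \<in> set qs \<rightarrow> carrier (L B')" using fV qs(1) V_carrier[OF B'] by blast
  have "res B B' v = mprod (L B') (map f qs)"
    unfolding eq qs(1)[symmetric] by (rule finprod_mprod[OF cring_L[OF B'] qs(2) fc])
  moreover have "set (map f qs) \<subseteq> V B'" using fV qs(1) by auto
  moreover have "1 \<le> length (map f qs)" using dreps_nonempty[OF Q B] qs(1) by (cases qs) auto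
  ultimately show ?thesis by blast
qed

end


context nilp
begin

definition Mon :: "nat \<Rightarrow> 'g set \<Rightarrow> 'r set" where
  "Mon d B = {mprod (L B) vs | vs. set vs \<subseteq> V B \<and> d \<le> length vs}"

lemma Mon_E: "m \<in> Mon d B \<Longrightarrow> (\<And>vs. m = mprod (L B) vs \<Longrightarrow> set vs \<subseteq> V B \<Longrightarrow> d \<le> length vs \<Longrightarrow> P) \<Longrightarrow> P"
  unfolding Mon_def by blast

lemma Mon_I: "set vs \<subseteq> V B \<Longrightarrow> d \<le> length vs \<Longrightarrow> mprod (L B) vs \<in> Mon d B"
  unfolding Mon_def by blast

lemma Mon_carrier: "sg B \<Longrightarrow> m \<in> Mon d B \<Longrightarrow> m \<in> carrier (L B)"
  by (erule Mon_E) (use mprod_carrier[OF cring_L] V_carrier in blast)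

lemma Mon_mono: "m \<in> Mon d B \<Longrightarrow> d' \<le> d \<Longrightarrow> m \<in> Mon d' B"
  by (erule Mon_E) (use Mon_I in auto)

lemma res_mprod_V:
  assumes BB: "subgrp_le G B' B"
  shows "set vs \<subseteq> V B \<Longrightarrow> \<exists>ws. set ws \<subseteq> V B' \<and> length vs \<le> length ws \<and> res B B' (mprod (L B) vs) = mprod (L B') ws"
proof (induction vs)
  case Nil
  have "res B B' (mprod (L B) []) = mprod (L B') []" using res_one[OF BB] by simp
  then show ?case by (intro exI[of _ "[]"]) simp
next
  case (Cons v vs)
  have B: "sg B" and B': "sg B'" using sgle_D[OF BB] by auto
  obtain ws where ws: "set ws \<subseteq> V B'" "length vs \<le> length ws" "res B B' (mprod (L B) vs) = mprod (L B') ws"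
    using Cons by auto
  have vV: "v \<in> V B" using Cons(2) by simp
  obtain ws1 where ws1: "set ws1 \<subseteq> V B'" "1 \<le> length ws1" "res B B' v = mprod (L B') ws1"
    using V_res[OF BB vV] by blast
  have vc: "v \<in> carrier (L B)" and vsc: "mprod (L B) vs \<in> carrier (L B)"
    using Cons(2) V_carrier[OF B] mprod_carrier[OF cring_L[OF B]] by auto
  have "res B B' (mprod (L B) (v # vs)) = res B B' v \<otimes>\<^bsub>L B'\<^esub> res B B' (mprod (L B) vs)"
    using res_mult[OF BB vc vsc] by simp
  also have "\<dots> = mprod (L B') (ws1 @ ws)" unfolding ws1(3) ws(3)
    using mprod_append[OF cring_L[OF B']] ws(1) ws1(1) V_carrier[OF B'] by auto
  finally show ?case using ws ws1 by (intro exI[of _ "ws1 @ ws"]) auto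
qed

lemma Mon_res: "subgrp_le G B' B \<Longrightarrow> m \<in> Mon d B \<Longrightarrow> res B B' m \<in> Mon d B'"
proof -
  assume BB: "subgrp_le G B' B" and m: "m \<in> Mon d B"
  obtain vs where vs: "m = mprod (L B) vs" "set vs \<subseteq> V B" "d \<le> length vs" using m by (rule Mon_E)
  obtain ws where "set ws \<subseteq> V B'" "length vs \<le> length ws" "res B B' (mprod (L B) vs) = mprod (L B') ws"
    using res_mprod_V[OF BB vs(2)] by blast
  then show ?thesis using vs Mon_I by auto
qed

lemma Mon_cj: "g \<in> carrier G \<Longrightarrow> sg B \<Longrightarrow> m \<in> Mon d B \<Longrightarrow> cj g B m \<in> Mon d (conjsub G g B)"
proof -
  assume g: "g \<in> carrier G" and B: "sg B" and m: "m \<in> Mon d B"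
  obtain vs where vs: "m = mprod (L B) vs" "set vs \<subseteq> V B" "d \<le> length vs" using m by (rule Mon_E)
  have "cj g B m = mprod (L (conjsub G g B)) (map (cj g B) vs)" unfolding vs(1)
    by (rule mprod_hom[OF cj_mult[OF g B] cj_one[OF g B] cring_L[OF B]]) (use vs(2) V_carrier[OF B] in auto)
  moreover have "set (map (cj g B) vs) \<subseteq> V (conjsub G g B)" using vs(2) V_cj[OF B _ g] by auto
  ultimately show ?thesis using Mon_I vs(3) by (metis length_map)
qed

lemma Mon_nm: "subgrp_le G B B2 \<Longrightarrow> m \<in> Mon d B \<Longrightarrow> nm B2 B m \<in> Mon d B2"
proof -
  assume BB: "subgrp_le G B B2" and m: "m \<in> Mon d B"
  have B: "sg B" using sgle_D[OF BB] by auto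
  obtain vs where vs: "m = mprod (L B) vs" "set vs \<subseteq> V B" "d \<le> length vs" using m by (rule Mon_E)
  have "nm B2 B m = mprod (L B2) (map (nm B2 B) vs)" unfolding vs(1)
    by (rule mprod_hom[OF nm_mult[OF BB] nm_one[OF BB] cring_L[OF B]]) (use vs(2) V_carrier[OF B] in auto)
  moreover have "set (map (nm B2 B) vs) \<subseteq> V B2" using vs(2) V_nm[OF BB] by auto
  ultimately show ?thesis using Mon_I vs(3) by (metis length_map)
qed

lemma Mon_mult: "sg B \<Longrightarrow> m \<in> Mon d B \<Longrightarrow> m' \<in> Mon e B \<Longrightarrow> m \<otimes>\<^bsub>L B\<^esub> m' \<in> Mon (d + e) B"
proof -
  assume B: "sg B" and m: "m \<in> Mon d B" and m': "m' \<in> Mon e B"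
  obtain vs where vs: "m = mprod (L B) vs" "set vs \<subseteq> V B" "d \<le> length vs" using m by (rule Mon_E)
  obtain ws where ws: "m' = mprod (L B) ws" "set ws \<subseteq> V B" "e \<le> length ws" using m' by (rule Mon_E)
  have "m \<otimes>\<^bsub>L B\<^esub> m' = mprod (L B) (vs @ ws)" unfolding vs(1) ws(1)
    using mprod_append[OF cring_L[OF B]] vs(2) ws(2) V_carrier[OF B] by auto
  then show ?thesis using Mon_I[of "vs @ ws" B "d + e"] vs ws by auto
qed

lemma Mon_x0: "x0 \<in> Mon 1 H0"
proof -
  interpret cring "L H0" using cring_L[OF H0] .
  have "mprod (L H0) [x0] = x0" using x0 by simp
  then show ?thesis using Mon_I[of "[x0]" H0 1] x0_V by auto
qed

definition Dk :: "nat \<Rightarrow> nat" where "Dk k = N0 * (k - 1) + 1"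

lemma Mon_zero:
  assumes B: "sg B" and k: "x0 [^]\<^bsub>L H0\<^esub> (k::nat) = \<zero>\<^bsub>L H0\<^esub>" and m: "m \<in> Mon (Dk k) B"
  shows "m = \<zero>\<^bsub>L B\<^esub>"
proof -
  obtain vs where vs: "m = mprod (L B) vs" "set vs \<subseteq> V B" "Dk k \<le> length vs" using m by (rule Mon_E)
  obtain v where v: "v \<in> set vs" "count_list vs v \<ge> k"
    using pigeon[OF vs(2) _ _ vs(3)[unfolded Dk_def]] V_finite by blast
  have vV: "v \<in> V B" using v(1) vs(2) by auto
  show ?thesis unfolding vs(1)
    by (rule mprod_zero[OF cring_L[OF B] _ _ V_pow_zero[OF B vV k] v(2)]) (use vs(2) V_carrier[OF B] vV in auto)
qed

end


lemma ideal_preimage: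
  assumes R: "cring R" and I: "ideal I S"
    and z: "f \<zero>\<^bsub>R\<^esub> \<in> I"
    and add: "\<And>a b. a \<in> carrier R \<Longrightarrow> b \<in> carrier R \<Longrightarrow> f (a \<oplus>\<^bsub>R\<^esub> b) = f a \<oplus>\<^bsub>S\<^esub> f b"
    and mul: "\<And>a b. a \<in> carrier R \<Longrightarrow> b \<in> carrier R \<Longrightarrow> f (a \<otimes>\<^bsub>R\<^esub> b) = f a \<otimes>\<^bsub>S\<^esub> f b"
    and cl: "\<And>a. a \<in> carrier R \<Longrightarrow> f a \<in> carrier S"
  shows "ideal {a \<in> carrier R. f a \<in> I} R"
proof (rule cring_idealI[OF R])
  interpret R: cring R by fact
  interpret I: ideal I S by fact
  show "{a \<in> carrier R. f a \<in> I} \<subseteq> carrier R" by blast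
  show "\<zero>\<^bsub>R\<^esub> \<in> {a \<in> carrier R. f a \<in> I}" using z by simp
  show "a \<oplus>\<^bsub>R\<^esub> b \<in> {a \<in> carrier R. f a \<in> I}" if "a \<in> {a \<in> carrier R. f a \<in> I}" "b \<in> {a \<in> carrier R. f a \<in> I}" for a b
    using that add I.a_closed by auto
  show "r \<otimes>\<^bsub>R\<^esub> a \<in> {a \<in> carrier R. f a \<in> I}" if "a \<in> {a \<in> carrier R. f a \<in> I}" "r \<in> carrier R" for a r
    using that mul cl I.I_l_closed by auto
qed

context nilp
begin

definition Gen :: "nat \<Rightarrow> 'g set \<Rightarrow> 'r set" where
  "Gen d B = {tr B M (c \<otimes>\<^bsub>L M\<^esub> m) | M c m. subgrp_le G M B \<and> c \<in> carrier (L M) \<and> m \<in> Mon d M}"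

definition F :: "nat \<Rightarrow> 'g set \<Rightarrow> 'r set" where
  "F d B = (if sg B then genideal (L B) (Gen d B) else {})"

lemma Gen_carrier: "sg B \<Longrightarrow> Gen d B \<subseteq> carrier (L B)"
proof
  fix z assume B: "sg B" and z: "z \<in> Gen d B"
  then obtain M c m where z: "z = tr B M (c \<otimes>\<^bsub>L M\<^esub> m)" "subgrp_le G M B" "c \<in> carrier (L M)" "m \<in> Mon d M"
    unfolding Gen_def by blast
  have M: "sg M" using sgle_D[OF z(2)] by auto
  interpret cring "L M" using cring_L[OF M] .
  have "c \<otimes>\<^bsub>L M\<^esub> m \<in> carrier (L M)" using z(3) Mon_carrier[OF M z(4)] by simp
  then show "z \<in> carrier (L B)" using tr_carrier[OF z(2)] z(1) by simp
qed

lemma F_ideal: "sg B \<Longrightarrow> ideal (F d B) (L B)"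
  unfolding F_def using ring.genideal_ideal[OF cring.axioms(1)[OF cring_L] Gen_carrier] by simp

lemma Gen_F: "sg B \<Longrightarrow> Gen d B \<subseteq> F d B"
  unfolding F_def using ring.genideal_self[OF cring.axioms(1)[OF cring_L] Gen_carrier] by simp

lemma F_min: "sg B \<Longrightarrow> ideal Y (L B) \<Longrightarrow> Gen d B \<subseteq> Y \<Longrightarrow> F d B \<subseteq> Y"
  unfolding F_def using ring.genideal_minimal[OF cring.axioms(1)[OF cring_L]] by simp

lemma F_carrier: "sg B \<Longrightarrow> F d B \<subseteq> carrier (L B)"
  by (rule additive_subgroup.a_subset[OF ideal.axioms(1)[OF F_ideal]])

lemma F_empty: "\<not> sg B \<Longrightarrow> F d B = {}"
  unfolding F_def by simp

lemma F_add: "sg B \<Longrightarrow> a \<in> F d B \<Longrightarrow> b \<in> F d B \<Longrightarrow> a \<oplus>\<^bsub>L B\<^esub> b \<in> F d B"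
  by (rule additive_subgroup.a_closed[OF ideal.axioms(1)[OF F_ideal]])

lemma F_lmult: "sg B \<Longrightarrow> a \<in> F d B \<Longrightarrow> r \<in> carrier (L B) \<Longrightarrow> r \<otimes>\<^bsub>L B\<^esub> a \<in> F d B"
  by (rule ideal.I_l_closed[OF F_ideal])

lemma F_rmult: "sg B \<Longrightarrow> a \<in> F d B \<Longrightarrow> r \<in> carrier (L B) \<Longrightarrow> a \<otimes>\<^bsub>L B\<^esub> r \<in> F d B"
  by (rule ideal.I_r_closed[OF F_ideal])

lemma F_zero: "sg B \<Longrightarrow> \<zero>\<^bsub>L B\<^esub> \<in> F d B"
  by (rule additive_subgroup.zero_closed[OF ideal.axioms(1)[OF F_ideal]])

lemma Gen_I: "subgrp_le G M B \<Longrightarrow> c \<in> carrier (L M) \<Longrightarrow> m \<in> Mon d M \<Longrightarrow> tr B M (c \<otimes>\<^bsub>L M\<^esub> m) \<in> F d B"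
proof -
  assume a: "subgrp_le G M B" "c \<in> carrier (L M)" "m \<in> Mon d M"
  have B: "sg B" using sgle_D[OF a(1)] by auto
  have "tr B M (c \<otimes>\<^bsub>L M\<^esub> m) \<in> Gen d B" unfolding Gen_def using a by blast
  then show ?thesis using Gen_F[OF B] by blast
qed

lemma Gen_simple: "sg B \<Longrightarrow> c \<in> carrier (L B) \<Longrightarrow> m \<in> Mon d B \<Longrightarrow> c \<otimes>\<^bsub>L B\<^esub> m \<in> F d B"
proof -
  assume B: "sg B" and c: "c \<in> carrier (L B)" and m: "m \<in> Mon d B"
  interpret cring "L B" using cring_L[OF B] .
  have "c \<otimes>\<^bsub>L B\<^esub> m \<in> carrier (L B)" using c Mon_carrier[OF B m] by simp
  then have "tr B B (c \<otimes>\<^bsub>L B\<^esub> m) = c \<otimes>\<^bsub>L B\<^esub> m" using tr_id[OF B] by blast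
  then show ?thesis using Gen_I[OF sgle_refl[OF B] c m] by simp
qed

lemma F_tr: "subgrp_le G B B2 \<Longrightarrow> a \<in> F d B \<Longrightarrow> tr B2 B a \<in> F d B2"
proof -
  assume BB: "subgrp_le G B B2" and a: "a \<in> F d B"
  have B: "sg B" and B2: "sg B2" using sgle_D[OF BB] by auto
  interpret RB: cring "L B" using cring_L[OF B] .
  interpret RB2: cring "L B2" using cring_L[OF B2] .
  define Y where "Y = {a \<in> carrier (L B). \<forall>r\<in>carrier (L B). tr B2 B (r \<otimes>\<^bsub>L B\<^esub> a) \<in> F d B2}"
  have "ideal Y (L B)"
  proof (rule cring_idealI[OF cring_L[OF B]])
    show "Y \<subseteq> carrier (L B)" unfolding Y_def by blast
    show "\<zero>\<^bsub>L B\<^esub> \<in> Y" unfolding Y_def using tr_zero[OF BB] F_zero[OF B2] by simp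
    show "a \<oplus>\<^bsub>L B\<^esub> b \<in> Y" if "a \<in> Y" "b \<in> Y" for a b
    proof -
      have "tr B2 B (r \<otimes>\<^bsub>L B\<^esub> (a \<oplus>\<^bsub>L B\<^esub> b)) \<in> F d B2" if r: "r \<in> carrier (L B)" for r
      proof -
        have c: "a \<in> carrier (L B)" "b \<in> carrier (L B)" using \<open>a \<in> Y\<close> \<open>b \<in> Y\<close> unfolding Y_def by auto
        have "tr B2 B (r \<otimes>\<^bsub>L B\<^esub> (a \<oplus>\<^bsub>L B\<^esub> b)) = tr B2 B (r \<otimes>\<^bsub>L B\<^esub> a) \<oplus>\<^bsub>L B2\<^esub> tr B2 B (r \<otimes>\<^bsub>L B\<^esub> b)"
          using tr_add[OF BB] r c by (simp add: RB.r_distr)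
        then show ?thesis using F_add[OF B2] \<open>a \<in> Y\<close> \<open>b \<in> Y\<close> r unfolding Y_def by simp
      qed
      then show ?thesis using that unfolding Y_def by simp
    qed
    show "r \<otimes>\<^bsub>L B\<^esub> a \<in> Y" if "a \<in> Y" "r \<in> carrier (L B)" for a r
    proof -
      have c: "a \<in> carrier (L B)" using that unfolding Y_def by auto
      have "tr B2 B (s \<otimes>\<^bsub>L B\<^esub> (r \<otimes>\<^bsub>L B\<^esub> a)) \<in> F d B2" if s: "s \<in> carrier (L B)" for s
        using \<open>a \<in> Y\<close> s \<open>r \<in> carrier (L B)\<close> c unfolding Y_def by (simp add: RB.m_assoc[symmetric])
      then show ?thesis using that c unfolding Y_def by simp
    qed
  qed
  moreover have "Gen d B \<subseteq> Y"
  proof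
    fix z assume "z \<in> Gen d B"
    then obtain M c m where z: "z = tr B M (c \<otimes>\<^bsub>L M\<^esub> m)" "subgrp_le G M B" "c \<in> carrier (L M)" "m \<in> Mon d M"
      unfolding Gen_def by blast
    have M: "sg M" using sgle_D[OF z(2)] by auto
    interpret RM: cring "L M" using cring_L[OF M] .
    have mc: "m \<in> carrier (L M)" using Mon_carrier[OF M z(4)] .
    have zc: "z \<in> carrier (L B)" using Gen_carrier[OF B] \<open>z \<in> Gen d B\<close> by blast
    have "tr B2 B (r \<otimes>\<^bsub>L B\<^esub> z) \<in> F d B2" if r: "r \<in> carrier (L B)" for r
    proof -
      have rr: "res B M r \<in> carrier (L M)" using res_carrier[OF z(2) r] .
      have "r \<otimes>\<^bsub>L B\<^esub> z = tr B M (c \<otimes>\<^bsub>L M\<^esub> m) \<otimes>\<^bsub>L B\<^esub> r" using r zc z(1) RB.m_comm by simp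
      also have "\<dots> = tr B M ((c \<otimes>\<^bsub>L M\<^esub> m) \<otimes>\<^bsub>L M\<^esub> res B M r)" using frob[OF z(2) _ r] z(3) mc by simp
      finally have "tr B2 B (r \<otimes>\<^bsub>L B\<^esub> z) = tr B2 M ((c \<otimes>\<^bsub>L M\<^esub> m) \<otimes>\<^bsub>L M\<^esub> res B M r)"
        using tr_trans[OF z(2) BB] z(3) mc rr by simp
      also have "\<dots> = tr B2 M ((c \<otimes>\<^bsub>L M\<^esub> res B M r) \<otimes>\<^bsub>L M\<^esub> m)"
        using z(3) mc rr by (simp add: RM.m_ac)
      also have "\<dots> \<in> F d B2" using Gen_I[OF sgle_trans[OF z(2) BB] _ z(4)] z(3) rr by simp
      finally show ?thesis .
    qed
    then show "z \<in> Y" unfolding Y_def using zc by blast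
  qed
  ultimately have "F d B \<subseteq> Y" using F_min[OF B] by blast
  then have "tr B2 B (\<one>\<^bsub>L B\<^esub> \<otimes>\<^bsub>L B\<^esub> a) \<in> F d B2" using a unfolding Y_def by auto
  moreover have "a \<in> carrier (L B)" using a F_carrier[OF B] by blast
  ultimately show ?thesis by simp
qed

end


context nilp
begin

lemma F_res: "subgrp_le G B' B \<Longrightarrow> a \<in> F d B \<Longrightarrow> res B B' a \<in> F d B'"
proof -
  assume BB: "subgrp_le G B' B" and a: "a \<in> F d B"
  have B: "sg B" and B': "sg B'" using sgle_D[OF BB] by auto
  have Bc: "B \<subseteq> carrier G" using sg_carrier[OF B] .
  define Y where "Y = {a \<in> carrier (L B). res B B' a \<in> F d B'}"
  have "ideal Y (L B)" unfolding Y_def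
    by (rule ideal_preimage[OF cring_L[OF B] F_ideal[OF B']])
      (use res_zero[OF BB] F_zero[OF B'] res_add[OF BB] res_mult[OF BB] res_carrier[OF BB] in auto)
  moreover have "Gen d B \<subseteq> Y"
  proof
    fix z assume zG: "z \<in> Gen d B"
    then obtain M c m where z: "z = tr B M (c \<otimes>\<^bsub>L M\<^esub> m)" "subgrp_le G M B" "c \<in> carrier (L M)" "m \<in> Mon d M"
      unfolding Gen_def by blast
    have M: "sg M" using sgle_D[OF z(2)] by auto
    interpret RM: cring "L M" using cring_L[OF M] .
    have mc: "m \<in> carrier (L M)" using Mon_carrier[OF M z(4)] .
    have "res B B' (tr B M (c \<otimes>\<^bsub>L M\<^esub> m)) \<in> F d B'"
    proof (rule res_tr_mem[where Z="F d", OF z(2) BB _ F_ideal[OF B']])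
      show "c \<otimes>\<^bsub>L M\<^esub> m \<in> carrier (L M)" using z(3) mc by simp
      show "\<And>M' x. subgrp_le G M' B' \<Longrightarrow> x \<in> F d M' \<Longrightarrow> tr B' M' x \<in> F d B'" using F_tr by blast
      fix q assume q: "q \<in> B"
      have qc: "q \<in> carrier G" using q Bc by auto
      have cM: "sg (conjsub G q M)" using conjsub_subgroup[OF M qc] .
      define A where "A = B' \<inter> conjsub G q M"
      have le: "subgrp_le G A (conjsub G q M)" unfolding A_def using sgle_Int_right[OF B' cM] .
      have A: "sg A" using sgle_D[OF le] by auto
      have cjc: "cj q M c \<in> carrier (L (conjsub G q M))" using cj_carrier[OF qc M z(3)] .
      have cjm: "cj q M m \<in> carrier (L (conjsub G q M))" using cj_carrier[OF qc M mc] .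
      have "res (conjsub G q M) A (cj q M (c \<otimes>\<^bsub>L M\<^esub> m)) = res (conjsub G q M) A (cj q M c) \<otimes>\<^bsub>L A\<^esub> res (conjsub G q M) A (cj q M m)"
        using cj_mult[OF qc M z(3) mc] res_mult[OF le cjc cjm] by simp
      also have "\<dots> \<in> F d A"
        by (rule Gen_simple[OF A res_carrier[OF le cjc] Mon_res[OF le Mon_cj[OF qc M z(4)]]])
      finally show "res (conjsub G q M) (B' \<inter> conjsub G q M) (cj q M (c \<otimes>\<^bsub>L M\<^esub> m)) \<in> F d (B' \<inter> conjsub G q M)"
        unfolding A_def .
    qed
    then show "z \<in> Y" unfolding Y_def using z(1) Gen_carrier[OF B] zG by blast
  qed
  ultimately have "F d B \<subseteq> Y" using F_min[OF B] by blast
  then show ?thesis using a unfolding Y_def by blast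
qed

lemma F_cj: "g \<in> carrier G \<Longrightarrow> sg B \<Longrightarrow> a \<in> F d B \<Longrightarrow> cj g B a \<in> F d (conjsub G g B)"
proof -
  assume g: "g \<in> carrier G" and B: "sg B" and a: "a \<in> F d B"
  have gB: "sg (conjsub G g B)" using conjsub_subgroup[OF B g] .
  define Y where "Y = {a \<in> carrier (L B). cj g B a \<in> F d (conjsub G g B)}"
  have "ideal Y (L B)" unfolding Y_def
    by (rule ideal_preimage[OF cring_L[OF B] F_ideal[OF gB]])
      (use cj_zero[OF g B] F_zero[OF gB] cj_add[OF g B] cj_mult[OF g B] cj_carrier[OF g B] in auto)
  moreover have "Gen d B \<subseteq> Y"
  proof
    fix z assume zG: "z \<in> Gen d B"
    then obtain M c m where z: "z = tr B M (c \<otimes>\<^bsub>L M\<^esub> m)" "subgrp_le G M B" "c \<in> carrier (L M)" "m \<in> Mon d M"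
      unfolding Gen_def by blast
    have M: "sg M" using sgle_D[OF z(2)] by auto
    interpret RM: cring "L M" using cring_L[OF M] .
    have mc: "m \<in> carrier (L M)" using Mon_carrier[OF M z(4)] .
    have "cj g B z = tr (conjsub G g B) (conjsub G g M) (cj g M (c \<otimes>\<^bsub>L M\<^esub> m))"
      unfolding z(1) using cj_tr[OF g z(2)] z(3) mc by simp
    also have "\<dots> = tr (conjsub G g B) (conjsub G g M) (cj g M c \<otimes>\<^bsub>L (conjsub G g M)\<^esub> cj g M m)"
      using cj_mult[OF g M z(3) mc] by simp
    also have "\<dots> \<in> F d (conjsub G g B)"
      by (rule Gen_I[OF conjsub_le[OF z(2) g] cj_carrier[OF g M z(3)] Mon_cj[OF g M z(4)]])
    finally show "z \<in> Y" unfolding Y_def using Gen_carrier[OF B] zG by blast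
  qed
  ultimately have "F d B \<subseteq> Y" using F_min[OF B] by blast
  then show ?thesis using a unfolding Y_def by blast
qed

end


context nilp
begin

lemma F_nm_aux: "\<forall>B2 B a. card B2 = n \<longrightarrow> subgrp_le G B B2 \<longrightarrow> a \<in> F d B \<longrightarrow> nm B2 B a \<in> F d B2"
proof (induction n rule: less_induct)
  case (less n)
  show ?case
  proof (intro allI impI)
    fix B2 B a assume cB2: "card B2 = n" and BB: "subgrp_le G B B2" and a: "a \<in> F d B"
    have B: "sg B" and B2: "sg B2" and BB2: "B \<subseteq> B2" using sgle_D[OF BB] by auto
    have Bc: "B \<subseteq> carrier G" and B2c: "B2 \<subseteq> carrier G" using sg_carrier B B2 by auto
    have finB2: "finite B2" using finite_subset[OF B2c finG] .
    interpret RB: cring "L B" using cring_L[OF B] .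
    interpret RB2: cring "L B2" using cring_L[OF B2] .
    define Y where "Y = {a \<in> F d B. nm B2 B a \<in> F d B2}"
    have Xid: "\<And>M. subgrp_le G M B2 \<Longrightarrow> ideal (F d M) (L M)" using F_ideal sgle_D by blast
    have Xtr: "\<And>M x. subgrp_le G M B2 \<Longrightarrow> x \<in> F d M \<Longrightarrow> tr B2 M x \<in> F d B2" using F_tr by blast
    have "ideal Y (L B)"
    proof (rule cring_idealI[OF cring_L[OF B]])
      show "Y \<subseteq> carrier (L B)" unfolding Y_def using F_carrier[OF B] by blast
      show "\<zero>\<^bsub>L B\<^esub> \<in> Y" unfolding Y_def using F_zero[OF B] F_zero[OF B2] nm_zero[OF BB] by simp
      show "r \<otimes>\<^bsub>L B\<^esub> a \<in> Y" if "a \<in> Y" "r \<in> carrier (L B)" for a r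
      proof -
        have ac: "a \<in> carrier (L B)" using that F_carrier[OF B] unfolding Y_def by blast
        have "nm B2 B (r \<otimes>\<^bsub>L B\<^esub> a) = nm B2 B r \<otimes>\<^bsub>L B2\<^esub> nm B2 B a" using nm_mult[OF BB that(2) ac] .
        also have "\<dots> \<in> F d B2" using F_lmult[OF B2] that nm_carrier[OF BB] unfolding Y_def by blast
        finally show ?thesis using F_lmult[OF B] that unfolding Y_def by blast
      qed
      show "a \<oplus>\<^bsub>L B\<^esub> b \<in> Y" if ab: "a \<in> Y" "b \<in> Y" for a b
      proof -
        have aY: "a \<in> F d B" "nm B2 B a \<in> F d B2" and bY: "b \<in> F d B" "nm B2 B b \<in> F d B2" using ab unfolding Y_def by auto
        have ac: "a \<in> carrier (L B)" and bc: "b \<in> carrier (L B)" using aY bY F_carrier[OF B] by auto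
        have "nm B2 B (a \<oplus>\<^bsub>L B\<^esub> b) \<in> F d B2"
        proof (rule nm_sum_mem[where Z="F d", OF BB ac bc Xid Xtr])
          fix S Q assume S: "S \<subseteq> lcosetsK G B2 B" and Q: "dreps G B2 (substab G B2 S) B Q"
          define St where "St = substab G B2 S"
          have St: "sg St" "St \<subseteq> B2" using substab_sg[OF B2 Bc S] unfolding St_def by auto
          obtain q where q: "q \<in> Q" using dreps_nonempty[OF Q B2] by blast
          have qB2: "q \<in> B2" using dreps_sub[OF Q] q by auto
          have qc: "q \<in> carrier G" using qB2 B2c by auto
          define y where "y = (if lco G q B \<in> S then a else b)"
          have yF: "y \<in> F d B" and ynm: "nm B2 B y \<in> F d B2" using aY bY unfolding y_def by auto
          have yc: "y \<in> carrier (L B)" using yF F_carrier[OF B] by auto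
          have cB: "sg (conjsub G q B)" using conjsub_subgroup[OF B qc] .
          have cyc: "cj q B y \<in> carrier (L (conjsub G q B))" using cj_carrier[OF qc B yc] .
          have "nm St (St \<inter> conjsub G q B) (res (conjsub G q B) (St \<inter> conjsub G q B) (cj q B y)) \<in> F d St"
          proof (cases "St = B2")
            case True
            have "conjsub G q B \<subseteq> conjsub G q B2" using conjsub_mono[OF BB2] .
            also have "\<dots> = B2" using conjsub_self[OF B2 qB2] .
            finally have sub: "conjsub G q B \<subseteq> B2" .
            then have e1: "B2 \<inter> conjsub G q B = conjsub G q B" by blast
            have e2: "res (conjsub G q B) (conjsub G q B) (cj q B y) = cj q B y" using res_id[OF cB cyc] .
            have "cj q B2 (nm B2 B y) = nm (conjsub G q B2) (conjsub G q B) (cj q B y)" using cj_nm[OF qc BB yc] .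
            moreover have "cj q B2 (nm B2 B y) = nm B2 B y" using cj_triv[OF B2 qB2 nm_carrier[OF BB yc]] .
            ultimately have "nm B2 (conjsub G q B) (cj q B y) = nm B2 B y" using conjsub_self[OF B2 qB2] by simp
            then show ?thesis unfolding True e1 e2 using ynm by simp
          next
            case False
            then have "St \<subset> B2" using St by blast
            then have lt: "card St < n" using psubset_card_mono[OF finB2] cB2 by blast
            define A where "A = St \<inter> conjsub G q B"
            have le1: "subgrp_le G A (conjsub G q B)" unfolding A_def using sgle_Int_right[OF St(1) cB] .
            have le2: "subgrp_le G A St" unfolding A_def using sgle_Int_left[OF St(1) cB] .
            have "res (conjsub G q B) A (cj q B y) \<in> F d A" using F_res[OF le1 F_cj[OF qc B yF]] .
            then show ?thesis using less.IH[OF lt] le2 unfolding A_def by blast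
          qed
          then show "\<exists>q\<in>Q. nm (substab G B2 S) (substab G B2 S \<inter> conjsub G q B)
                  (res (conjsub G q B) (substab G B2 S \<inter> conjsub G q B)
                     (cj q B (if lco G q B \<in> S then a else b))) \<in> F d (substab G B2 S)"
            using q unfolding St_def y_def by blast
        qed
        then show ?thesis using F_add[OF B aY(1) bY(1)] unfolding Y_def by blast
      qed
    qed
    moreover have "Gen d B \<subseteq> Y"
    proof
      fix z assume zG: "z \<in> Gen d B"
      then obtain M c m where z: "z = tr B M (c \<otimes>\<^bsub>L M\<^esub> m)" "subgrp_le G M B" "c \<in> carrier (L M)" "m \<in> Mon d M"
        unfolding Gen_def by blast
      have M: "sg M" using sgle_D[OF z(2)] by auto
      have Mc: "M \<subseteq> carrier G" using sg_carrier[OF M] .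
      interpret RM: cring "L M" using cring_L[OF M] .
      have mc: "m \<in> carrier (L M)" using Mon_carrier[OF M z(4)] .
      have "nm B2 B (tr B M (c \<otimes>\<^bsub>L M\<^esub> m)) \<in> F d B2"
      proof (rule nm_tr_mem[where Z="F d", OF z(2) BB _ Xid Xtr])
        show "c \<otimes>\<^bsub>L M\<^esub> m \<in> carrier (L M)" using z(3) mc by simp
        fix s Q xf assume s: "s \<in> sections G B2 B M" and Q: "dreps G B2 (secstab G B2 B s) B Q"
          and xf: "\<forall>q\<in>Q. xf q \<in> s (lco G q B)"
        define St where "St = secstab G B2 B s"
        have St: "sg St" "St \<subseteq> B2" using secstab_sg[OF B2 BB2 Mc s] unfolding St_def by auto
        obtain q where q: "q \<in> Q" using dreps_nonempty[OF Q B2] by blast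
        have qB2: "q \<in> B2" using dreps_sub[OF Q] q by auto
        have qc: "q \<in> carrier G" using qB2 B2c by auto
        have xq: "xf q \<in> s (lco G q B)" using xf q by blast
        have xc: "xf q \<in> carrier G" using sections_xf_carrier[OF B2 BB2 B M s qB2 xq] .
        have incl: "St \<inter> conjsub G q B \<subseteq> conjsub G (xf q) M"
          using secstab_incl[OF B2 BB2 B M s qB2 xq] unfolding St_def by blast
        have cB: "sg (conjsub G q B)" using conjsub_subgroup[OF B qc] .
        have cM: "sg (conjsub G (xf q) M)" using conjsub_subgroup[OF M xc] .
        define A where "A = St \<inter> conjsub G q B"
        have A: "sg A" unfolding A_def using sg_Int[OF St(1) cB] .
        have le1: "subgrp_le G A (conjsub G (xf q) M)" using sgle_I[OF A cM] incl unfolding A_def by blast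
        have le2: "subgrp_le G A St" unfolding A_def using sgle_Int_left[OF St(1) cB] .
        have cjc: "cj (xf q) M c \<in> carrier (L (conjsub G (xf q) M))" using cj_carrier[OF xc M z(3)] .
        have cjm: "cj (xf q) M m \<in> carrier (L (conjsub G (xf q) M))" using cj_carrier[OF xc M mc] .
        have rc: "res (conjsub G (xf q) M) A (cj (xf q) M c) \<in> carrier (L A)" using res_carrier[OF le1 cjc] .
        have rm: "res (conjsub G (xf q) M) A (cj (xf q) M m) \<in> carrier (L A)" using res_carrier[OF le1 cjm] .
        have "nm St A (res (conjsub G (xf q) M) A (cj (xf q) M (c \<otimes>\<^bsub>L M\<^esub> m)))
            = nm St A (res (conjsub G (xf q) M) A (cj (xf q) M c)) \<otimes>\<^bsub>L St\<^esub> nm St A (res (conjsub G (xf q) M) A (cj (xf q) M m))"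
          using cj_mult[OF xc M z(3) mc] res_mult[OF le1 cjc cjm] nm_mult[OF le2 rc rm] by simp
        also have "\<dots> \<in> F d St"
          by (rule Gen_simple[OF St(1) nm_carrier[OF le2 rc] Mon_nm[OF le2 Mon_res[OF le1 Mon_cj[OF xc M z(4)]]]])
        finally show "\<exists>q\<in>Q. nm (secstab G B2 B s) (secstab G B2 B s \<inter> conjsub G q B)
                  (res (conjsub G (xf q) M) (secstab G B2 B s \<inter> conjsub G q B)
                     (cj (xf q) M (c \<otimes>\<^bsub>L M\<^esub> m))) \<in> F d (secstab G B2 B s)"
          using q unfolding A_def St_def by blast
      qed
      then show "z \<in> Y" unfolding Y_def using z(1) Gen_F[OF B] zG by blast
    qed
    ultimately have "F d B \<subseteq> Y" using F_min[OF B] by blast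
    then show "nm B2 B a \<in> F d B2" using a unfolding Y_def by blast
  qed
qed

lemma F_nm: "subgrp_le G B B2 \<Longrightarrow> a \<in> F d B \<Longrightarrow> nm B2 B a \<in> F d B2"
  using F_nm_aux by blast

lemma F_tideal: "tideal G T (F d)"
proof (rule tidealI)
  show "\<And>H. sg H \<Longrightarrow> ideal (F d H) (L H)" by (rule F_ideal)
  show "\<And>H. \<not> sg H \<Longrightarrow> F d H = {}" by (rule F_empty)
  show "\<And>H K x. subgrp_le G H K \<Longrightarrow> x \<in> F d K \<Longrightarrow> res K H x \<in> F d H" by (rule F_res)
  show "\<And>H K x. subgrp_le G H K \<Longrightarrow> x \<in> F d H \<Longrightarrow> tr K H x \<in> F d K" by (rule F_tr)
  show "\<And>H K x. subgrp_le G H K \<Longrightarrow> x \<in> F d H \<Longrightarrow> nm K H x \<in> F d K" by (rule F_nm)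
  show "\<And>g H x. g \<in> carrier G \<Longrightarrow> sg H \<Longrightarrow> x \<in> F d H \<Longrightarrow> cj g H x \<in> F d (conjsub G g H)" by (rule F_cj)
qed

end


context nilp
begin

lemma F_mult_gen:
  assumes B: "sg B" and z1: "z1 \<in> Gen d B" and z2: "z2 \<in> Gen e B"
  shows "z1 \<otimes>\<^bsub>L B\<^esub> z2 \<in> F (d + e) B"
proof -
  obtain M c m where zz1: "z1 = tr B M (c \<otimes>\<^bsub>L M\<^esub> m)" "subgrp_le G M B" "c \<in> carrier (L M)" "m \<in> Mon d M"
    using z1 unfolding Gen_def by blast
  obtain M' c' m' where zz2: "z2 = tr B M' (c' \<otimes>\<^bsub>L M'\<^esub> m')" "subgrp_le G M' B" "c' \<in> carrier (L M')" "m' \<in> Mon e M'"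
    using z2 unfolding Gen_def by blast
  have M: "sg M" and M': "sg M'" using sgle_D[OF zz1(2)] sgle_D[OF zz2(2)] by auto
  have Bc: "B \<subseteq> carrier G" using sg_carrier[OF B] .
  interpret RB: cring "L B" using cring_L[OF B] .
  interpret RM: cring "L M" using cring_L[OF M] .
  interpret RM': cring "L M'" using cring_L[OF M'] .
  have mc: "m \<in> carrier (L M)" using Mon_carrier[OF M zz1(4)] .
  have m'c: "m' \<in> carrier (L M')" using Mon_carrier[OF M' zz2(4)] .
  define u where "u = c \<otimes>\<^bsub>L M\<^esub> m"
  have uc: "u \<in> carrier (L M)" unfolding u_def using zz1(3) mc by simp
  define Z where "Z A = {w \<in> carrier (L A). res M A u \<otimes>\<^bsub>L A\<^esub> w \<in> F (d + e) A}" for A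
  have resMu: "res M M u = u" using res_id[OF M uc] .
  have z2c: "z2 \<in> carrier (L B)" using Gen_carrier[OF B] z2 by blast
  have "res B M (tr B M' (c' \<otimes>\<^bsub>L M'\<^esub> m')) \<in> Z M"
  proof (rule res_tr_mem[where Z=Z, OF zz2(2) zz1(2)])
    show "c' \<otimes>\<^bsub>L M'\<^esub> m' \<in> carrier (L M')" using zz2(3) m'c by simp
    show "ideal (Z M) (L M)"
    proof (rule cring_idealI[OF cring_L[OF M]])
      show "Z M \<subseteq> carrier (L M)" unfolding Z_def by blast
      show "\<zero>\<^bsub>L M\<^esub> \<in> Z M" unfolding Z_def resMu using uc F_zero[OF M] by simp
      show "a \<oplus>\<^bsub>L M\<^esub> b \<in> Z M" if "a \<in> Z M" "b \<in> Z M" for a b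
        using that F_add[OF M] uc unfolding Z_def resMu by (simp add: RM.r_distr)
      show "r \<otimes>\<^bsub>L M\<^esub> a \<in> Z M" if "a \<in> Z M" "r \<in> carrier (L M)" for a r
      proof -
        have ac: "a \<in> carrier (L M)" and aZ: "u \<otimes>\<^bsub>L M\<^esub> a \<in> F (d + e) M" using that unfolding Z_def resMu by auto
        have "u \<otimes>\<^bsub>L M\<^esub> (r \<otimes>\<^bsub>L M\<^esub> a) = r \<otimes>\<^bsub>L M\<^esub> (u \<otimes>\<^bsub>L M\<^esub> a)" using uc ac that(2) by (simp add: RM.m_lcomm)
        then show ?thesis using F_lmult[OF M aZ that(2)] ac that(2) unfolding Z_def resMu by simp
      qed
    qed
    show "tr M A w \<in> Z M" if A: "subgrp_le G A M" and w: "w \<in> Z A" for A w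
    proof -
      have Asg: "sg A" using sgle_D[OF A] by auto
      interpret RA: cring "L A" using cring_L[OF Asg] .
      have wc: "w \<in> carrier (L A)" and wZ: "res M A u \<otimes>\<^bsub>L A\<^esub> w \<in> F (d + e) A" using w unfolding Z_def by auto
      have ru: "res M A u \<in> carrier (L A)" using res_carrier[OF A uc] .
      have "u \<otimes>\<^bsub>L M\<^esub> tr M A w = tr M A w \<otimes>\<^bsub>L M\<^esub> u" using uc tr_carrier[OF A wc] RM.m_comm by simp
      also have "\<dots> = tr M A (w \<otimes>\<^bsub>L A\<^esub> res M A u)" using frob[OF A wc uc] by simp
      also have "\<dots> = tr M A (res M A u \<otimes>\<^bsub>L A\<^esub> w)" using wc ru RA.m_comm by simp
      also have "\<dots> \<in> F (d + e) M" using F_tr[OF A wZ] .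
      finally show ?thesis unfolding Z_def resMu using tr_carrier[OF A wc] by simp
    qed
    fix q assume q: "q \<in> B"
    have qc: "q \<in> carrier G" using q Bc by auto
    have cM': "sg (conjsub G q M')" using conjsub_subgroup[OF M' qc] .
    define A where "A = M \<inter> conjsub G q M'"
    have le1: "subgrp_le G A (conjsub G q M')" unfolding A_def using sgle_Int_right[OF M cM'] .
    have le2: "subgrp_le G A M" unfolding A_def using sgle_Int_left[OF M cM'] .
    have Asg: "sg A" using sgle_D[OF le1] by auto
    interpret RA: cring "L A" using cring_L[OF Asg] .
    have cjc: "cj q M' c' \<in> carrier (L (conjsub G q M'))" using cj_carrier[OF qc M' zz2(3)] .
    have cjm: "cj q M' m' \<in> carrier (L (conjsub G q M'))" using cj_carrier[OF qc M' m'c] .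
    define r1 where "r1 = res (conjsub G q M') A (cj q M' c')"
    define r2 where "r2 = res (conjsub G q M') A (cj q M' m')"
    have r1c: "r1 \<in> carrier (L A)" unfolding r1_def using res_carrier[OF le1 cjc] .
    have r2c: "r2 \<in> carrier (L A)" unfolding r2_def using res_carrier[OF le1 cjm] .
    have r2M: "r2 \<in> Mon e A" unfolding r2_def using Mon_res[OF le1 Mon_cj[OF qc M' zz2(4)]] .
    have rcc: "res M A c \<in> carrier (L A)" using res_carrier[OF le2 zz1(3)] .
    have rmc: "res M A m \<in> carrier (L A)" using res_carrier[OF le2 mc] .
    have rmM: "res M A m \<in> Mon d A" using Mon_res[OF le2 zz1(4)] .
    have e1: "res (conjsub G q M') A (cj q M' (c' \<otimes>\<^bsub>L M'\<^esub> m')) = r1 \<otimes>\<^bsub>L A\<^esub> r2"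
      unfolding r1_def r2_def using cj_mult[OF qc M' zz2(3) m'c] res_mult[OF le1 cjc cjm] by simp
    have e2: "res M A u = res M A c \<otimes>\<^bsub>L A\<^esub> res M A m" unfolding u_def using res_mult[OF le2 zz1(3) mc] .
    have "res M A u \<otimes>\<^bsub>L A\<^esub> (r1 \<otimes>\<^bsub>L A\<^esub> r2) = (res M A c \<otimes>\<^bsub>L A\<^esub> r1) \<otimes>\<^bsub>L A\<^esub> (res M A m \<otimes>\<^bsub>L A\<^esub> r2)"
      unfolding e2 using rcc rmc r1c r2c by (simp add: RA.m_ac)
    also have "\<dots> \<in> F (d + e) A"
      by (rule Gen_simple[OF Asg _ Mon_mult[OF Asg rmM r2M]]) (use rcc r1c in simp)
    finally have "res M A u \<otimes>\<^bsub>L A\<^esub> (r1 \<otimes>\<^bsub>L A\<^esub> r2) \<in> F (d + e) A" .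
    then show "res (conjsub G q M') (M \<inter> conjsub G q M') (cj q M' (c' \<otimes>\<^bsub>L M'\<^esub> m')) \<in> Z (M \<inter> conjsub G q M')"
      unfolding Z_def A_def[symmetric] e1 using r1c r2c by simp
  qed
  then have W: "u \<otimes>\<^bsub>L M\<^esub> res B M z2 \<in> F (d + e) M" unfolding Z_def resMu zz2(1)[symmetric] by simp
  have rz2: "res B M z2 \<in> carrier (L M)" using res_carrier[OF zz1(2) z2c] .
  have "z1 \<otimes>\<^bsub>L B\<^esub> z2 = tr B M (u \<otimes>\<^bsub>L M\<^esub> res B M z2)" unfolding zz1(1) u_def[symmetric]
    using frob[OF zz1(2) uc z2c] by simp
  also have "\<dots> \<in> F (d + e) B" using F_tr[OF zz1(2) W] .
  finally show ?thesis .
qed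

lemma F_mult:
  assumes B: "sg B" and a: "a \<in> F d B" and b: "b \<in> F e B"
  shows "a \<otimes>\<^bsub>L B\<^esub> b \<in> F (d + e) B"
proof -
  interpret RB: cring "L B" using cring_L[OF B] .
  define Y1 where "Y1 = {a \<in> carrier (L B). \<forall>b\<in>F e B. a \<otimes>\<^bsub>L B\<^esub> b \<in> F (d + e) B}"
  have "ideal Y1 (L B)"
  proof (rule cring_idealI[OF cring_L[OF B]])
    show "Y1 \<subseteq> carrier (L B)" unfolding Y1_def by blast
    have "\<zero>\<^bsub>L B\<^esub> \<otimes>\<^bsub>L B\<^esub> b \<in> F (d + e) B" if "b \<in> F e B" for b
    proof -
      have "b \<in> carrier (L B)" using F_carrier[OF B] that by blast
      then show ?thesis using F_zero[OF B] by simp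
    qed
    then show "\<zero>\<^bsub>L B\<^esub> \<in> Y1" unfolding Y1_def by simp
    show "a \<oplus>\<^bsub>L B\<^esub> a' \<in> Y1" if aa: "a \<in> Y1" "a' \<in> Y1" for a a'
    proof -
      have ac: "a \<in> carrier (L B)" "a' \<in> carrier (L B)" using aa unfolding Y1_def by auto
      have "(a \<oplus>\<^bsub>L B\<^esub> a') \<otimes>\<^bsub>L B\<^esub> b \<in> F (d + e) B" if b: "b \<in> F e B" for b
      proof -
        have bc: "b \<in> carrier (L B)" using F_carrier[OF B] b by blast
        have "(a \<oplus>\<^bsub>L B\<^esub> a') \<otimes>\<^bsub>L B\<^esub> b = a \<otimes>\<^bsub>L B\<^esub> b \<oplus>\<^bsub>L B\<^esub> a' \<otimes>\<^bsub>L B\<^esub> b"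
          using ac bc by (simp add: RB.l_distr)
        then show ?thesis using F_add[OF B] aa b unfolding Y1_def by auto
      qed
      then show ?thesis using ac unfolding Y1_def by simp
    qed
    show "r \<otimes>\<^bsub>L B\<^esub> a \<in> Y1" if aa: "a \<in> Y1" "r \<in> carrier (L B)" for a r
    proof -
      have ac: "a \<in> carrier (L B)" using aa unfolding Y1_def by auto
      have "(r \<otimes>\<^bsub>L B\<^esub> a) \<otimes>\<^bsub>L B\<^esub> b \<in> F (d + e) B" if b: "b \<in> F e B" for b
      proof -
        have bc: "b \<in> carrier (L B)" using F_carrier[OF B] b by blast
        have "(r \<otimes>\<^bsub>L B\<^esub> a) \<otimes>\<^bsub>L B\<^esub> b = r \<otimes>\<^bsub>L B\<^esub> (a \<otimes>\<^bsub>L B\<^esub> b)"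
          using ac bc aa(2) by (simp add: RB.m_assoc)
        then show ?thesis using F_lmult[OF B] aa b unfolding Y1_def by auto
      qed
      then show ?thesis using ac aa(2) unfolding Y1_def by simp
    qed
  qed
  moreover have "Gen d B \<subseteq> Y1"
  proof
    fix z1 assume z1: "z1 \<in> Gen d B"
    have z1c: "z1 \<in> carrier (L B)" using Gen_carrier[OF B] z1 by blast
    define Y2 where "Y2 = {b \<in> carrier (L B). z1 \<otimes>\<^bsub>L B\<^esub> b \<in> F (d + e) B}"
    have "ideal Y2 (L B)"
    proof (rule cring_idealI[OF cring_L[OF B]])
      show "Y2 \<subseteq> carrier (L B)" unfolding Y2_def by blast
      show "\<zero>\<^bsub>L B\<^esub> \<in> Y2" unfolding Y2_def using F_zero[OF B] z1c by auto
      show "a \<oplus>\<^bsub>L B\<^esub> a' \<in> Y2" if "a \<in> Y2" "a' \<in> Y2" for a a'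
        using that F_add[OF B] z1c unfolding Y2_def by (auto simp: RB.r_distr)
      show "r \<otimes>\<^bsub>L B\<^esub> a \<in> Y2" if "a \<in> Y2" "r \<in> carrier (L B)" for a r
      proof -
        have "z1 \<otimes>\<^bsub>L B\<^esub> (r \<otimes>\<^bsub>L B\<^esub> a) = r \<otimes>\<^bsub>L B\<^esub> (z1 \<otimes>\<^bsub>L B\<^esub> a)" using that z1c unfolding Y2_def by (auto simp: RB.m_lcomm)
        then show ?thesis using that F_lmult[OF B] unfolding Y2_def by auto
      qed
    qed
    moreover have "Gen e B \<subseteq> Y2" unfolding Y2_def using F_mult_gen[OF B z1] Gen_carrier[OF B] by blast
    ultimately have "F e B \<subseteq> Y2" using F_min[OF B] by blast
    then show "z1 \<in> Y1" unfolding Y1_def Y2_def using z1c by blast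
  qed
  ultimately have "F d B \<subseteq> Y1" using F_min[OF B] by blast
  then show ?thesis using a b unfolding Y1_def by blast
qed

lemma x0_F: "x0 \<in> F 1 H0"
proof -
  interpret cring "L H0" using cring_L[OF H0] .
  have "\<one>\<^bsub>L H0\<^esub> \<otimes>\<^bsub>L H0\<^esub> x0 \<in> F 1 H0" using Gen_simple[OF H0 one_closed Mon_x0] .
  then show ?thesis using x0 by simp
qed

lemma tpow_le_F: "tpow G T (tprinc G T H0 x0) n \<le> F (Suc n)"
proof (induction n)
  case 0
  show ?case using tprinc_le[OF F_tideal x0_F] by simp
next
  case (Suc n)
  have "tprod G T (tpow G T (tprinc G T H0 x0) n) (tprinc G T H0 x0) \<le> F (Suc n + 1)"
  proof (rule tprod_le[OF F_tideal])
    fix H a b assume a: "a \<in> tpow G T (tprinc G T H0 x0) n H" and b: "b \<in> tprinc G T H0 x0 H"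
    have aF: "a \<in> F (Suc n) H" using a Suc unfolding le_fun_def by blast
    have bF: "b \<in> F 1 H" using b tprinc_le[OF F_tideal x0_F] unfolding le_fun_def by blast
    have H: "sg H" using aF F_empty by blast
    show "a \<otimes>\<^bsub>L H\<^esub> b \<in> F (Suc n + 1) H" using F_mult[OF H aF bF] .
  qed
  then show ?case by simp
qed

lemma F_Dk_zero: "x0 [^]\<^bsub>L H0\<^esub> (k::nat) = \<zero>\<^bsub>L H0\<^esub> \<Longrightarrow> F (Dk k) \<le> tzero G T"
proof (unfold le_fun_def, intro allI)
  fix B assume k: "x0 [^]\<^bsub>L H0\<^esub> (k::nat) = \<zero>\<^bsub>L H0\<^esub>"
  show "F (Dk k) B \<subseteq> tzero G T B"
  proof (cases "sg B")
    case True
    interpret RB: cring "L B" using cring_L[OF True] .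
    have "Gen (Dk k) B \<subseteq> {\<zero>\<^bsub>L B\<^esub>}"
    proof
      fix z assume "z \<in> Gen (Dk k) B"
      then obtain M c m where z: "z = tr B M (c \<otimes>\<^bsub>L M\<^esub> m)" "subgrp_le G M B" "c \<in> carrier (L M)" "m \<in> Mon (Dk k) M"
        unfolding Gen_def by blast
      have M: "sg M" using sgle_D[OF z(2)] by auto
      interpret RM: cring "L M" using cring_L[OF M] .
      have "m = \<zero>\<^bsub>L M\<^esub>" using Mon_zero[OF M k z(4)] .
      then show "z \<in> {\<zero>\<^bsub>L B\<^esub>}" using z(1,3) tr_zero[OF z(2)] by simp
    qed
    then have "F (Dk k) B \<subseteq> {\<zero>\<^bsub>L B\<^esub>}" using F_min[OF True RB.zeroideal] by blast
    then show ?thesis unfolding tzero_def using True by simp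
  next
    case False
    then show ?thesis using F_empty by simp
  qed
qed

lemma x0_nil: "x0 [^]\<^bsub>L H0\<^esub> (k::nat) = \<zero>\<^bsub>L H0\<^esub> \<Longrightarrow> x0 \<in> nilradical G T H0"
proof -
  assume k: "x0 [^]\<^bsub>L H0\<^esub> (k::nat) = \<zero>\<^bsub>L H0\<^esub>"
  have "Suc (Dk k - 1) = Dk k" unfolding Dk_def by simp
  then have "tpow G T (tprinc G T H0 x0) (Dk k - 1) \<le> F (Dk k)" using tpow_le_F[of "Dk k - 1"] by simp
  also have "\<dots> \<le> tzero G T" using F_Dk_zero[OF k] .
  finally show ?thesis using nil_mem[OF H0 x0] by blast
qed

end


context tamb
begin

lemma nil_of_nilpotent: "sg H \<Longrightarrow> x \<in> carrier (L H) \<Longrightarrow> x [^]\<^bsub>L H\<^esub> (k::nat) = \<zero>\<^bsub>L H\<^esub> \<Longrightarrow> x \<in> nilradical G T H"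
proof -
  assume H: "sg H" and x: "x \<in> carrier (L H)" and k: "x [^]\<^bsub>L H\<^esub> (k::nat) = \<zero>\<^bsub>L H\<^esub>"
  interpret N: nilp G T H x unfolding nilp_def nilp_axioms_def using tamb_axioms H x by blast
  show ?thesis using N.x0_nil[OF k] .
qed

lemma nil_char: "sg H \<Longrightarrow> x \<in> carrier (L H) \<Longrightarrow> x \<in> nilradical G T H \<longleftrightarrow> (\<forall>P. tprime G T P \<longrightarrow> x \<in> P H)"
proof
  assume "x \<in> nilradical G T H"
  then show "\<forall>P. tprime G T P \<longrightarrow> x \<in> P H" using nil_le_prime unfolding le_fun_def by blast
next
  assume H: "sg H" and xc: "x \<in> carrier (L H)" and all: "\<forall>P. tprime G T P \<longrightarrow> x \<in> P H"
  show "x \<in> nilradical G T H"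
  proof (rule ccontr)
    assume nx: "x \<notin> nilradical G T H"
    have "\<And>k::nat. x [^]\<^bsub>L H\<^esub> k \<noteq> \<zero>\<^bsub>L H\<^esub>" using nil_of_nilpotent[OF H xc] nx by blast
    then obtain P where "tprime G T P" "x \<notin> P H" using prime_avoid[OF H xc] by blast
    then show False using all by blast
  qed
qed

lemma spec_ne: assumes ne: "\<exists>H. sg H \<and> \<one>\<^bsub>L H\<^esub> \<noteq> \<zero>\<^bsub>L H\<^esub>" shows "\<exists>P. tprime G T P"
proof -
  obtain H where H: "sg H" and ne: "\<one>\<^bsub>L H\<^esub> \<noteq> \<zero>\<^bsub>L H\<^esub>" using ne by blast
  interpret cring "L H" using cring_L[OF H] .
  have "\<And>k::nat. \<one>\<^bsub>L H\<^esub> [^]\<^bsub>L H\<^esub> k \<noteq> \<zero>\<^bsub>L H\<^esub>" using ne by simp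
  then show ?thesis using prime_avoid[OF H one_closed] by blast
qed

lemma nil_eq: assumes ne: "\<exists>H. sg H \<and> \<one>\<^bsub>L H\<^esub> \<noteq> \<zero>\<^bsub>L H\<^esub>"
  shows "nilradical G T = (\<lambda>H. \<Inter>P\<in>tspec G T. P H)"
proof
  fix H
  obtain P0 where P0: "tprime G T P0" using spec_ne[OF ne] by blast
  show "nilradical G T H = (\<Inter>P\<in>tspec G T. P H)"
  proof (cases "sg H")
    case True
    have "(\<Inter>P\<in>tspec G T. P H) \<subseteq> carrier (L H)"
      using P0 tideal_carrier[OF tprime_tideal[OF P0]] unfolding tspec_def by blast
    moreover have "nilradical G T H \<subseteq> carrier (L H)" using nil_carrier by blast
    ultimately show ?thesis using nil_char[OF True] unfolding tspec_def by blast
  next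
    case False
    have "nilradical G T H = {}" using nil_carrier False by blast
    moreover have "P0 H = {}" using tideal_empty[OF tprime_tideal[OF P0] False] .
    ultimately show ?thesis using P0 unfolding tspec_def by blast
  qed
qed

lemma nil_tideal: assumes ne: "\<exists>H. sg H \<and> \<one>\<^bsub>L H\<^esub> \<noteq> \<zero>\<^bsub>L H\<^esub>"
  shows "tideal G T (nilradical G T)"
  unfolding nil_eq[OF ne]
proof (rule tideal_Inter)
  show "tspec G T \<noteq> {}" using spec_ne[OF ne] unfolding tspec_def by blast
  show "\<And>I. I \<in> tspec G T \<Longrightarrow> tideal G T I" unfolding tspec_def using tprime_tideal by blast
qed

lemma open_basic: "sg H \<Longrightarrow> x \<in> carrier (L H) \<Longrightarrow> openin (spec_top G T) (tspec G T - Vset G T H x)"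
  unfolding spec_top_def openin_topology_generated_by_iff
  by (rule generate_topology_on.Basis) blast

lemma main:
  assumes ne: "\<exists>H. sg H \<and> \<one>\<^bsub>L H\<^esub> \<noteq> \<zero>\<^bsub>L H\<^esub>"
  shows "tprime G T (nilradical G T) \<longleftrightarrow> irreducible_space (spec_top G T)"
proof
  assume Np: "tprime G T (nilradical G T)"
  have Nspec: "nilradical G T \<in> tspec G T" using Np unfolding tspec_def by simp
  have gen: "\<forall>P\<in>U. nilradical G T \<in> U" if "openin (spec_top G T) U" for U
  proof -
    have "generate_topology_on (insert (tspec G T) {tspec G T - Vset G T H x | H x. sg H \<and> x \<in> carrier (L H)}) U"
      using that unfolding spec_top_def openin_topology_generated_by_iff .
    then show ?thesis
    proof (induction rule: generate_topology_on.induct)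
      case Empty then show ?case by simp
    next
      case (Int a b) then show ?case by blast
    next
      case (UN K) then show ?case by blast
    next
      case (Basis s)
      then show ?case
      proof
        assume "s = tspec G T" then show ?thesis using Nspec by blast
      next
        assume "s \<in> {tspec G T - Vset G T H x | H x. sg H \<and> x \<in> carrier (L H)}"
        then obtain H x where s: "s = tspec G T - Vset G T H x" by blast
        show ?thesis
        proof
          fix P assume "P \<in> s"
          then have P: "tprime G T P" "x \<notin> P H" unfolding s Vset_def tspec_def by auto
          then have "x \<notin> nilradical G T H" using nil_le_prime[OF P(1)] unfolding le_fun_def by blast
          then show "nilradical G T \<in> s" unfolding s Vset_def using Nspec by blast
        qed
      qed
    qed
  qed
  show "irreducible_space (spec_top G T)" unfolding irreducible_space_def
  proof (intro allI impI)
    fix U V assume U: "openin (spec_top G T) U" and V: "openin (spec_top G T) V" and UV: "U \<inter> V = {}"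
    show "U = {} \<or> V = {}"
    proof (rule ccontr)
      assume "\<not> (U = {} \<or> V = {})"
      then obtain P Q where "P \<in> U" "Q \<in> V" by blast
      then have "nilradical G T \<in> U" "nilradical G T \<in> V" using gen[OF U] gen[OF V] by auto
      then show False using UV by blast
    qed
  qed
next
  assume irr: "irreducible_space (spec_top G T)"
  obtain P0 where P0: "tprime G T P0" using spec_ne[OF ne] by blast
  show "tprime G T (nilradical G T)" unfolding tprime_def
  proof (intro conjI allI impI)
    show "tideal G T (nilradical G T)" by (rule nil_tideal[OF ne])
    show "\<one>\<^bsub>L (carrier G)\<^esub> \<notin> nilradical G T (carrier G)"
      using P0 nil_le_prime[OF P0] unfolding tprime_def le_fun_def by blast
    fix I J assume I: "tideal G T I" and J: "tideal G T J" and IJ: "tprod G T I J \<le> nilradical G T"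
    show "I \<le> nilradical G T \<or> J \<le> nilradical G T"
    proof (rule ccontr)
      assume "\<not> (I \<le> nilradical G T \<or> J \<le> nilradical G T)"
      then obtain H x K y where x: "x \<in> I H" "x \<notin> nilradical G T H" and y: "y \<in> J K" "y \<notin> nilradical G T K"
        unfolding le_fun_def by blast
      have H: "sg H" and xc: "x \<in> carrier (L H)" using tideal_carrier[OF I x(1)] by auto
      have K: "sg K" and yc: "y \<in> carrier (L K)" using tideal_carrier[OF J y(1)] by auto
      obtain P where P: "tprime G T P" "x \<notin> P H" using nil_char[OF H xc] x(2) by blast
      obtain Q where Q: "tprime G T Q" "y \<notin> Q K" using nil_char[OF K yc] y(2) by blast
      define U where "U = tspec G T - Vset G T H x"
      define V where "V = tspec G T - Vset G T K y"
      have "P \<in> U" unfolding U_def Vset_def tspec_def using P by auto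
      moreover have "Q \<in> V" unfolding V_def Vset_def tspec_def using Q by auto
      ultimately have "U \<inter> V \<noteq> {}" using irr open_basic[OF H xc] open_basic[OF K yc]
        unfolding irreducible_space_def U_def V_def by blast
      then obtain R where R: "R \<in> U" "R \<in> V" by blast
      then have Rp: "tprime G T R" and Rx: "x \<notin> R H" and Ry: "y \<notin> R K"
        unfolding U_def V_def Vset_def tspec_def by auto
      have "tprod G T I J \<le> R" using IJ nil_le_prime[OF Rp] by (rule order_trans)
      then have "I \<le> R \<or> J \<le> R" using Rp I J unfolding tprime_def by blast
      then show False using x(1) y(1) Rx Ry unfolding le_fun_def by blast
    qed
  qed
qed

end

theorem proposition7p3:
  fixes G :: "('g, 'b) monoid_scheme" and T :: "('g, 'r) tambara"
  assumes "group G" and "finite (carrier G)" and "is_tambara G T"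
    and "\<exists>H. subgroup H G \<and> \<one>\<^bsub>t_lev T H\<^esub> \<noteq> \<zero>\<^bsub>t_lev T H\<^esub>"
  shows "tprime G T (nilradical G T) \<longleftrightarrow> irreducible_space (spec_top G T)"
proof -
  interpret tamb G T using assms(1,2,3) unfolding tamb_def tamb_axioms_def by blast
  show ?thesis using main assms(4) by blast
qed


end
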